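(* Assume the standing hypotheses (H). Let $0\le\bar K\in L^4_{\mathfrak P}$. There is a nonnegative $K_{\mathrm{up}}\in L^2_{\mathfrak P}$ (depending on $\bar K$) such that for every $(t,\mathbf x,y)\in\mathbf D\times\mathbb R$, $\boldsymbol\zeta\in\mathbf Z$ and $\psi\in(0,1)$ with $\|\boldsymbol\zeta-\boldsymbol\zeta^\psi(t,\mathbf x)\|\le\bar K(t,\mathbf x)\psi^2$, $$w^\psi_t(t,\mathbf x,y)+\sup_{\boldsymbol\upsilon\in\mathbb R^2}H^\psi(t,\mathbf x,y;\boldsymbol\upsilon,\boldsymbol\zeta)\le K_{\mathrm{up}}(t,\mathbf x)U'(y)\Big(1+\frac{-U''(y)}{U'(y)}\Big)\psi^{1+\mathbf 1_{\{\Sigma\in(\underline\Sigma,\overline\Sigma)\}}}.$$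
   Context: Setting. Fix $T>0$, $S_0>0$, $\Sigma_0>0$, $A_0\in\mathbb R$. $\Omega$: continuous paths $\omega=(\omega^S,\omega^\Sigma,\omega^A):[0,T]\to\mathbb R^3$ with $\omega_0=(S_0,\Sigma_0,A_0)$ (uniform topology, Borel $\sigma$-algebra $\mathcal F$); $S,\Sigma,A$ coordinate processes, $\mathbb F$ their raw filtration, $M_t=\sup_{u\le t}S_u$, $\mathbf X_t=(S_t,A_t,M_t,\Sigma_t)$. $\mathbf G=\mathbb R_+\times\mathbb R\times\mathbb R_+$, $\mathbf D^0=(0,T)\times\mathbf G\times\mathbb R_+$ (points $(t,\mathbf x)$, $\mathbf x=(S,A,M,\Sigma)$); $0<\underline\Sigma<\Sigma_0<\overline\Sigma$, $\mathbf D=(0,T)\times\mathbf G\times[\underline\Sigma,\overline\Sigma]$. $\|\cdot\|$ Euclidean norm, $\mathbf e_4$ fourth unit vector, $x^-=\max(-x,0)$. Call: $\mathcal C(t,S,\Sigma)$ with $\mathcal C_t+\frac12\Sigma^2S^2\mathcal C_{SS}=0$, $\mathcal C(T_{\mathsf C},S,\Sigma)=\mathsf C(S)$. $b^{\mathcal C}(t,\mathbf x;\boldsymbol\zeta)=\nu\mathcal C_\Sigma+\frac12S^2\mathcal C_{SS}(\sigma^2-\Sigma^2)+\sigma\eta S\mathcal C_{S\Sigma}+\frac12(\eta^2+\xi)\mathcal C_{\Sigma\Sigma}$ for $\boldsymbol\zeta=(\nu,\sigma,\eta,\xi)$. Models: $\mathfrak P^{00}$ = probability measures $P$ on $(\Omega,\mathcal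 F)$ with progressively measurable $\boldsymbol\zeta^P=(\nu^P,\sigma^P,\eta^P,\xi^P)$ such that $S$, $\Sigma-\int_0^\cdot\nu^P_tdt$ are continuous local $P$-martingales with $d\langle S\rangle_t=S_t^2(\sigma^P_t)^2dt$, $d\langle\Sigma\rangle_t=((\eta^P_t)^2+\xi^P_t)dt$, $d\langle S,\Sigma\rangle_t=S_t\sigma^P_t\eta^P_tdt$, $S,\Sigma>0$, $\xi^P\ge0$, $b^{\mathcal C}(t,\mathbf X_t;\boldsymbol\zeta^P_t)=0$ $dt\times P$-a.e.; for Borel $\alpha,\beta,\gamma,\delta:[0,T]\times\mathbb R^3\to\mathbb R$, $\mathfrak P^0$ = those $P$ with $dA_t=(\alpha+\frac12(\sigma^P_t)^2\beta)dt+\gamma dS_t+\delta dM_t$. $\boldsymbol\zeta^0(\Sigma)=(0,\Sigma,0,0)^\top$; reference model: $\boldsymbol\zeta^P_t=\boldsymbol\zeta^0(\Sigma_t)$ a.e. Non-traded option: $\mathcal V(\cdot,\Sigma)$ solves $\mathcal V_t+(\alpha+\frac12\beta\Sigma^2)\mathcal V_A+\frac12\Sigma^2S^2(\mathcal V_{SS}+2\gamma\mathcal V_{SA}+\gamma^2\mathcal V_{AA})=0$ on $(0,T)\times\mathbf G$, $\delta\mathcal V_A+\mathcal V_M=0$ on $\{S\ge M\}$, $\mathcal V(T,\cdot,\Sigma)=\mathsf V$. $\Delta=\mathcal V_S+\gamma\mathcal V_A$, $\Gamma=\mathcal V_{SS}+2\gamma\mathcal V_{SA}+\gamma^2\mathcal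 V_{AA}$, $\frac{\partial\Delta}{\partial\Sigma}:=\mathcal V_{S\Sigma}+\gamma\mathcal V_{A\Sigma}$. P&L: $V_t=\mathcal V(t,\mathbf X_t)$, $C_t=\mathcal C(t,S_t,\Sigma_t)$; strategies $\boldsymbol\upsilon=(\theta,\phi)$ real locally bounded progressive; $Y^{\boldsymbol\upsilon,P}_t=Y_0+V_0+\int_0^t\theta dS+\int_0^t\phi dC-V_t$. Preferences: $\Psi=\mathrm{diag}(\psi_\nu,\psi_\sigma,\psi_\eta,\psi_\xi)$, positive; $f(\Sigma,\boldsymbol\zeta)=\frac12(\boldsymbol\zeta-\boldsymbol\zeta^0(\Sigma))^\top\Psi^{-1}(\boldsymbol\zeta-\boldsymbol\zeta^0(\Sigma))$; a utility $U$, strategy set $\mathfrak Y$, model set $\mathfrak P\subset\mathfrak P^0$. Candidate control: $\mathbf c=(\mathcal C_\Sigma,\Sigma S^2\mathcal C_{SS},\Sigma S\mathcal C_{S\Sigma},\frac12\mathcal C_{\Sigma\Sigma})^\top$, $\mathbf v=(\mathcal V_\Sigma,\Sigma(\beta\mathcal V_A+S^2\Gamma),\Sigma S\frac{\partial\Delta}{\partial\Sigma},\frac12\mathcal V_{\Sigma\Sigma})^\top$; $\lambda=\frac{\mathbf c^\top\Psi\mathbf v}{\mathbf c^\top\Psi\mathbf c}$ if $\mathcal V_{\Sigma\Sigma}-\frac{\mathbf c^\top\Psi\mathbf v}{\mathbf c^\top\Psi\mathbf c}\mathcal C_{\Sigma\Sigma}\ge0$, else $\lambda=\frac{\mathbf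 c^\top\Psi\mathbf v-\frac14\mathcal C_{\Sigma\Sigma}\mathcal V_{\Sigma\Sigma}\psi_\xi}{\mathbf c^\top\Psi\mathbf c-\frac14\mathcal C_{\Sigma\Sigma}^2\psi_\xi}$; $\mu=\frac12(\mathcal V_{\Sigma\Sigma}-\lambda\mathcal C_{\Sigma\Sigma})^-$; $\widetilde{\boldsymbol\zeta}=\Psi(\mathbf v-\lambda\mathbf c+\mu\mathbf e_4)$; $\boldsymbol\zeta^\psi=\boldsymbol\zeta^0(\Sigma)+\widetilde{\boldsymbol\zeta}\mathbf 1_{\{\underline\Sigma<\Sigma<\overline\Sigma\}}\psi$; $\widetilde g=\mathbf v^\top\widetilde{\boldsymbol\zeta}$. Cash-equivalent PDE: for $\Sigma\in[\underline\Sigma,\overline\Sigma]$, $\widetilde w_t+(\alpha+\frac12\beta\Sigma^2)\widetilde w_A+\frac12\Sigma^2S^2(\widetilde w_{SS}+2\gamma\widetilde w_{SA}+\gamma^2\widetilde w_{AA})+\frac12\widetilde g(\cdot,\Sigma)=0$ on $(0,T)\times\mathbf G$, $\delta\widetilde w_A+\widetilde w_M=0$ on $\{S\ge M\}$, $\widetilde w(T,\cdot,\Sigma)=0$. $L^p_{\mathfrak P}$: Borel $K$ on $\mathbf D^0$ with $\sup_{P\in\mathfrak P}E^P[\int_0^T|K(t,\mathbf X_t)|^pdt]^{1/p}<\infty$. Candidate asymptotic model family: $(P^\psi)_{\psi\in(0,\psi_0)}\subset\mathfrak P$, $\psi_0\in(0,1)$, with $K_0\in L^4_{\mathfrak P}$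 and $\|\boldsymbol\zeta^{P^\psi}_t-\boldsymbol\zeta^\psi(t,\mathbf X_t)\|\le K_0(t,\mathbf X_t)\psi^2$ $dt\times P^\psi$-a.e. Assumption (A): (a) $\exists K_{\mathfrak Y}$: $Y^{\boldsymbol\upsilon,P}>-K_{\mathfrak Y}$ $dt\times P$-a.e. for all $\boldsymbol\upsilon\in\mathfrak Y$, $P\in\mathfrak P$; (b) $\mathfrak P$ contains a candidate asymptotic model family and a reference model, and constants $\underline\nu<0<\overline\nu$, $0<\underline\sigma<\underline\Sigma$, $\overline\Sigma<\overline\sigma$, $\underline\eta<0<\overline\eta$, $\overline\xi>0$ bound $\nu^P,\sigma^P,\eta^P,\xi^P,\Sigma$ in $[\underline\nu,\overline\nu],[\underline\sigma,\overline\sigma],[\underline\eta,\overline\eta],[0,\overline\xi],[\underline\Sigma,\overline\Sigma]$ $dt\times P$-a.e. for all $P\in\mathfrak P$; (c) $T_{\mathsf C}\ge T$, $\mathcal C\in C^{1,2,2}((0,T_{\mathsf C})\times\mathbb R_+^2)\cap C([0,T_{\mathsf C}]\times\overline{\mathbb R}_+^2)$ solves the call PDE classically for $\Sigma\in[\underline\Sigma,\overline\Sigma]$, $\mathcal C_\Sigma\ne0$ and $|\mathcal C_{\Sigma\Sigma}|\le K_{\mathcal C}(|\mathcal C_\Sigma|+|S^2\mathcal C_{SS}|+|S\mathcal C_{S\Sigma}|)$ on $(0,T)\times\mathbb R_+\times[\underline\Sigma,\overline\Sigma]$ with $K_{\mathcal C}\in L^2_{\mathfrak P}$; (d) $\mathcal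 V\in C^{1,2,2,1,2}(\mathbf D^0)\cap C(\overline{\mathbf D^0})$ solves the $\mathcal V$-PDE classically for $\Sigma\in[\underline\Sigma,\overline\Sigma]$, $|\mathcal V_\Sigma|,|\beta\mathcal V_A+S^2\Gamma|,|S\frac{\partial\Delta}{\partial\Sigma}|,|\mathcal V_{\Sigma\Sigma}|\le K_{\mathcal V}$ on $\mathbf D$; (e) $\widetilde w\in C^{1,2,2,1,2}(\mathbf D^0)\cap C(\overline{\mathbf D^0})$ solves the cash-equivalent PDE classically for $\Sigma\in[\underline\Sigma,\overline\Sigma]$, $0\le\widetilde w\le K_{\widetilde w}$ on $\mathbf D$, and $\widetilde w_\Sigma,S(\widetilde w_S+\gamma\widetilde w_A),\beta\widetilde w_A+S^2(\widetilde w_{SS}+2\gamma\widetilde w_{SA}+\gamma^2\widetilde w_{AA}),S(\widetilde w_{S\Sigma}+\gamma\widetilde w_{A\Sigma}),\widetilde w_{\Sigma\Sigma}\in L^4_{\mathfrak P}$; (f) $U\in C^3(\mathbb R)$, $U'>0$, $U''<0$, $-U''/U'$ nonincreasing. Additional notation. $\mathbf Z=[\underline\nu,\overline\nu]\times[\underline\sigma,\overline\sigma]\times[\underline\eta,\overline\eta]\times[0,\overline\xi]$. $b^{\mathcal V}(t,\mathbf x;\boldsymbol\zeta)=\nu\mathcal V_\Sigma+\frac12(\beta\mathcal V_A+S^2\Gamma)(\sigma^2-\Sigma^2)+\sigma\eta S\frac{\partial\Delta}{\partial\Sigma}+\frac12(\eta^2+\xi)\mathcal V_{\Sigma\Sigma}$.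 $w^\psi(t,\mathbf x,y)=U(y)-U'(y)\widetilde w(t,\mathbf x)\psi$ (subscripts $t,S,A,\Sigma,Y$ denote partial derivatives in $t,S,A,\Sigma,y$). For $\boldsymbol\upsilon=(\theta,\phi)\in\mathbb R^2$, $\boldsymbol\zeta=(\nu,\sigma,\eta,\xi)$, with $D_\theta:=\theta-(\Delta-\phi\mathcal C_S)$, $D_\phi:=\phi\mathcal C_\Sigma-\mathcal V_\Sigma$ and derivatives of $w^\psi$ at $(t,\mathbf x,y)$: $H^\psi(t,\mathbf x,y;\boldsymbol\upsilon,\boldsymbol\zeta)=\frac1\psi U'(y)f(\Sigma,\boldsymbol\zeta)+\nu w^\psi_\Sigma+(\alpha+\frac12\beta\sigma^2)w^\psi_A-b^{\mathcal V}(t,\mathbf x;\boldsymbol\zeta)w^\psi_Y+\frac12\sigma^2S^2(w^\psi_{SS}+2\gamma w^\psi_{SA}+\gamma^2w^\psi_{AA})+\sigma S\eta(w^\psi_{S\Sigma}+\gamma w^\psi_{A\Sigma})+\frac12(\eta^2+\xi)w^\psi_{\Sigma\Sigma}+\sigma^2S^2D_\theta(w^\psi_{SY}+\gamma w^\psi_{AY})+\sigma S\eta D_\phi(w^\psi_{SY}+\gamma w^\psi_{AY})+\sigma S\eta D_\theta w^\psi_{\Sigma Y}+D_\phi(\eta^2+\xi)w^\psi_{\Sigma Y}+\frac12\sigma^2S^2D_\theta^2w^\psi_{YY}+\frac12(\eta^2+\xi)D_\phi^2w^\psi_{YY}+\sigma S\eta D_\theta D_\phi w^\psi_{YY}$.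 Delta-vega hedge $\boldsymbol\upsilon^\star_t=(\Delta-\frac{\mathcal V_\Sigma}{\mathcal C_\Sigma}\mathcal C_S,\frac{\mathcal V_\Sigma}{\mathcal C_\Sigma})(t,\mathbf X_t)$. Standing hypotheses (H): Assumption (A) holds, $\boldsymbol\upsilon^\star\in\mathfrak Y$, and $(P^\psi)_{\psi\in(0,\psi_0)}\subset\mathfrak P$ is a candidate asymptotic model family. *)

theory Defs
  imports "HOL-Probability.Probability"
begin

(* A path omega = (omega^S, omega^Sigma, omega^A) : time -> R^3 *)
type_synonym path = "real \<Rightarrow> real \<times> real \<times> real"
(* functions of (t,S,A,M,Sigma) *)
type_synonym fun5 = "real \<Rightarrow> real \<Rightarrow> real \<Rightarrow> real \<Rightarrow> real \<Rightarrow> real"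
(* functions of (t,S,A,M,Sigma,y) *)
type_synonym fun6 = "real \<Rightarrow> real \<Rightarrow> real \<Rightarrow> real \<Rightarrow> real \<Rightarrow> real \<Rightarrow> real"
(* zeta = (nu, sigma, eta, xi) *)
type_synonym zeta4 = "real \<times> real \<times> real \<times> real"

definition z1 :: "zeta4 \<Rightarrow> real" where "z1 z = fst z"
definition z2 :: "zeta4 \<Rightarrow> real" where "z2 z = fst (snd z)"
definition z3 :: "zeta4 \<Rightarrow> real" where "z3 z = fst (snd (snd z))"
definition z4 :: "zeta4 \<Rightarrow> real" where "z4 z = snd (snd (snd z))"

definition negpart :: "real \<Rightarrow> real" where "negpart x = max (- x) 0"

(* coordinates: 0 = t, 1 = S, 2 = A, 3 = M, 4 = Sigma, 5 = y *)
definition app6 :: "fun6 \<Rightarrow> real list \<Rightarrow> real" where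
  "app6 f p = f (p!0) (p!1) (p!2) (p!3) (p!4) (p!5)"

definition pd :: "nat \<Rightarrow> fun6 \<Rightarrow> fun6" where
  "pd k f = (\<lambda>t S A M Sg y. deriv (\<lambda>z. app6 f ([t,S,A,M,Sg,y][k := z])) ([t,S,A,M,Sg,y] ! k))"

definition pdiff_at :: "nat \<Rightarrow> fun6 \<Rightarrow> real list \<Rightarrow> bool" where
  "pdiff_at k f p \<longleftrightarrow> (\<lambda>z. app6 f (p[k := z])) field_differentiable (at (p!k))"

definition lift5 :: "fun5 \<Rightarrow> fun6" where
  "lift5 f = (\<lambda>t S A M Sg y. f t S A M Sg)"

definition D5 :: "nat \<Rightarrow> fun5 \<Rightarrow> fun5" where
  "D5 k f = (\<lambda>t S A M Sg. pd k (lift5 f) t S A M Sg 0)"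

definition liftC :: "(real \<Rightarrow> real \<Rightarrow> real \<Rightarrow> real) \<Rightarrow> fun5" where
  "liftC C = (\<lambda>t S A M Sg. C t S Sg)"

(* partial derivatives of a function C(t,S,Sigma), indices 0 = t, 1 = S, 4 = Sigma *)
definition DC :: "nat \<Rightarrow> (real \<Rightarrow> real \<Rightarrow> real \<Rightarrow> real) \<Rightarrow> (real \<Rightarrow> real \<Rightarrow> real \<Rightarrow> real)" where
  "DC k C = (\<lambda>t S Sg. D5 k (liftC C) t S 0 0 Sg)"

definition unc5 :: "fun5 \<Rightarrow> real \<times> real \<times> real \<times> real \<times> real \<Rightarrow> real" where
  "unc5 f = (\<lambda>(t,S,A,M,Sg). f t S A M Sg)"

definition pts5 :: "real \<times> real \<times> real \<times> real \<times> real \<Rightarrow> real list" where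
  "pts5 = (\<lambda>(t,S,A,M,Sg). [t,S,A,M,Sg,0])"

definition classical_reg :: "nat set \<Rightarrow> nat set \<Rightarrow> fun5 \<Rightarrow> (real \<times> real \<times> real \<times> real \<times> real) set \<Rightarrow> bool" where
  "classical_reg K1 K2 f D \<longleftrightarrow> continuous_on D (unc5 f) \<and>
     (\<forall>k\<in>K1. (\<forall>p\<in>D. pdiff_at k (lift5 f) (pts5 p)) \<and> continuous_on D (unc5 (D5 k f))) \<and>
     (\<forall>j\<in>K2. \<forall>k\<in>K2. (\<forall>p\<in>D. pdiff_at k (lift5 (D5 j f)) (pts5 p)) \<and>
                        continuous_on D (unc5 (D5 k (D5 j f))))"

definition C12212 :: "fun5 \<Rightarrow> (real \<times> real \<times> real \<times> real \<times> real) set \<Rightarrow> bool" where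
  "C12212 f D \<longleftrightarrow> classical_reg {0,1,2,3,4} {1,2,4} f D"

definition C3 :: "(real \<Rightarrow> real) \<Rightarrow> bool" where
  "C3 U \<longleftrightarrow> (\<forall>x. U field_differentiable (at x) \<and> deriv U field_differentiable (at x)
              \<and> deriv (deriv U) field_differentiable (at x))
           \<and> continuous_on UNIV (deriv (deriv (deriv U)))"

definition D0set :: "real \<Rightarrow> (real \<times> real \<times> real \<times> real \<times> real) set" where
  "D0set T = {(t,S,A,M,Sg). 0 < t \<and> t < T \<and> 0 < S \<and> 0 < M \<and> 0 < Sg}"

definition Dset :: "real \<Rightarrow> real \<Rightarrow> real \<Rightarrow> (real \<times> real \<times> real \<times> real \<times> real) set" where
  "Dset T Sgl Sgu = {(t,S,A,M,Sg). 0 < t \<and> t < T \<and> 0 < S \<and> 0 < M \<and> Sgl \<le> Sg \<and> Sg \<le> Sgu}"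

(* (0,T_C) x R_+^2 for (t,S,Sigma), embedded in 5 coordinates (A, M arbitrary) *)
definition DCset :: "real \<Rightarrow> (real \<times> real \<times> real \<times> real \<times> real) set" where
  "DCset TC = {(t,S,A,M,Sg). 0 < t \<and> t < TC \<and> 0 < S \<and> 0 < Sg}"

definition Zset :: "real \<Rightarrow> real \<Rightarrow> real \<Rightarrow> real \<Rightarrow> real \<Rightarrow> real \<Rightarrow> real \<Rightarrow> zeta4 set" where
  "Zset nul nuu sgl sgu etl etu xiu =
     {z. nul \<le> z1 z \<and> z1 z \<le> nuu \<and> sgl \<le> z2 z \<and> z2 z \<le> sgu \<and> etl \<le> z3 z \<and> z3 z \<le> etu
         \<and> 0 \<le> z4 z \<and> z4 z \<le> xiu}"

definition GammaV :: "(real \<Rightarrow> real \<Rightarrow> real \<Rightarrow> real \<Rightarrow> real) \<Rightarrow> fun5 \<Rightarrow> fun5" where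
  "GammaV gam V = (\<lambda>t S A M Sg. D5 1 (D5 1 V) t S A M Sg + 2 * gam t S A M * D5 2 (D5 1 V) t S A M Sg
                       + (gam t S A M)\<^sup>2 * D5 2 (D5 2 V) t S A M Sg)"

definition DeltaV :: "(real \<Rightarrow> real \<Rightarrow> real \<Rightarrow> real \<Rightarrow> real) \<Rightarrow> fun5 \<Rightarrow> fun5" where
  "DeltaV gam V = (\<lambda>t S A M Sg. D5 1 V t S A M Sg + gam t S A M * D5 2 V t S A M Sg)"

definition dDeltaV :: "(real \<Rightarrow> real \<Rightarrow> real \<Rightarrow> real \<Rightarrow> real) \<Rightarrow> fun5 \<Rightarrow> fun5" where
  "dDeltaV gam V = (\<lambda>t S A M Sg. D5 4 (D5 1 V) t S A M Sg + gam t S A M * D5 4 (D5 2 V) t S A M Sg)"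

definition cvec :: "(real \<Rightarrow> real \<Rightarrow> real \<Rightarrow> real) \<Rightarrow> real \<Rightarrow> real \<Rightarrow> real \<Rightarrow> zeta4" where
  "cvec C t S Sg = (DC 4 C t S Sg, Sg * S\<^sup>2 * DC 1 (DC 1 C) t S Sg, Sg * S * DC 4 (DC 1 C) t S Sg,
                    DC 4 (DC 4 C) t S Sg / 2)"

definition vvec :: "(real \<Rightarrow> real \<Rightarrow> real \<Rightarrow> real \<Rightarrow> real) \<Rightarrow> (real \<Rightarrow> real \<Rightarrow> real \<Rightarrow> real \<Rightarrow> real)
                     \<Rightarrow> fun5 \<Rightarrow> real \<Rightarrow> real \<Rightarrow> real \<Rightarrow> real \<Rightarrow> real \<Rightarrow> zeta4" where
  "vvec bet gam V t S A M Sg = (D5 4 V t S A M Sg,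
       Sg * (bet t S A M * D5 2 V t S A M Sg + S\<^sup>2 * GammaV gam V t S A M Sg),
       Sg * S * dDeltaV gam V t S A M Sg,
       D5 4 (D5 4 V) t S A M Sg / 2)"

(* Psi = diag(psis); a^T Psi b *)
definition ipsi :: "zeta4 \<Rightarrow> zeta4 \<Rightarrow> zeta4 \<Rightarrow> real" where
  "ipsi psis a b = z1 psis * z1 a * z1 b + z2 psis * z2 a * z2 b + z3 psis * z3 a * z3 b + z4 psis * z4 a * z4 b"

definition Psi_mul :: "zeta4 \<Rightarrow> zeta4 \<Rightarrow> zeta4" where
  "Psi_mul psis a = (z1 psis * z1 a, z2 psis * z2 a, z3 psis * z3 a, z4 psis * z4 a)"

definition e4 :: zeta4 where "e4 = (0, 0, 0, 1)"

definition zeta0 :: "real \<Rightarrow> zeta4" where "zeta0 Sg = (0, Sg, 0, 0)"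

(* lambda, with Vgg = V_{Sigma Sigma}, Cgg = C_{Sigma Sigma} *)
definition lamf :: "zeta4 \<Rightarrow> zeta4 \<Rightarrow> zeta4 \<Rightarrow> real \<Rightarrow> real \<Rightarrow> real" where
  "lamf psis c v Cgg Vgg =
     (if Vgg - (ipsi psis c v / ipsi psis c c) * Cgg \<ge> 0 then ipsi psis c v / ipsi psis c c
      else (ipsi psis c v - Cgg * Vgg * z4 psis / 4) / (ipsi psis c c - Cgg\<^sup>2 * z4 psis / 4))"

definition lam_at where
  "lam_at C V bet gam psis t S A M Sg =
     lamf psis (cvec C t S Sg) (vvec bet gam V t S A M Sg) (DC 4 (DC 4 C) t S Sg) (D5 4 (D5 4 V) t S A M Sg)"

definition mu_at where
  "mu_at C V bet gam psis t S A M Sg =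
     negpart (D5 4 (D5 4 V) t S A M Sg - lam_at C V bet gam psis t S A M Sg * DC 4 (DC 4 C) t S Sg) / 2"

definition ztilde where
  "ztilde C V bet gam psis t S A M Sg =
     Psi_mul psis (vvec bet gam V t S A M Sg - lam_at C V bet gam psis t S A M Sg *\<^sub>R cvec C t S Sg
                   + mu_at C V bet gam psis t S A M Sg *\<^sub>R e4)"

definition zeta_psi where
  "zeta_psi C V bet gam psis Sgl Sgu psi t S A M Sg =
     zeta0 Sg + (if Sgl < Sg \<and> Sg < Sgu then psi *\<^sub>R ztilde C V bet gam psis t S A M Sg else 0)"

definition gtilde where
  "gtilde C V bet gam psis t S A M Sg = inner (vvec bet gam V t S A M Sg) (ztilde C V bet gam psis t S A M Sg)"

definition bC :: "(real \<Rightarrow> real \<Rightarrow> real \<Rightarrow> real) \<Rightarrow> real \<Rightarrow> real \<Rightarrow> real \<Rightarrow> zeta4 \<Rightarrow> real" where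
  "bC C t S Sg z = z1 z * DC 4 C t S Sg + S\<^sup>2 * DC 1 (DC 1 C) t S Sg * ((z2 z)\<^sup>2 - Sg\<^sup>2) / 2
                 + z2 z * z3 z * S * DC 4 (DC 1 C) t S Sg + ((z3 z)\<^sup>2 + z4 z) * DC 4 (DC 4 C) t S Sg / 2"

definition bV where
  "bV bet gam V t S A M Sg z = z1 z * D5 4 V t S A M Sg
     + (bet t S A M * D5 2 V t S A M Sg + S\<^sup>2 * GammaV gam V t S A M Sg) * ((z2 z)\<^sup>2 - Sg\<^sup>2) / 2
     + z2 z * z3 z * S * dDeltaV gam V t S A M Sg + ((z3 z)\<^sup>2 + z4 z) * D5 4 (D5 4 V) t S A M Sg / 2"

definition fpen :: "zeta4 \<Rightarrow> real \<Rightarrow> zeta4 \<Rightarrow> real" where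
  "fpen psis Sg z = ((z1 z - z1 (zeta0 Sg))\<^sup>2 / z1 psis + (z2 z - z2 (zeta0 Sg))\<^sup>2 / z2 psis
                   + (z3 z - z3 (zeta0 Sg))\<^sup>2 / z3 psis + (z4 z - z4 (zeta0 Sg))\<^sup>2 / z4 psis) / 2"

definition wpsi :: "(real \<Rightarrow> real) \<Rightarrow> fun5 \<Rightarrow> real \<Rightarrow> fun6" where
  "wpsi U wt psi = (\<lambda>t S A M Sg y. U y - deriv U y * wt t S A M Sg * psi)"

definition Hpsi where
  "Hpsi U wt psi C V alp bet gam psis t S A M Sg y th ph z =
    (let w = wpsi U wt psi;
         wSg = pd 4 w t S A M Sg y; wA = pd 2 w t S A M Sg y; wY = pd 5 w t S A M Sg y;
         wSS = pd 1 (pd 1 w) t S A M Sg y; wSA = pd 2 (pd 1 w) t S A M Sg y;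
         wAA = pd 2 (pd 2 w) t S A M Sg y; wSSg = pd 4 (pd 1 w) t S A M Sg y;
         wASg = pd 4 (pd 2 w) t S A M Sg y; wSgSg = pd 4 (pd 4 w) t S A M Sg y;
         wSY = pd 5 (pd 1 w) t S A M Sg y; wAY = pd 5 (pd 2 w) t S A M Sg y;
         wSgY = pd 5 (pd 4 w) t S A M Sg y; wYY = pd 5 (pd 5 w) t S A M Sg y;
         g = gam t S A M;
         nu = z1 z; sig = z2 z; eta = z3 z; xi = z4 z;
         Dth = th - (DeltaV gam V t S A M Sg - ph * DC 1 C t S Sg);
         Dph = ph * DC 4 C t S Sg - D5 4 V t S A M Sg
     in (1 / psi) * deriv U y * fpen psis Sg z + nu * wSg
        + (alp t S A M + bet t S A M * sig\<^sup>2 / 2) * wA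
        - bV bet gam V t S A M Sg z * wY
        + sig\<^sup>2 * S\<^sup>2 * (wSS + 2 * g * wSA + g\<^sup>2 * wAA) / 2
        + sig * S * eta * (wSSg + g * wASg)
        + (eta\<^sup>2 + xi) * wSgSg / 2
        + sig\<^sup>2 * S\<^sup>2 * Dth * (wSY + g * wAY)
        + sig * S * eta * Dph * (wSY + g * wAY)
        + sig * S * eta * Dth * wSgY
        + Dph * (eta\<^sup>2 + xi) * wSgY
        + sig\<^sup>2 * S\<^sup>2 * Dth\<^sup>2 * wYY / 2
        + (eta\<^sup>2 + xi) * Dph\<^sup>2 * wYY / 2
        + sig * S * eta * Dth * Dph * wYY)"

definition OmegaS :: "real \<Rightarrow> real \<times> real \<times> real \<Rightarrow> path set" where
  "OmegaS T x0 = {\<omega>. continuous_on {0..T} \<omega> \<and> \<omega> 0 = x0 \<and> (\<forall>t. \<omega> t = \<omega> (max 0 (min t T)))}"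

(* Borel sigma-algebra of the uniform topology = sigma-algebra generated by the coordinates *)
definition OmegaM :: "real \<Rightarrow> real \<times> real \<times> real \<Rightarrow> path measure" where
  "OmegaM T x0 = sigma (OmegaS T x0)
     {{\<omega> \<in> OmegaS T x0. \<omega> u \<in> B} | u B. u \<in> {0..T} \<and> B \<in> sets borel}"

definition filt :: "real \<Rightarrow> real \<times> real \<times> real \<Rightarrow> real \<Rightarrow> path measure" where
  "filt T x0 t = sigma (OmegaS T x0)
     {{\<omega> \<in> OmegaS T x0. \<omega> u \<in> B} | u B. u \<in> {0..t} \<and> B \<in> sets borel}"

definition Sp :: "real \<Rightarrow> path \<Rightarrow> real" where "Sp t \<omega> = fst (\<omega> t)"
definition Sgp :: "real \<Rightarrow> path \<Rightarrow> real" where "Sgp t \<omega> = fst (snd (\<omega> t))"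
definition Ap :: "real \<Rightarrow> path \<Rightarrow> real" where "Ap t \<omega> = snd (snd (\<omega> t))"
definition Mp :: "real \<Rightarrow> path \<Rightarrow> real" where "Mp t \<omega> = Sup ((\<lambda>u. Sp u \<omega>) ` {0..max 0 t})"

definition model_measure :: "real \<Rightarrow> real \<times> real \<times> real \<Rightarrow> path measure \<Rightarrow> bool" where
  "model_measure T x0 P \<longleftrightarrow> prob_space P \<and> sets P = sets (OmegaM T x0)"

definition progressive :: "real \<Rightarrow> real \<times> real \<times> real \<Rightarrow> (real \<Rightarrow> path \<Rightarrow> real) \<Rightarrow> bool" where
  "progressive T x0 X \<longleftrightarrow> (\<forall>t\<in>{0..T}.
     (\<lambda>(u,\<omega>). X u \<omega>) \<in> borel_measurable (restrict_space borel {0..t} \<Otimes>\<^sub>M filt T x0 t))"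

definition fmartingale :: "real \<Rightarrow> real \<times> real \<times> real \<Rightarrow> path measure \<Rightarrow> (real \<Rightarrow> path \<Rightarrow> real) \<Rightarrow> bool" where
  "fmartingale T x0 P X \<longleftrightarrow>
     (\<forall>t\<in>{0..T}. X t \<in> borel_measurable (filt T x0 t) \<and> integrable P (X t)) \<and>
     (\<forall>s t B. 0 \<le> s \<longrightarrow> s \<le> t \<longrightarrow> t \<le> T \<longrightarrow> B \<in> sets (filt T x0 s) \<longrightarrow>
        set_lebesgue_integral P B (X t) = set_lebesgue_integral P B (X s))"

definition stopping_time :: "real \<Rightarrow> real \<times> real \<times> real \<Rightarrow> (path \<Rightarrow> real) \<Rightarrow> bool" where
  "stopping_time T x0 \<tau> \<longleftrightarrow> (\<forall>t\<in>{0..T}. {\<omega> \<in> OmegaS T x0. \<tau> \<omega> \<le> t} \<in> sets (filt T x0 t))"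

definition cont_local_mart :: "real \<Rightarrow> real \<times> real \<times> real \<Rightarrow> path measure \<Rightarrow> (real \<Rightarrow> path \<Rightarrow> real) \<Rightarrow> bool" where
  "cont_local_mart T x0 P X \<longleftrightarrow>
     (AE \<omega> in P. continuous_on {0..T} (\<lambda>t. X t \<omega>)) \<and>
     (\<exists>\<tau>::nat \<Rightarrow> path \<Rightarrow> real. (\<forall>n. stopping_time T x0 (\<tau> n)) \<and> (\<forall>n \<omega>. \<tau> n \<omega> \<le> \<tau> (Suc n) \<omega>) \<and>
        (AE \<omega> in P. \<exists>n. T \<le> \<tau> n \<omega>) \<and>
        (\<forall>n. fmartingale T x0 P (\<lambda>t \<omega>. X (min t (\<tau> n \<omega>)) \<omega>)))"

definition time_int :: "(real \<Rightarrow> path \<Rightarrow> real) \<Rightarrow> real \<Rightarrow> path \<Rightarrow> real" where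
  "time_int k t \<omega> = set_lebesgue_integral lborel {0..t} (\<lambda>u. k u \<omega>)"

definition integ_AE :: "real \<Rightarrow> path measure \<Rightarrow> (real \<Rightarrow> path \<Rightarrow> real) \<Rightarrow> bool" where
  "integ_AE T P k \<longleftrightarrow> (AE \<omega> in P. set_integrable lborel {0..T} (\<lambda>u. k u \<omega>))"

(* for continuous local martingales X, Y: d<X,Y>_t = k_t dt, characterised by
   X Y - int_0^. k dt being a continuous local martingale *)
definition qcov :: "real \<Rightarrow> real \<times> real \<times> real \<Rightarrow> path measure \<Rightarrow> (real \<Rightarrow> path \<Rightarrow> real)
                     \<Rightarrow> (real \<Rightarrow> path \<Rightarrow> real) \<Rightarrow> (real \<Rightarrow> path \<Rightarrow> real) \<Rightarrow> bool" where
  "qcov T x0 P X Y k \<longleftrightarrow> integ_AE T P k \<and>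
     cont_local_mart T x0 P (\<lambda>t \<omega>. X t \<omega> * Y t \<omega> - time_int k t \<omega>)"

definition AEdt :: "real \<Rightarrow> path measure \<Rightarrow> (real \<Rightarrow> path \<Rightarrow> bool) \<Rightarrow> bool" where
  "AEdt T P Q \<longleftrightarrow> (AE (t,\<omega>) in (restrict_space lborel {0..T} \<Otimes>\<^sub>M P). Q t \<omega>)"

definition Sgt :: "(real \<Rightarrow> path \<Rightarrow> zeta4) \<Rightarrow> real \<Rightarrow> path \<Rightarrow> real" where
  "Sgt zeta t \<omega> = Sgp t \<omega> - time_int (\<lambda>u \<omega>. z1 (zeta u \<omega>)) t \<omega>"

definition in_P00 :: "real \<Rightarrow> real \<times> real \<times> real \<Rightarrow> (real \<Rightarrow> real \<Rightarrow> real \<Rightarrow> real)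
                       \<Rightarrow> path measure \<Rightarrow> (real \<Rightarrow> path \<Rightarrow> zeta4) \<Rightarrow> bool" where
  "in_P00 T x0 C P zeta \<longleftrightarrow> model_measure T x0 P \<and>
     progressive T x0 (\<lambda>t \<omega>. z1 (zeta t \<omega>)) \<and> progressive T x0 (\<lambda>t \<omega>. z2 (zeta t \<omega>)) \<and>
     progressive T x0 (\<lambda>t \<omega>. z3 (zeta t \<omega>)) \<and> progressive T x0 (\<lambda>t \<omega>. z4 (zeta t \<omega>)) \<and>
     integ_AE T P (\<lambda>t \<omega>. z1 (zeta t \<omega>)) \<and>
     cont_local_mart T x0 P Sp \<and> cont_local_mart T x0 P (Sgt zeta) \<and>
     qcov T x0 P Sp Sp (\<lambda>t \<omega>. (Sp t \<omega>)\<^sup>2 * (z2 (zeta t \<omega>))\<^sup>2) \<and>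
     qcov T x0 P (Sgt zeta) (Sgt zeta) (\<lambda>t \<omega>. (z3 (zeta t \<omega>))\<^sup>2 + z4 (zeta t \<omega>)) \<and>
     qcov T x0 P Sp (Sgt zeta) (\<lambda>t \<omega>. Sp t \<omega> * z2 (zeta t \<omega>) * z3 (zeta t \<omega>)) \<and>
     (AE \<omega> in P. \<forall>t\<in>{0..T}. 0 < Sp t \<omega> \<and> 0 < Sgp t \<omega>) \<and>
     AEdt T P (\<lambda>t \<omega>. 0 \<le> z4 (zeta t \<omega>) \<and> bC C t (Sp t \<omega>) (Sgp t \<omega>) (zeta t \<omega>) = 0)"

definition stj_int :: "(real \<Rightarrow> path \<Rightarrow> real) \<Rightarrow> real \<Rightarrow> path \<Rightarrow> real" where
  "stj_int k t \<omega> = set_lebesgue_integral (interval_measure (\<lambda>u. Mp u \<omega>)) {0<..t} (\<lambda>u. k u \<omega>)"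

definition in_P0 where
  "in_P0 T x0 C alp bet gam del P zeta \<longleftrightarrow> in_P00 T x0 C P zeta \<and>
     (let drift = (\<lambda>t \<omega>. alp t (Sp t \<omega>) (Ap t \<omega>) (Mp t \<omega>)
                         + (z2 (zeta t \<omega>))\<^sup>2 * bet t (Sp t \<omega>) (Ap t \<omega>) (Mp t \<omega>) / 2);
          dl = (\<lambda>t \<omega>. del t (Sp t \<omega>) (Ap t \<omega>) (Mp t \<omega>));
          gm = (\<lambda>t \<omega>. gam t (Sp t \<omega>) (Ap t \<omega>) (Mp t \<omega>));
          N = (\<lambda>t \<omega>. Ap t \<omega> - Ap 0 \<omega> - time_int drift t \<omega> - stj_int dl t \<omega>)
      in integ_AE T P drift \<and>
         (AE \<omega> in P. set_integrable (interval_measure (\<lambda>u. Mp u \<omega>)) {0<..T} (\<lambda>u. dl u \<omega>)) \<and>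
         cont_local_mart T x0 P N \<and>
         qcov T x0 P N N (\<lambda>t \<omega>. (gm t \<omega>)\<^sup>2 * (Sp t \<omega>)\<^sup>2 * (z2 (zeta t \<omega>))\<^sup>2) \<and>
         qcov T x0 P N Sp (\<lambda>t \<omega>. gm t \<omega> * (Sp t \<omega>)\<^sup>2 * (z2 (zeta t \<omega>))\<^sup>2))"

definition strategy :: "real \<Rightarrow> real \<times> real \<times> real \<Rightarrow> (real \<Rightarrow> path \<Rightarrow> real \<times> real) \<Rightarrow> bool" where
  "strategy T x0 ups \<longleftrightarrow>
     progressive T x0 (\<lambda>t \<omega>. fst (ups t \<omega>)) \<and> progressive T x0 (\<lambda>t \<omega>. snd (ups t \<omega>)) \<and>
     (\<exists>\<tau>::nat \<Rightarrow> path \<Rightarrow> real. (\<forall>n. stopping_time T x0 (\<tau> n)) \<and> (\<forall>n \<omega>. \<tau> n \<omega> \<le> \<tau> (Suc n) \<omega>) \<and>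
        (\<forall>\<omega>\<in>OmegaS T x0. \<exists>n. T \<le> \<tau> n \<omega>) \<and>
        (\<forall>n. \<exists>c. \<forall>\<omega>\<in>OmegaS T x0. \<forall>t\<in>{0..T}. t \<le> \<tau> n \<omega> \<longrightarrow> norm (ups t \<omega>) \<le> c))"

(* I = int theta dS + int phi dC, where under P (b^C = 0) dC = C_S dS + C_Sigma d(Sigma - int nu);
   I is characterised as the continuous local martingale started at 0 with the
   corresponding covariations with S, Sigma - int nu and itself *)
definition gains where
  "gains T x0 C P zeta ups I \<longleftrightarrow>
     (let H1 = (\<lambda>t \<omega>. fst (ups t \<omega>) + snd (ups t \<omega>) * DC 1 C t (Sp t \<omega>) (Sgp t \<omega>));
          H2 = (\<lambda>t \<omega>. snd (ups t \<omega>) * DC 4 C t (Sp t \<omega>) (Sgp t \<omega>));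
          aSS = (\<lambda>t \<omega>. (Sp t \<omega>)\<^sup>2 * (z2 (zeta t \<omega>))\<^sup>2);
          aSX = (\<lambda>t \<omega>. Sp t \<omega> * z2 (zeta t \<omega>) * z3 (zeta t \<omega>));
          aXX = (\<lambda>t \<omega>. (z3 (zeta t \<omega>))\<^sup>2 + z4 (zeta t \<omega>))
      in (AE \<omega> in P. I 0 \<omega> = 0) \<and> cont_local_mart T x0 P I \<and>
         qcov T x0 P I Sp (\<lambda>t \<omega>. H1 t \<omega> * aSS t \<omega> + H2 t \<omega> * aSX t \<omega>) \<and>
         qcov T x0 P I (Sgt zeta) (\<lambda>t \<omega>. H1 t \<omega> * aSX t \<omega> + H2 t \<omega> * aXX t \<omega>) \<and>
         qcov T x0 P I I (\<lambda>t \<omega>. (H1 t \<omega>)\<^sup>2 * aSS t \<omega> + 2 * H1 t \<omega> * H2 t \<omega> * aSX t \<omega>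
                               + (H2 t \<omega>)\<^sup>2 * aXX t \<omega>))"

definition Lp_P :: "real \<Rightarrow> path measure set \<Rightarrow> nat \<Rightarrow> fun5 \<Rightarrow> bool" where
  "Lp_P T Ps p K \<longleftrightarrow> unc5 K \<in> borel_measurable (restrict_space borel (D0set T)) \<and>
     (\<exists>B::real. \<forall>P\<in>Ps.
        (\<integral>\<^sup>+\<omega>. (\<integral>\<^sup>+t\<in>{0<..<T}. ennreal (\<bar>K t (Sp t \<omega>) (Ap t \<omega>) (Mp t \<omega>) (Sgp t \<omega>)\<bar> ^ p) \<partial>lborel) \<partial>P)
          \<le> ennreal B)"

definition candidate_family where
  "candidate_family T Ps zeta C V bet gam psis Sgl Sgu Pf psi0 \<longleftrightarrow>
     psi0 \<in> {0<..<1} \<and> (\<forall>psi\<in>{0<..<psi0}. Pf psi \<in> Ps) \<and>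
     (\<exists>K0. Lp_P T Ps 4 K0 \<and>
        (\<forall>psi\<in>{0<..<psi0}. AEdt T (Pf psi) (\<lambda>t \<omega>.
           norm (zeta (Pf psi) t \<omega> - zeta_psi C V bet gam psis Sgl Sgu psi t (Sp t \<omega>) (Ap t \<omega>) (Mp t \<omega>) (Sgp t \<omega>))
             \<le> K0 t (Sp t \<omega>) (Ap t \<omega>) (Mp t \<omega>) (Sgp t \<omega>) * psi\<^sup>2)))"

definition reference_model where
  "reference_model T P zeta \<longleftrightarrow> AEdt T P (\<lambda>t \<omega>. zeta P t \<omega> = zeta0 (Sgp t \<omega>))"

definition assmA_a where
  "assmA_a T x0 C V Y0 Ys Ps zeta \<longleftrightarrow>
     (\<exists>KY::real. \<forall>ups\<in>Ys. \<forall>P\<in>Ps. \<forall>I. gains T x0 C P (zeta P) ups I \<longrightarrow>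
        AEdt T P (\<lambda>t \<omega>. Y0 + V 0 (fst x0) (snd (snd x0)) (fst x0) (fst (snd x0)) + I t \<omega>
                           - V t (Sp t \<omega>) (Ap t \<omega>) (Mp t \<omega>) (Sgp t \<omega>) > - KY))"

definition assmA_b where
  "assmA_b T C V bet gam psis Sgl Sgu Ps zeta nul nuu sgl sgu etl etu xiu \<longleftrightarrow>
     (\<exists>Pf psi0. candidate_family T Ps zeta C V bet gam psis Sgl Sgu Pf psi0) \<and>
     (\<exists>P\<in>Ps. reference_model T P zeta) \<and>
     nul < 0 \<and> 0 < nuu \<and> 0 < sgl \<and> sgl < Sgl \<and> Sgu < sgu \<and> etl < 0 \<and> 0 < etu \<and> 0 < xiu \<and>
     (\<forall>P\<in>Ps. AEdt T P (\<lambda>t \<omega>. zeta P t \<omega> \<in> Zset nul nuu sgl sgu etl etu xiu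
                              \<and> Sgl \<le> Sgp t \<omega> \<and> Sgp t \<omega> \<le> Sgu))"

definition assmA_c where
  "assmA_c T TC Cpay C Sgl Sgu Ps KC \<longleftrightarrow> TC \<ge> T \<and>
     classical_reg {0,1,4} {1,4} (liftC C) (DCset TC) \<and>
     continuous_on {(t,S,Sg). 0 \<le> t \<and> t \<le> TC \<and> 0 \<le> S \<and> 0 \<le> Sg} (\<lambda>(t,S,Sg). C t S Sg) \<and>
     (\<forall>t S Sg. 0 < t \<and> t < TC \<and> 0 < S \<and> Sgl \<le> Sg \<and> Sg \<le> Sgu \<longrightarrow>
        DC 0 C t S Sg + Sg\<^sup>2 * S\<^sup>2 * DC 1 (DC 1 C) t S Sg / 2 = 0) \<and>
     (\<forall>S Sg. 0 < S \<and> Sgl \<le> Sg \<and> Sg \<le> Sgu \<longrightarrow> C TC S Sg = Cpay S) \<and>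
     Lp_P T Ps 2 KC \<and>
     (\<forall>(t,S,A,M,Sg)\<in>Dset T Sgl Sgu. DC 4 C t S Sg \<noteq> 0 \<and>
        \<bar>DC 4 (DC 4 C) t S Sg\<bar> \<le> KC t S A M Sg * (\<bar>DC 4 C t S Sg\<bar> + \<bar>S\<^sup>2 * DC 1 (DC 1 C) t S Sg\<bar>
                                                     + \<bar>S * DC 4 (DC 1 C) t S Sg\<bar>))"

definition assmA_d where
  "assmA_d T Vpay V alp bet gam del Sgl Sgu KV \<longleftrightarrow>
     C12212 V (D0set T) \<and> continuous_on (closure (D0set T)) (unc5 V) \<and>
     (\<forall>(t,S,A,M,Sg)\<in>Dset T Sgl Sgu.
        D5 0 V t S A M Sg + (alp t S A M + bet t S A M * Sg\<^sup>2 / 2) * D5 2 V t S A M Sg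
        + Sg\<^sup>2 * S\<^sup>2 * GammaV gam V t S A M Sg / 2 = 0) \<and>
     (\<forall>(t,S,A,M,Sg)\<in>Dset T Sgl Sgu. S \<ge> M \<longrightarrow> del t S A M * D5 2 V t S A M Sg + D5 3 V t S A M Sg = 0) \<and>
     (\<forall>S A M Sg. 0 < S \<and> 0 < M \<and> Sgl \<le> Sg \<and> Sg \<le> Sgu \<longrightarrow> V T S A M Sg = Vpay S A M) \<and>
     (\<forall>(t,S,A,M,Sg)\<in>Dset T Sgl Sgu.
        \<bar>D5 4 V t S A M Sg\<bar> \<le> KV \<and>
        \<bar>bet t S A M * D5 2 V t S A M Sg + S\<^sup>2 * GammaV gam V t S A M Sg\<bar> \<le> KV \<and>
        \<bar>S * dDeltaV gam V t S A M Sg\<bar> \<le> KV \<and>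
        \<bar>D5 4 (D5 4 V) t S A M Sg\<bar> \<le> KV)"

definition assmA_e where
  "assmA_e T C V wt alp bet gam del psis Sgl Sgu Ps Kw \<longleftrightarrow>
     C12212 wt (D0set T) \<and> continuous_on (closure (D0set T)) (unc5 wt) \<and>
     (\<forall>(t,S,A,M,Sg)\<in>Dset T Sgl Sgu.
        D5 0 wt t S A M Sg + (alp t S A M + bet t S A M * Sg\<^sup>2 / 2) * D5 2 wt t S A M Sg
        + Sg\<^sup>2 * S\<^sup>2 * GammaV gam wt t S A M Sg / 2
        + gtilde C V bet gam psis t S A M Sg / 2 = 0) \<and>
     (\<forall>(t,S,A,M,Sg)\<in>Dset T Sgl Sgu. S \<ge> M \<longrightarrow> del t S A M * D5 2 wt t S A M Sg + D5 3 wt t S A M Sg = 0) \<and>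
     (\<forall>S A M Sg. 0 < S \<and> 0 < M \<and> Sgl \<le> Sg \<and> Sg \<le> Sgu \<longrightarrow> wt T S A M Sg = 0) \<and>
     (\<forall>(t,S,A,M,Sg)\<in>Dset T Sgl Sgu. 0 \<le> wt t S A M Sg \<and> wt t S A M Sg \<le> Kw) \<and>
     Lp_P T Ps 4 (D5 4 wt) \<and>
     Lp_P T Ps 4 (\<lambda>t S A M Sg. S * DeltaV gam wt t S A M Sg) \<and>
     Lp_P T Ps 4 (\<lambda>t S A M Sg. bet t S A M * D5 2 wt t S A M Sg + S\<^sup>2 * GammaV gam wt t S A M Sg) \<and>
     Lp_P T Ps 4 (\<lambda>t S A M Sg. S * dDeltaV gam wt t S A M Sg) \<and>
     Lp_P T Ps 4 (D5 4 (D5 4 wt))"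

definition assmA_f :: "(real \<Rightarrow> real) \<Rightarrow> bool" where
  "assmA_f U \<longleftrightarrow> C3 U \<and> (\<forall>y. deriv U y > 0) \<and> (\<forall>y. deriv (deriv U) y < 0) \<and>
     antimono (\<lambda>y. - deriv (deriv U) y / deriv U y)"

definition delta_vega where
  "delta_vega C V gam = (\<lambda>t \<omega>.
     (DeltaV gam V t (Sp t \<omega>) (Ap t \<omega>) (Mp t \<omega>) (Sgp t \<omega>)
        - D5 4 V t (Sp t \<omega>) (Ap t \<omega>) (Mp t \<omega>) (Sgp t \<omega>) / DC 4 C t (Sp t \<omega>) (Sgp t \<omega>)
          * DC 1 C t (Sp t \<omega>) (Sgp t \<omega>),
      D5 4 V t (Sp t \<omega>) (Ap t \<omega>) (Mp t \<omega>) (Sgp t \<omega>) / DC 4 C t (Sp t \<omega>) (Sgp t \<omega>)))"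

end

theory Submission
  imports Defs
begin


lemma pd_simps:
  "pd 0 f t S A M Sg y = deriv (\<lambda>z. f z S A M Sg y) t"
  "pd 1 f t S A M Sg y = deriv (\<lambda>z. f t z A M Sg y) S"
  "pd 2 f t S A M Sg y = deriv (\<lambda>z. f t S z M Sg y) A"
  "pd 3 f t S A M Sg y = deriv (\<lambda>z. f t S A z Sg y) M"
  "pd 4 f t S A M Sg y = deriv (\<lambda>z. f t S A M z y) Sg"
  "pd 5 f t S A M Sg y = deriv (\<lambda>z. f t S A M Sg z) y"
  by (simp_all add: pd_def app6_def)

lemma D5_simps:
  "D5 0 f t S A M Sg = deriv (\<lambda>z. f z S A M Sg) t"
  "D5 1 f t S A M Sg = deriv (\<lambda>z. f t z A M Sg) S"
  "D5 2 f t S A M Sg = deriv (\<lambda>z. f t S z M Sg) A"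
  "D5 4 f t S A M Sg = deriv (\<lambda>z. f t S A M z) Sg"
  by (simp_all add: D5_def pd_def app6_def lift5_def)

lemma pdiff_simps:
  "pdiff_at 0 (lift5 f) (pts5 (t,S,A,M,Sg)) \<longleftrightarrow> (\<lambda>z. f z S A M Sg) field_differentiable at t"
  "pdiff_at 1 (lift5 f) (pts5 (t,S,A,M,Sg)) \<longleftrightarrow> (\<lambda>z. f t z A M Sg) field_differentiable at S"
  "pdiff_at 2 (lift5 f) (pts5 (t,S,A,M,Sg)) \<longleftrightarrow> (\<lambda>z. f t S z M Sg) field_differentiable at A"
  "pdiff_at 4 (lift5 f) (pts5 (t,S,A,M,Sg)) \<longleftrightarrow> (\<lambda>z. f t S A M z) field_differentiable at Sg"
  by (simp_all add: pdiff_at_def pts5_def app6_def lift5_def)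

lemma deriv_affine:
  fixes g :: "real \<Rightarrow> real"
  assumes "g field_differentiable (at x)"
  shows "deriv (\<lambda>z. a - b * g z * c) x = -(b * c) * deriv g x"
proof -
  have "(g has_field_derivative deriv g x) (at x)" using assms
    by (simp add: field_differentiable_derivI)
  then have "((\<lambda>z. a - b * g z * c) has_field_derivative (-(b * c) * deriv g x)) (at x)"
    by (auto intro!: derivative_eq_intros)
  then show ?thesis by (rule DERIV_imp_deriv)
qed

lemma deriv_loc:
  fixes f g :: "real \<Rightarrow> real"
  assumes "open s" "x \<in> s" "\<And>z. z \<in> s \<Longrightarrow> f z = g z" "g field_differentiable (at x)"
  shows "deriv f x = deriv g x"
proof -
  have "(g has_field_derivative deriv g x) (at x)" using assms
    by (simp add: field_differentiable_derivI)
  then have "(f has_field_derivative deriv g x) (at x)"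
    by (rule has_field_derivative_transform_within_open[where S=s]) (use assms in auto)
  then show ?thesis by (rule DERIV_imp_deriv)
qed

lemma reg_fd:
  assumes "C12212 f D" "(t,S,A,M,Sg) \<in> D"
  shows "(\<lambda>z. f z S A M Sg) field_differentiable at t"
    "(\<lambda>z. f t z A M Sg) field_differentiable at S"
    "(\<lambda>z. f t S z M Sg) field_differentiable at A"
    "(\<lambda>z. f t S A M z) field_differentiable at Sg"
  using assms unfolding C12212_def classical_reg_def
  by (metis insertCI pdiff_simps)+

lemma reg_sd:
  assumes "C12212 f D" "(t,S,A,M,Sg) \<in> D" "j \<in> {1,2,4}"
  shows "(\<lambda>z. D5 j f t z A M Sg) field_differentiable at S"
    "(\<lambda>z. D5 j f t S z M Sg) field_differentiable at A"
    "(\<lambda>z. D5 j f t S A M z) field_differentiable at Sg"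
  using assms unfolding C12212_def classical_reg_def
  by (metis insertCI pdiff_simps)+

lemma w_fo:
  assumes "C12212 wt D" "(t,S,A,M,Sg) \<in> D"
  shows "pd 0 (wpsi U wt p) t S A M Sg y = -(deriv U y * p) * D5 0 wt t S A M Sg"
    "pd 1 (wpsi U wt p) t S A M Sg y = -(deriv U y * p) * D5 1 wt t S A M Sg"
    "pd 2 (wpsi U wt p) t S A M Sg y = -(deriv U y * p) * D5 2 wt t S A M Sg"
    "pd 4 (wpsi U wt p) t S A M Sg y = -(deriv U y * p) * D5 4 wt t S A M Sg"
  using reg_fd[OF assms] unfolding pd_simps D5_simps wpsi_def
  by (simp_all add: deriv_affine)

lemma w_y:
  assumes "C3 U"
  shows "pd 5 (wpsi U wt p) t S A M Sg y = deriv U y - deriv (deriv U) y * wt t S A M Sg * p"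
proof -
  have "((\<lambda>z. U z - deriv U z * wt t S A M Sg * p) has_field_derivative
        (deriv U y - deriv (deriv U) y * wt t S A M Sg * p)) (at y)"
    using assms unfolding C3_def
    by (auto intro!: derivative_eq_intros simp: field_differentiable_derivI)
  then show ?thesis by (simp add: pd_simps wpsi_def DERIV_imp_deriv)
qed

lemma w_yy:
  assumes "C3 U"
  shows "pd 5 (pd 5 (wpsi U wt p)) t S A M Sg y
     = deriv (deriv U) y - deriv (deriv (deriv U)) y * wt t S A M Sg * p"
proof -
  have "((\<lambda>z. deriv U z - deriv (deriv U) z * wt t S A M Sg * p) has_field_derivative
        (deriv (deriv U) y - deriv (deriv (deriv U)) y * wt t S A M Sg * p)) (at y)"
    using assms unfolding C3_def
    by (auto intro!: derivative_eq_intros simp: field_differentiable_derivI)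
  moreover have "pd 5 (wpsi U wt p) t S A M Sg = (\<lambda>z. deriv U z - deriv (deriv U) z * wt t S A M Sg * p)"
    by (rule ext, rule w_y[OF assms])
  ultimately show ?thesis unfolding pd_simps by (simp add: DERIV_imp_deriv)
qed

lemma w_sy:
  assumes "C3 U" "C12212 wt D" "(t,S,A,M,Sg) \<in> D" "k \<in> {1,2,4}"
  shows "pd 5 (pd k (wpsi U wt p)) t S A M Sg y = -(deriv (deriv U) y * p) * D5 k wt t S A M Sg"
proof -
  have e: "pd k (wpsi U wt p) t S A M Sg z = -(deriv U z * p) * D5 k wt t S A M Sg" for z
    using w_fo[OF assms(2,3)] assms(4) by auto
  have "((\<lambda>z. -(deriv U z * p) * D5 k wt t S A M Sg) has_field_derivative
        (-(deriv (deriv U) y * p) * D5 k wt t S A M Sg)) (at y)"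
  proof -
    have "(deriv U has_field_derivative deriv (deriv U) y) (at y)"
      using assms(1) unfolding C3_def by (simp add: field_differentiable_derivI)
    then show ?thesis by (auto intro!: derivative_eq_intros)
  qed
  moreover have "pd k (wpsi U wt p) t S A M Sg = (\<lambda>z. -(deriv U z * p) * D5 k wt t S A M Sg)"
    by (rule ext, rule e)
  ultimately show ?thesis unfolding pd_simps by (simp add: DERIV_imp_deriv)
qed

lemma w_so:
  assumes reg: "C12212 wt (D0set T)" and pt: "(t,S,A,M,Sg) \<in> D0set T" and k: "k \<in> {1,2,4}"
  shows "pd 1 (pd k (wpsi U wt p)) t S A M Sg y = -(deriv U y * p) * D5 1 (D5 k wt) t S A M Sg"
    "pd 2 (pd k (wpsi U wt p)) t S A M Sg y = -(deriv U y * p) * D5 2 (D5 k wt) t S A M Sg"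
    "pd 4 (pd k (wpsi U wt p)) t S A M Sg y = -(deriv U y * p) * D5 4 (D5 k wt) t S A M Sg"
proof -
  have fo: "pd k (wpsi U wt p) t' S' A' M' Sg' y = -(deriv U y * p) * D5 k wt t' S' A' M' Sg'"
    if "(t',S',A',M',Sg') \<in> D0set T" for t' S' A' M' Sg'
    using w_fo[OF reg that] k by auto
  have d: "(\<lambda>z. D5 k wt t z A M Sg) field_differentiable at S"
    "(\<lambda>z. D5 k wt t S z M Sg) field_differentiable at A"
    "(\<lambda>z. D5 k wt t S A M z) field_differentiable at Sg"
    using reg_sd[OF reg pt k] by auto
  have pos: "0 < S" "0 < Sg" using pt by (auto simp: D0set_def)
  have "deriv (\<lambda>z. pd k (wpsi U wt p) t z A M Sg y) S
      = deriv (\<lambda>z. -(deriv U y * p) * D5 k wt t z A M Sg) S"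
  proof (rule deriv_loc[where s="{0<..}"])
    fix z :: real assume "z \<in> {0<..}"
    then have "(t,z,A,M,Sg) \<in> D0set T" using pt by (auto simp: D0set_def)
    then show "pd k (wpsi U wt p) t z A M Sg y = -(deriv U y * p) * D5 k wt t z A M Sg" by (rule fo)
  next
    show "(\<lambda>z. -(deriv U y * p) * D5 k wt t z A M Sg) field_differentiable at S"
      using d(1) by (intro field_differentiable_mult field_differentiable_const)
  qed (use pos in auto)
  then show "pd 1 (pd k (wpsi U wt p)) t S A M Sg y = -(deriv U y * p) * D5 1 (D5 k wt) t S A M Sg"
    by (simp only: pd_simps D5_simps deriv_cmult[OF d(1)])
  have "deriv (\<lambda>z. pd k (wpsi U wt p) t S z M Sg y) A
      = deriv (\<lambda>z. -(deriv U y * p) * D5 k wt t S z M Sg) A"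
  proof (rule deriv_loc[where s="UNIV"])
    fix z :: real assume "z \<in> UNIV"
    then have "(t,S,z,M,Sg) \<in> D0set T" using pt by (auto simp: D0set_def)
    then show "pd k (wpsi U wt p) t S z M Sg y = -(deriv U y * p) * D5 k wt t S z M Sg" by (rule fo)
  next
    show "(\<lambda>z. -(deriv U y * p) * D5 k wt t S z M Sg) field_differentiable at A"
      using d(2) by (intro field_differentiable_mult field_differentiable_const)
  qed (use pos in auto)
  then show "pd 2 (pd k (wpsi U wt p)) t S A M Sg y = -(deriv U y * p) * D5 2 (D5 k wt) t S A M Sg"
    by (simp only: pd_simps D5_simps deriv_cmult[OF d(2)])
  have "deriv (\<lambda>z. pd k (wpsi U wt p) t S A M z y) Sg
      = deriv (\<lambda>z. -(deriv U y * p) * D5 k wt t S A M z) Sg"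
  proof (rule deriv_loc[where s="{0<..}"])
    fix z :: real assume "z \<in> {0<..}"
    then have "(t,S,A,M,z) \<in> D0set T" using pt by (auto simp: D0set_def)
    then show "pd k (wpsi U wt p) t S A M z y = -(deriv U y * p) * D5 k wt t S A M z" by (rule fo)
  next
    show "(\<lambda>z. -(deriv U y * p) * D5 k wt t S A M z) field_differentiable at Sg"
      using d(3) by (intro field_differentiable_mult field_differentiable_const)
  qed (use pos in auto)
  then show "pd 4 (pd k (wpsi U wt p)) t S A M Sg y = -(deriv U y * p) * D5 4 (D5 k wt) t S A M Sg"
    by (simp only: pd_simps D5_simps deriv_cmult[OF d(3)])
qed

lemma U3_nonneg:
  assumes "assmA_f U"
  shows "0 \<le> deriv (deriv (deriv U)) y"
proof -
  have C: "C3 U" and u1: "\<And>y. deriv U y > 0" and am: "antimono (\<lambda>y. - deriv (deriv U) y / deriv U y)"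
    using assms by (auto simp: assmA_f_def)
  have d1: "(deriv U has_field_derivative deriv (deriv U) y) (at y)"
    and d2: "(deriv (deriv U) has_field_derivative deriv (deriv (deriv U)) y) (at y)"
    using C unfolding C3_def by (auto simp: field_differentiable_derivI)
  define r where "r = (\<lambda>y. - deriv (deriv U) y / deriv U y)"
  define u1' where "u1' = deriv U y"
  define u2 where "u2 = deriv (deriv U) y"
  define u3 where "u3 = deriv (deriv (deriv U)) y"
  have pos: "u1' > 0" using u1 by (simp add: u1'_def)
  have "(r has_field_derivative (- (u3 * u1' - u2 * u2) / (u1' * u1'))) (at y)"
    unfolding r_def u1'_def u2_def u3_def using d1 d2 u1[of y]
    by (auto intro!: derivative_eq_intros simp: field_simps power2_eq_square)
  moreover have "\<not> (0 < - (u3 * u1' - u2 * u2) / (u1' * u1'))"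
  proof
    assume "0 < - (u3 * u1' - u2 * u2) / (u1' * u1')"
    from DERIV_pos_inc_right[OF calculation this] obtain d where "d > 0"
      and h: "\<And>h. h > 0 \<Longrightarrow> h < d \<Longrightarrow> r y < r (y + h)" by blast
    have "r (y + d/2) \<le> r y" using am \<open>d > 0\<close> unfolding r_def antimono_def by (metis add_increasing2 less_eq_real_def order_refl half_gt_zero)
    with h[of "d/2"] \<open>d > 0\<close> show False by auto
  qed
  ultimately have "u3 * u1' - u2 * u2 \<ge> 0" using pos
    by (auto simp: field_simps not_less)
  then have "u3 * u1' \<ge> 0" by (smt (verit) zero_le_square)
  then show ?thesis using pos unfolding u3_def[symmetric] by (simp add: zero_le_mult_iff)
qed


lemma lagrange4:
  fixes p1 p2 p3 p4 c1 c2 c3 c4 v1 v2 v3 v4 :: real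
  shows "(p1 * c1 * c1 + p2 * c2 * c2 + p3 * c3 * c3 + p4 * c4 * c4) * (p1 * v1 * v1 + p2 * v2 * v2 + p3 * v3 * v3 + p4 * v4 * v4)
     - (p1 * c1 * v1 + p2 * c2 * v2 + p3 * c3 * v3 + p4 * c4 * v4)^2
   = p1 * p2 * (c1 * v2-c2 * v1)^2 + p1 * p3 * (c1 * v3-c3 * v1)^2 + p1 * p4 * (c1 * v4-c4 * v1)^2
     + p2 * p3 * (c2 * v3-c3 * v2)^2 + p2 * p4 * (c2 * v4-c4 * v2)^2 + p3 * p4 * (c3 * v4-c4 * v3)^2"
  by (simp add: power2_eq_square algebra_simps)

lemma cs4:
  fixes p1 p2 p3 p4 c1 c2 c3 c4 v1 v2 v3 v4 :: real
  assumes "0 \<le> p1" "0 \<le> p2" "0 \<le> p3" "0 \<le> p4"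
  shows "(p1 * c1 * v1 + p2 * c2 * v2 + p3 * c3 * v3 + p4 * c4 * v4)^2
     \<le> (p1 * c1 * c1 + p2 * c2 * c2 + p3 * c3 * c3 + p4 * c4 * c4) * (p1 * v1 * v1 + p2 * v2 * v2 + p3 * v3 * v3 + p4 * v4 * v4)"
proof -
  have "0 \<le> p1 * p2 * (c1 * v2-c2 * v1)^2 + p1 * p3 * (c1 * v3-c3 * v1)^2 + p1 * p4 * (c1 * v4-c4 * v1)^2
     + p2 * p3 * (c2 * v3-c3 * v2)^2 + p2 * p4 * (c2 * v4-c4 * v2)^2 + p3 * p4 * (c3 * v4-c4 * v3)^2"
    using assms by (intro add_nonneg_nonneg mult_nonneg_nonneg) auto
  with lagrange4[of p1 c1 p2 c2 p3 c3 p4 c4 v1 v2 v3 v4] show ?thesis by linarith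
qed

lemma proj_bound:
  fixes p1 p2 p3 p4 c1 c2 c3 c4 v1 v2 v3 v4 :: real
  assumes "0 \<le> p1" "0 \<le> p2" "0 \<le> p3" "0 \<le> p4"
    and cc: "cc = p1 * c1 * c1 + p2 * c2 * c2 + p3 * c3 * c3 + p4 * c4 * c4" and "cc > 0"
    and cv: "cv = p1 * c1 * v1 + p2 * c2 * v2 + p3 * c3 * v3 + p4 * c4 * v4"
    and vv: "vv = p1 * v1 * v1 + p2 * v2 * v2 + p3 * v3 * v3 + p4 * v4 * v4"
  shows "p1 * (cv/cc * c1)^2 + p2 * (cv/cc * c2)^2 + p3 * (cv/cc * c3)^2 + p4 * (cv/cc * c4)^2 \<le> vv"
proof -
  define k where "k = cv/cc"
  have "p1 * (k * c1)^2 + p2 * (k * c2)^2 + p3 * (k * c3)^2 + p4 * (k * c4)^2 = k^2 * cc"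
    by (simp add: cc power2_eq_square algebra_simps)
  then have "p1 * (cv/cc * c1)^2 + p2 * (cv/cc * c2)^2 + p3 * (cv/cc * c3)^2 + p4 * (cv/cc * c4)^2 = (cv/cc)^2 * cc"
    by (simp add: k_def)
  also have "\<dots> = cv^2 / cc" using \<open>cc > 0\<close> by (simp add: power2_eq_square field_simps)
  also have "\<dots> \<le> vv" using cs4[OF assms(1-4), of c1 v1 c2 v2 c3 v3 c4 v4] \<open>cc > 0\<close>
    by (simp add: cc cv vv divide_le_eq mult.commute)
  finally show ?thesis .
qed

lemma kkt_real:
  fixes p1 p2 p3 p4 c1 c2 c3 c4 v1 v2 v3 v4 lam mu :: real
  assumes p: "0 < p1" "0 < p2" "0 < p3" "0 < p4" and c1: "c1 \<noteq> 0"
    and cc: "cc = p1 * c1 * c1 + p2 * c2 * c2 + p3 * c3 * c3 + p4 * c4 * c4"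
    and cv: "cv = p1 * c1 * v1 + p2 * c2 * v2 + p3 * c3 * v3 + p4 * c4 * v4"
    and vv: "vv = p1 * v1 * v1 + p2 * v2 * v2 + p3 * v3 * v3 + p4 * v4 * v4"
    and lam: "lam = (if Vgg - (cv/cc) * Cgg \<ge> 0 then cv/cc
                    else (cv - Cgg * Vgg * p4/4)/(cc - Cgg^2 * p4/4))"
    and mu: "mu = max (- (Vgg - lam * Cgg)) 0 / 2"
    and Cgg: "Cgg = 2 * c4" and Vgg: "Vgg = 2 * v4"
  shows "p1 * c1 * (v1 - lam * c1) + p2 * c2 * (v2 - lam * c2) + p3 * c3 * (v3 - lam * c3) + p4 * c4 * (v4 - lam * c4 + mu) = 0"
    "mu * (v4 - lam * c4 + mu) = 0"
    "p1 * (lam * c1)^2 \<le> vv" "p2 * (lam * c2)^2 \<le> vv" "p3 * (lam * c3)^2 \<le> vv"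
    "p4 * (lam * c4)^2 \<le> vv \<and> mu = 0 \<or> v4 - lam * c4 + mu = 0"
proof -
  have "c1 * c1 > 0" using c1 by (metis not_real_square_gt_zero)
  then have pc1: "p1 * c1 * c1 > 0" using p by (simp add: mult_pos_pos mult.assoc)
  have sq: "0 \<le> q * x * x" if "0<q" for q x :: real using that by (simp add: mult.assoc)
  have ccpos: "cc > 0" unfolding cc using pc1 sq[OF p(2), of c2] sq[OF p(3), of c3] sq[OF p(4), of c4] by linarith
  define A where "A = p1 * c1 * c1 + p2 * c2 * c2 + p3 * c3 * c3"
  define a where "a = p1 * c1 * v1 + p2 * c2 * v2 + p3 * c3 * v3"
  have Apos: "A > 0" unfolding A_def using pc1 sq[OF p(2), of c2] sq[OF p(3), of c3] by linarith
  have nn: "0 \<le> p1 * (x1)^2" "0 \<le> p2 * (x2)^2" "0 \<le> p3 * (x3)^2" "0 \<le> p4 * (x4)^2" for x1 x2 x3 x4 :: real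
    using p by auto
  have all: "p1 * c1 * (v1 - lam * c1) + p2 * c2 * (v2 - lam * c2) + p3 * c3 * (v3 - lam * c3) + p4 * c4 * (v4 - lam * c4 + mu) = 0
     \<and> mu * (v4 - lam * c4 + mu) = 0 \<and>
    p1 * (lam * c1)^2 \<le> vv \<and> p2 * (lam * c2)^2 \<le> vv \<and> p3 * (lam * c3)^2 \<le> vv \<and>
    (p4 * (lam * c4)^2 \<le> vv \<and> mu = 0 \<or> v4 - lam * c4 + mu = 0)"
  proof (cases "Vgg - (cv/cc) * Cgg \<ge> 0")
    case True
    then have l: "lam = cv/cc" by (simp add: lam)
    then have m: "mu = 0" using True by (simp add: mu)
    have pb: "p1 * (cv/cc * c1)^2 + p2 * (cv/cc * c2)^2 + p3 * (cv/cc * c3)^2 + p4 * (cv/cc * c4)^2 \<le> vv"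
      by (rule proj_bound[OF _ _ _ _ cc ccpos cv vv]) (use p in auto)
    have e: "p1 * c1 * (v1 - lam * c1) + p2 * c2 * (v2 - lam * c2) + p3 * c3 * (v3 - lam * c3) + p4 * c4 * (v4 - lam * c4) = cv - lam * cc"
      by (simp add: cc cv algebra_simps)
    show ?thesis using pb nn(1)[of "cv/cc * c1"] nn(2)[of "cv/cc * c2"] nn(3)[of "cv/cc * c3"] nn(4)[of "cv/cc * c4"] ccpos
      unfolding l m using e[unfolded l] by (auto simp: field_simps)
  next
    case False
    have den: "cc - Cgg^2 * p4/4 = A" by (simp add: cc Cgg A_def power2_eq_square)
    have num: "cv - Cgg * Vgg * p4/4 = a" by (simp add: cv Cgg Vgg a_def)
    have l: "lam = a/A" using False by (simp add: lam den num)
    have s1: "v4 * cc - cv * c4 < 0"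
    proof -
      have "Vgg - (cv/cc) * Cgg < 0" using False by simp
      then have "2 * (v4 * cc - cv * c4)/cc < 0" using ccpos by (simp add: Cgg Vgg field_simps)
      then show ?thesis using ccpos by (simp add: divide_less_0_iff)
    qed
    have s2: "v4 * A - a * c4 = v4 * cc - cv * c4" by (simp add: A_def a_def cc cv algebra_simps)
    have "v4 - lam * c4 = (v4 * A - a * c4)/A" using Apos by (simp add: l field_simps)
    then have neg: "v4 - lam * c4 < 0" using s1 s2 Apos by (simp add: divide_less_0_iff)
    then have m: "mu = lam * c4 - v4" by (simp add: mu Cgg Vgg)
    have pb: "p1 * (a/A * c1)^2 + p2 * (a/A * c2)^2 + p3 * (a/A * c3)^2 + 0 * (a/A * 0)^2 \<le> p1 * v1 * v1 + p2 * v2 * v2 + p3 * v3 * v3 + 0 * 0 * 0"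
      using proj_bound[of p1 p2 p3 0 A c1 c2 c3 0 a v1 v2 v3 0 "p1 * v1 * v1 + p2 * v2 * v2 + p3 * v3 * v3 + 0 * 0 * 0"] p Apos
      by (auto simp: A_def a_def)
    have vv3: "p1 * v1 * v1 + p2 * v2 * v2 + p3 * v3 * v3 \<le> vv" using sq[OF p(4), of v4] by (simp add: vv)
    have e: "p1 * c1 * (v1 - lam * c1) + p2 * c2 * (v2 - lam * c2) + p3 * c3 * (v3 - lam * c3) = a - lam * A"
      by (simp add: A_def a_def algebra_simps)
    have e0: "a - lam * A = 0" using Apos by (simp add: l)
    show ?thesis using pb vv3 nn(1)[of "a/A * c1"] nn(2)[of "a/A * c2"] nn(3)[of "a/A * c3"] e e0 unfolding m l
      by auto
  qed
  then show "p1 * c1 * (v1 - lam * c1) + p2 * c2 * (v2 - lam * c2) + p3 * c3 * (v3 - lam * c3) + p4 * c4 * (v4 - lam * c4 + mu) = 0"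
    "mu * (v4 - lam * c4 + mu) = 0"
    "p1 * (lam * c1)^2 \<le> vv" "p2 * (lam * c2)^2 \<le> vv" "p3 * (lam * c3)^2 \<le> vv"
    "p4 * (lam * c4)^2 \<le> vv \<and> mu = 0 \<or> v4 - lam * c4 + mu = 0" by auto
qed

lemma abs_le_1sq: "\<bar>x\<bar> \<le> 1 + x^2" for x :: real
proof -
  have "0 \<le> (\<bar>x\<bar> - 1)^2" by simp
  then have "2 * \<bar>x\<bar> \<le> 1 + x^2" by (simp add: power2_eq_square algebra_simps)
  then show ?thesis by simp
qed

lemma kkt_final:
  fixes p1 p2 p3 p4 c1 c2 c3 c4 v1 v2 v3 v4 lam mu Bv :: real
  assumes p: "0 < p1" "0 < p2" "0 < p3" "0 < p4" and c1: "c1 \<noteq> 0"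
    and cc: "cc = p1 * c1 * c1 + p2 * c2 * c2 + p3 * c3 * c3 + p4 * c4 * c4"
    and cv: "cv = p1 * c1 * v1 + p2 * c2 * v2 + p3 * c3 * v3 + p4 * c4 * v4"
    and lam: "lam = (if Vgg - (cv/cc) * Cgg \<ge> 0 then cv/cc
                    else (cv - Cgg * Vgg * p4/4)/(cc - Cgg^2 * p4/4))"
    and mu: "mu = max (- (Vgg - lam * Cgg)) 0 / 2"
    and Cgg: "Cgg = 2 * c4" and Vgg: "Vgg = 2 * v4"
    and vb: "\<bar>v1\<bar> \<le> Bv" "\<bar>v2\<bar> \<le> Bv" "\<bar>v3\<bar> \<le> Bv" "\<bar>v4\<bar> \<le> Bv"
  defines "Cw \<equiv> Bv + 1 + (p1+p2+p3+p4) * Bv^2 * (1/p1+1/p2+1/p3+1/p4)"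
  shows "p1 * ((v1 - lam * c1) - v1) * (v1 - lam * c1) + p2 * ((v2 - lam * c2) - v2) * (v2 - lam * c2)
       + p3 * ((v3 - lam * c3) - v3) * (v3 - lam * c3) + p4 * ((v4 - lam * c4 + mu) - v4) * (v4 - lam * c4 + mu) = 0"
    "\<bar>v1 - lam * c1\<bar> \<le> Cw" "\<bar>v2 - lam * c2\<bar> \<le> Cw" "\<bar>v3 - lam * c3\<bar> \<le> Cw" "\<bar>v4 - lam * c4 + mu\<bar> \<le> Cw"
proof -
  define vv where "vv = p1 * v1 * v1 + p2 * v2 * v2 + p3 * v3 * v3 + p4 * v4 * v4"
  note K = kkt_real[OF p c1 cc cv vv_def lam mu Cgg Vgg]
  show "p1 * ((v1 - lam * c1) - v1) * (v1 - lam * c1) + p2 * ((v2 - lam * c2) - v2) * (v2 - lam * c2)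
       + p3 * ((v3 - lam * c3) - v3) * (v3 - lam * c3) + p4 * ((v4 - lam * c4 + mu) - v4) * (v4 - lam * c4 + mu) = 0"
  proof -
    have "p1 * ((v1 - lam * c1) - v1) * (v1 - lam * c1) + p2 * ((v2 - lam * c2) - v2) * (v2 - lam * c2)
       + p3 * ((v3 - lam * c3) - v3) * (v3 - lam * c3) + p4 * ((v4 - lam * c4 + mu) - v4) * (v4 - lam * c4 + mu)
      = -lam * (p1 * c1 * (v1 - lam * c1) + p2 * c2 * (v2 - lam * c2) + p3 * c3 * (v3 - lam * c3) + p4 * c4 * (v4 - lam * c4 + mu))
        + p4 * (mu * (v4 - lam * c4 + mu))"
      by (simp add: algebra_simps)
    then show ?thesis using K(1) K(2) by simp
  qed
  have B0: "0 \<le> Bv" using vb(1) by linarith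
  have sq: "x^2 \<le> Bv^2" if "\<bar>x\<bar> \<le> Bv" for x
    using that by (metis abs_ge_zero abs_le_square_iff order.trans abs_abs abs_le_self_iff power2_abs power_mono)
  have vvb: "vv \<le> (p1+p2+p3+p4) * Bv^2"
  proof -
    have "p1 * v1 * v1 \<le> p1 * Bv^2" using sq[OF vb(1)] p by (simp add: power2_eq_square mult.assoc)
    moreover have "p2 * v2 * v2 \<le> p2 * Bv^2" using sq[OF vb(2)] p by (simp add: power2_eq_square mult.assoc)
    moreover have "p3 * v3 * v3 \<le> p3 * Bv^2" using sq[OF vb(3)] p by (simp add: power2_eq_square mult.assoc)
    moreover have "p4 * v4 * v4 \<le> p4 * Bv^2" using sq[OF vb(4)] p by (simp add: power2_eq_square mult.assoc)
    ultimately show ?thesis unfolding vv_def by (simp add: algebra_simps)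
  qed
  have iP: "1/pi \<le> 1/p1+1/p2+1/p3+1/p4" if "pi \<in> {p1,p2,p3,p4}" for pi
    using that p by auto
  have lc: "\<bar>lam * ci\<bar> \<le> 1 + (p1+p2+p3+p4) * Bv^2 * (1/p1+1/p2+1/p3+1/p4)"
    if "pi * (lam * ci)^2 \<le> vv" "pi \<in> {p1,p2,p3,p4}" for pi ci
  proof -
    have pp: "0 < pi" using that(2) p by auto
    have "(lam * ci)^2 \<le> vv/pi" using that(1) pp by (simp add: le_divide_eq mult.commute)
    also have "\<dots> = vv * (1/pi)" by simp
    also have "\<dots> \<le> ((p1+p2+p3+p4) * Bv^2) * (1/p1+1/p2+1/p3+1/p4)"
    proof (rule mult_mono)
      show "0 \<le> (p1+p2+p3+p4) * Bv^2" using p by simp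
      show "0 \<le> 1/pi" using pp by simp
    qed (use vvb iP[OF that(2)] in auto)
    finally show ?thesis using abs_le_1sq[of "lam * ci"] by linarith
  qed
  have w: "\<bar>vi - lam * ci\<bar> \<le> Cw" if "pi * (lam * ci)^2 \<le> vv" "pi \<in> {p1,p2,p3,p4}" "\<bar>vi\<bar> \<le> Bv" for pi ci vi
    using lc[OF that(1,2)] that(3) unfolding Cw_def by linarith
  show "\<bar>v1 - lam * c1\<bar> \<le> Cw" by (rule w[OF K(3) _ vb(1)]) simp
  show "\<bar>v2 - lam * c2\<bar> \<le> Cw" by (rule w[OF K(4) _ vb(2)]) simp
  show "\<bar>v3 - lam * c3\<bar> \<le> Cw" by (rule w[OF K(5) _ vb(3)]) simp
  have Cw0: "0 \<le> Cw" unfolding Cw_def using B0 p by simp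
  show "\<bar>v4 - lam * c4 + mu\<bar> \<le> Cw"
    using K(6)
  proof
    assume h: "p4 * (lam * c4)^2 \<le> vv \<and> mu = 0"
    then show ?thesis using w[OF conjunct1[OF h] _ vb(4)] by simp
  next
    assume "v4 - lam * c4 + mu = 0"
    then show ?thesis using Cw0 by simp
  qed
qed


definition clamp :: "real \<Rightarrow> real \<Rightarrow> real" where "clamp T t = max 0 (min t T)"

lemma space_OmegaM: "space (OmegaM T x0) = OmegaS T x0"
  unfolding OmegaM_def by (simp add: space_measure_of_conv)

lemma sets_OmegaM: "sets (OmegaM T x0) = sigma_sets (OmegaS T x0)
     {{\<omega> \<in> OmegaS T x0. \<omega> u \<in> B} | u B. u \<in> {0..T} \<and> B \<in> sets borel}"
  unfolding OmegaM_def by (rule sets_measure_of) auto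

lemma model_space: "model_measure T x0 P \<Longrightarrow> space P = OmegaS T x0"
  unfolding model_measure_def using sets_eq_imp_space_eq space_OmegaM by metis

lemma eval_measurable:
  assumes "model_measure T x0 P" "0 \<le> T"
  shows "(\<lambda>\<omega>. \<omega> u) \<in> measurable P borel"
proof (rule measurableI)
  fix A :: "(real \<times> real \<times> real) set" assume A: "A \<in> sets borel"
  have "(\<lambda>\<omega>. \<omega> u) -` A \<inter> space P = {\<omega> \<in> OmegaS T x0. \<omega> (clamp T u) \<in> A}"
    using assms(1) by (auto simp: model_space OmegaS_def clamp_def)
  also have "\<dots> \<in> sets (OmegaM T x0)" unfolding sets_OmegaM
  proof (rule sigma_sets.Basic, intro CollectI exI conjI)
    show "{\<omega> \<in> OmegaS T x0. \<omega> (clamp T u) \<in> A} = {\<omega> \<in> OmegaS T x0. \<omega> (clamp T u) \<in> A}" ..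
  qed (use A assms(2) in \<open>auto simp: clamp_def\<close>)
  finally show "(\<lambda>\<omega>. \<omega> u) -` A \<inter> space P \<in> sets P"
    using assms(1) by (simp add: model_measure_def)
qed simp

lemma path_cont:
  assumes "\<omega> \<in> OmegaS T x0" "0 \<le> T"
  shows "continuous_on UNIV \<omega>"
proof -
  have e: "\<omega> = \<omega> \<circ> clamp T" using assms by (auto simp: OmegaS_def clamp_def fun_eq_iff)
  have "continuous_on UNIV (\<omega> \<circ> clamp T)"
    by (rule continuous_on_compose)
       (use assms in \<open>auto simp: OmegaS_def clamp_def intro!: continuous_intros
          elim: continuous_on_subset\<close>)
  then show ?thesis using e by simp
qed

lemma floor_approx: "(\<lambda>n. real_of_int \<lfloor>real n * t\<rfloor> / real n) \<longlonglongrightarrow> t"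
proof (rule tendsto_sandwich[where f="\<lambda>n. t - 1 / real n" and h="\<lambda>n. t"])
  show "\<forall>\<^sub>F n in sequentially. t - 1 / real n \<le> real_of_int \<lfloor>real n * t\<rfloor> / real n"
    using eventually_gt_at_top[of 0]
  proof eventually_elim
    case (elim n)
    have "real n * t - 1 \<le> real_of_int \<lfloor>real n * t\<rfloor>" by linarith
    from divide_right_mono[OF this, of "real n"] show ?case using elim by (simp add: diff_divide_distrib)
  qed
  show "\<forall>\<^sub>F n in sequentially. real_of_int \<lfloor>real n * t\<rfloor> / real n \<le> t"
    using eventually_gt_at_top[of 0]
  proof eventually_elim
    case (elim n)
    have "real_of_int \<lfloor>real n * t\<rfloor> \<le> real n * t" by linarith
    from divide_right_mono[OF this, of "real n"] show ?case using elim by simp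
  qed
  have "(\<lambda>n. t - 1 / real n) \<longlonglongrightarrow> t - 0"
    by (intro tendsto_diff tendsto_const lim_inverse_n')
  then show "(\<lambda>n. t - 1 / real n) \<longlonglongrightarrow> t" by simp
qed simp

lemma joint_eval:
  assumes "model_measure T x0 P" "0 \<le> T"
  shows "(\<lambda>x. fst x (snd x)) \<in> borel_measurable (P \<Otimes>\<^sub>M lborel)"
proof (rule borel_measurable_LIMSEQ_metric[where f="\<lambda>n x. fst x (real_of_int \<lfloor>real n * snd x\<rfloor> / real n)"])
  fix n :: nat
  have g: "(\<lambda>x. \<lfloor>real n * snd x\<rfloor>) \<in> measurable (P \<Otimes>\<^sub>M lborel) (count_space UNIV)"
    by measurable
  have f: "(\<lambda>x. fst x (real_of_int i / real n)) \<in> borel_measurable (P \<Otimes>\<^sub>M lborel)" for i :: int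
    using measurable_comp[OF measurable_fst eval_measurable[OF assms, of "real_of_int i / real n"]]
    by (simp add: o_def)
  show "(\<lambda>x. fst x (real_of_int \<lfloor>real n * snd x\<rfloor> / real n)) \<in> borel_measurable (P \<Otimes>\<^sub>M lborel)"
    by (rule measurable_compose_countable[OF f g])
next
  fix x :: "path \<times> real" assume "x \<in> space (P \<Otimes>\<^sub>M lborel)"
  then have "fst x \<in> OmegaS T x0" using assms(1) by (auto simp: space_pair_measure model_space)
  then have c: "continuous_on UNIV (fst x)" by (rule path_cont) (use assms in auto)
  show "(\<lambda>n. fst x (real_of_int \<lfloor>real n * snd x\<rfloor> / real n)) \<longlonglongrightarrow> fst x (snd x)"
    by (rule isCont_tendsto_compose[OF _ floor_approx])
       (use c in \<open>simp add: continuous_on_eq_continuous_at\<close>)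
qed

lemma Sp_meas:
  assumes "model_measure T x0 P" "0 \<le> T"
  shows "(\<lambda>x. Sp u (fst x)) \<in> borel_measurable (P \<Otimes>\<^sub>M lborel)"
proof -
  have e: "(\<lambda>x. fst x u) \<in> borel_measurable (P \<Otimes>\<^sub>M lborel)"
    using measurable_comp[OF measurable_fst eval_measurable[OF assms, of u]] by (simp add: o_def)
  show ?thesis unfolding Sp_def
    by (rule borel_measurable_continuous_on[OF _ e]) (intro continuous_intros)
qed

lemma Sp_cont:
  assumes "\<omega> \<in> OmegaS T x0" "0 \<le> T"
  shows "continuous_on UNIV (\<lambda>u. Sp u \<omega>)"
  unfolding Sp_def using path_cont[OF assms] by (intro continuous_intros) (auto intro: continuous_on_compose2)

lemma Mp_sup:
  assumes "\<omega> \<in> OmegaS T x0" "0 \<le> T"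
  shows "Mp t \<omega> = (SUP kn\<in>UNIV. (if real (fst kn) / real (snd kn) \<le> max 0 t
               then Sp (real (fst kn) / real (snd kn)) \<omega> else Sp 0 \<omega>))"
proof -
  define f where "f = (\<lambda>u. Sp u \<omega>)"
  define s where "s = max 0 t"
  define G where "G = (\<lambda>kn::nat\<times>nat. if real (fst kn) / real (snd kn) \<le> s
               then f (real (fst kn) / real (snd kn)) else f 0)"
  have c: "continuous_on UNIV f" unfolding f_def by (rule Sp_cont[OF assms])
  have s0: "0 \<le> s" by (simp add: s_def)
  have bA: "bdd_above (f ` {0..s})"
    by (rule bounded_imp_bdd_above, rule compact_imp_bounded, rule compact_continuous_image)
       (use c in \<open>auto intro: continuous_on_subset\<close>)
  have GA: "G kn \<in> f ` {0..s}" for kn using s0 by (auto simp: G_def)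
  have bG: "bdd_above (range G)" using bA GA by (meson bdd_above_mono image_subsetI)
  have "Sup (f ` {0..s}) = (SUP kn. G kn)"
  proof (rule antisym)
    show "Sup (f ` {0..s}) \<le> (SUP kn. G kn)"
    proof (rule cSup_least)
      show "f ` {0..s} \<noteq> {}" using s0 by auto
      fix a assume "a \<in> f ` {0..s}"
      then obtain u where u: "u \<in> {0..s}" "a = f u" by auto
      define q where "q = (\<lambda>n::nat. real_of_int \<lfloor>real n * u\<rfloor> / real n)"
      have lim: "(\<lambda>n. f (q n)) \<longlonglongrightarrow> f u" unfolding q_def
        by (rule isCont_tendsto_compose[OF _ floor_approx])
           (use c in \<open>simp add: continuous_on_eq_continuous_at\<close>)
      have "f (q n) \<le> (SUP kn. G kn)" for n
      proof -
        have nn: "0 \<le> \<lfloor>real n * u\<rfloor>" using u by auto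
        have qle: "q n \<le> s"
        proof (cases "n = 0")
          case False
          have "real_of_int \<lfloor>real n * u\<rfloor> \<le> real n * u" by linarith
          then have "q n \<le> u" using False unfolding q_def by (simp add: divide_le_eq mult.commute)
          then show ?thesis using u by auto
        qed (simp add: q_def s0)
        have "G (nat \<lfloor>real n * u\<rfloor>, n) = f (q n)"
          using nn qle by (simp add: G_def q_def)
        then show ?thesis using cSUP_upper[OF UNIV_I bG, of "(nat \<lfloor>real n * u\<rfloor>, n)"] by simp
      qed
      then have "f u \<le> (SUP kn. G kn)" by (intro LIMSEQ_le_const2[OF lim]) blast
      then show "a \<le> (SUP kn. G kn)" using u by simp
    qed
    show "(SUP kn. G kn) \<le> Sup (f ` {0..s})"
      by (rule cSUP_least) (use GA bA in \<open>auto intro: cSup_upper\<close>)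
  qed
  then show ?thesis by (simp add: Mp_def f_def s_def G_def)
qed

lemma Mp_meas:
  assumes "model_measure T x0 P" "0 \<le> T"
  shows "(\<lambda>x. Mp (snd x) (fst x)) \<in> borel_measurable (P \<Otimes>\<^sub>M lborel)"
proof -
  note ev[measurable] = Sp_meas[OF assms]
  have m: "(\<lambda>x. SUP kn\<in>UNIV. (if real (fst kn) / real (snd kn) \<le> max 0 (snd x)
               then Sp (real (fst kn) / real (snd kn)) (fst x) else Sp 0 (fst x)))
        \<in> borel_measurable (P \<Otimes>\<^sub>M lborel)"
  proof (rule borel_measurable_cSUP)
    fix x :: "path \<times> real" assume "x \<in> space (P \<Otimes>\<^sub>M lborel)"
    then have om: "fst x \<in> OmegaS T x0" using assms(1) by (auto simp: space_pair_measure model_space)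
    define s where "s = max 0 (snd x)"
    have bA: "bdd_above ((\<lambda>u. Sp u (fst x)) ` {0..s})"
      by (rule bounded_imp_bdd_above, rule compact_imp_bounded, rule compact_continuous_image)
         (use Sp_cont[OF om assms(2)] in \<open>auto intro: continuous_on_subset\<close>)
    show "bdd_above ((\<lambda>kn. if real (fst kn) / real (snd kn) \<le> max 0 (snd x)
               then Sp (real (fst kn) / real (snd kn)) (fst x) else Sp 0 (fst x)) ` UNIV)"
      by (rule bdd_above_mono[OF bA]) (auto simp: s_def)
  qed measurable
  show ?thesis
  proof (rule measurable_cong[THEN iffD1, OF _ m])
    fix x :: "path \<times> real" assume "x \<in> space (P \<Otimes>\<^sub>M lborel)"
    then have om: "fst x \<in> OmegaS T x0" using assms(1) by (auto simp: space_pair_measure model_space)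
    show "(SUP kn\<in>UNIV. (if real (fst kn) / real (snd kn) \<le> max 0 (snd x)
               then Sp (real (fst kn) / real (snd kn)) (fst x) else Sp 0 (fst x))) = Mp (snd x) (fst x)"
      by (rule Mp_sup[OF om assms(2), symmetric])
  qed
qed

definition pointX :: "path \<times> real \<Rightarrow> real \<times> real \<times> real \<times> real \<times> real" where
  "pointX x = (snd x, Sp (snd x) (fst x), Ap (snd x) (fst x), Mp (snd x) (fst x), Sgp (snd x) (fst x))"

lemma pointX_meas:
  assumes "model_measure T x0 P" "0 \<le> T"
  shows "pointX \<in> borel_measurable (P \<Otimes>\<^sub>M lborel)"
proof -
  have e: "(\<lambda>x. fst x (snd x)) \<in> borel_measurable (P \<Otimes>\<^sub>M lborel)" by (rule joint_eval[OF assms])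
  have s: "(\<lambda>x. Sp (snd x) (fst x)) \<in> borel_measurable (P \<Otimes>\<^sub>M lborel)" unfolding Sp_def
    by (rule borel_measurable_continuous_on[OF _ e]) (intro continuous_intros)
  have a: "(\<lambda>x. Ap (snd x) (fst x)) \<in> borel_measurable (P \<Otimes>\<^sub>M lborel)" unfolding Ap_def
    by (rule borel_measurable_continuous_on[OF _ e]) (intro continuous_intros)
  have g: "(\<lambda>x. Sgp (snd x) (fst x)) \<in> borel_measurable (P \<Otimes>\<^sub>M lborel)" unfolding Sgp_def
    by (rule borel_measurable_continuous_on[OF _ e]) (intro continuous_intros)
  have t: "(\<lambda>x::path\<times>real. snd x) \<in> borel_measurable (P \<Otimes>\<^sub>M lborel)" by measurable
  show ?thesis unfolding pointX_def
    by (intro borel_measurable_Pair t s a g Mp_meas[OF assms])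
qed

definition Kext :: "real \<Rightarrow> fun5 \<Rightarrow> real \<times> real \<times> real \<times> real \<times> real \<Rightarrow> real" where
  "Kext T K p = (if p \<in> D0set T then unc5 K p else 0)"

lemma D0set_borel: "D0set T \<in> sets borel"
proof -
  have "D0set T = {p :: real \<times> real \<times> real \<times> real \<times> real. 0 < fst p \<and> fst p < T \<and> 0 < fst (snd p)
       \<and> 0 < fst (snd (snd (snd p))) \<and> 0 < snd (snd (snd (snd p)))}"
    by (auto simp: D0set_def)
  also have "\<dots> \<in> sets borel"
    by (intro borel_open open_Collect_conj open_Collect_less continuous_intros)
  finally show ?thesis .
qed

lemma Kext_meas:
  assumes "unc5 K \<in> borel_measurable (restrict_space borel (D0set T))"
  shows "Kext T K \<in> borel_measurable borel"
proof -
  have "(\<lambda>x. if x \<in> D0set T then unc5 K x else 0) \<in> borel_measurable borel"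
    using assms by (subst measurable_restrict_space_iff[symmetric]) (auto simp: D0set_borel)
  then show ?thesis by (simp add: Kext_def[abs_def])
qed

lemma Mp_ge:
  assumes "\<omega> \<in> OmegaS T x0" "0 \<le> T" "0 \<le> t"
  shows "Sp t \<omega> \<le> Mp t \<omega>"
proof -
  have bA: "bdd_above ((\<lambda>u. Sp u \<omega>) ` {0..max 0 t})"
    by (rule bounded_imp_bdd_above, rule compact_imp_bounded, rule compact_continuous_image)
       (use Sp_cont[OF assms(1,2)] in \<open>auto intro: continuous_on_subset\<close>)
  show ?thesis unfolding Mp_def by (rule cSup_upper[OF _ bA]) (use assms in auto)
qed

lemma pointX_D0:
  assumes "\<omega> \<in> OmegaS T x0" "0 \<le> T" "\<forall>t\<in>{0..T}. 0 < Sp t \<omega> \<and> 0 < Sgp t \<omega>" "t \<in> {0<..<T}"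
  shows "pointX (\<omega>, t) \<in> D0set T"
proof -
  have "t \<in> {0..T}" "0 \<le> t" using assms(4) by auto
  then have "0 < Sp t \<omega>" "0 < Sgp t \<omega>" using assms(3) by auto
  moreover have "Sp t \<omega> \<le> Mp t \<omega>" using Mp_ge[OF assms(1,2) \<open>0 \<le> t\<close>] .
  ultimately show ?thesis using assms(4) by (simp add: pointX_def D0set_def)
qed

definition goodPs :: "real \<Rightarrow> real \<times> real \<times> real \<Rightarrow> path measure set \<Rightarrow> bool" where
  "goodPs T x0 Ps \<longleftrightarrow> 0 \<le> T \<and> (\<forall>P\<in>Ps. model_measure T x0 P \<and>
      (AE \<omega> in P. \<forall>t\<in>{0..T}. 0 < Sp t \<omega> \<and> 0 < Sgp t \<omega>))"

definition Jint :: "real \<Rightarrow> fun5 \<Rightarrow> nat \<Rightarrow> path \<Rightarrow> ennreal" where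
  "Jint T K p \<omega> = (\<integral>\<^sup>+t. ennreal (\<bar>Kext T K (pointX (\<omega>, t))\<bar> ^ p) * indicator {0<..<T} t \<partial>lborel)"

lemma joint_K_meas:
  assumes "model_measure T x0 P" "0 \<le> T" "unc5 K \<in> borel_measurable (restrict_space borel (D0set T))"
  shows "(\<lambda>x. ennreal (\<bar>Kext T K (pointX x)\<bar> ^ p) * indicator {0<..<T} (snd x)) \<in> borel_measurable (P \<Otimes>\<^sub>M lborel)"
proof -
  note k[measurable] = measurable_comp[OF pointX_meas[OF assms(1,2)] Kext_meas[OF assms(3)], unfolded o_def]
  show ?thesis by measurable
qed

lemma Jint_meas:
  assumes "model_measure T x0 P" "0 \<le> T" "unc5 K \<in> borel_measurable (restrict_space borel (D0set T))"
  shows "Jint T K p \<in> borel_measurable P"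
proof -
  have "(\<lambda>(\<omega>,t). ennreal (\<bar>Kext T K (pointX (\<omega>,t))\<bar> ^ p) * indicator {0<..<T} t) \<in> borel_measurable (P \<Otimes>\<^sub>M lborel)"
    using joint_K_meas[OF assms, of p] by (simp add: case_prod_beta')
  from lborel.borel_measurable_nn_integral[OF this] show ?thesis
    by (simp add: Jint_def[abs_def])
qed

lemma Jint_sec_meas:
  assumes "model_measure T x0 P" "0 \<le> T" "unc5 K \<in> borel_measurable (restrict_space borel (D0set T))"
    "\<omega> \<in> space P"
  shows "(\<lambda>t. ennreal (\<bar>Kext T K (pointX (\<omega>, t))\<bar> ^ p) * indicator {0<..<T} t) \<in> borel_measurable lborel"
  using measurable_compose_Pair1[OF assms(4) joint_K_meas[OF assms(1-3), of p]] by simp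

lemma Jint_eq:
  assumes "goodPs T x0 Ps" "P \<in> Ps"
  shows "AE \<omega> in P. (\<integral>\<^sup>+t\<in>{0<..<T}. ennreal (\<bar>K t (Sp t \<omega>) (Ap t \<omega>) (Mp t \<omega>) (Sgp t \<omega>)\<bar> ^ p) \<partial>lborel)
     = Jint T K p \<omega>"
proof -
  have mm: "model_measure T x0 P" and T0: "0 \<le> T"
    and ae: "AE \<omega> in P. \<forall>t\<in>{0..T}. 0 < Sp t \<omega> \<and> 0 < Sgp t \<omega>"
    using assms by (auto simp: goodPs_def)
  from ae show ?thesis
  proof (rule AE_mp, intro AE_I2 impI)
    fix \<omega> assume om: "\<omega> \<in> space P" and pos: "\<forall>t\<in>{0..T}. 0 < Sp t \<omega> \<and> 0 < Sgp t \<omega>"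
    have om': "\<omega> \<in> OmegaS T x0" using om mm by (simp add: model_space)
    show "(\<integral>\<^sup>+t\<in>{0<..<T}. ennreal (\<bar>K t (Sp t \<omega>) (Ap t \<omega>) (Mp t \<omega>) (Sgp t \<omega>)\<bar> ^ p) \<partial>lborel)
     = Jint T K p \<omega>" unfolding Jint_def
    proof (rule nn_integral_cong)
      fix t :: real
      show "ennreal (\<bar>K t (Sp t \<omega>) (Ap t \<omega>) (Mp t \<omega>) (Sgp t \<omega>)\<bar> ^ p) * indicator {0<..<T} t
          = ennreal (\<bar>Kext T K (pointX (\<omega>, t))\<bar> ^ p) * indicator {0<..<T} t"
      proof (cases "t \<in> {0<..<T}")
        case True
        then have "pointX (\<omega>, t) \<in> D0set T" by (rule pointX_D0[OF om' T0 pos])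
        then show ?thesis by (simp add: Kext_def unc5_def pointX_def)
      qed simp
    qed
  qed
qed

lemma unc5_comb: "unc5 (\<lambda>t S A M Sg. a * f t S A M Sg + b * g t S A M Sg) = (\<lambda>x. a * unc5 f x + b * unc5 g x)"
  by (auto simp: unc5_def fun_eq_iff split: prod.split)

lemma Lp_bound_P:
  assumes "Lp_P T Ps p K" "P \<in> Ps" "goodPs T x0 Ps"
  obtains B where "integral\<^sup>N P (Jint T K p) \<le> ennreal B" "0 \<le> B"
proof -
  obtain B where B: "\<forall>P\<in>Ps. (\<integral>\<^sup>+\<omega>. (\<integral>\<^sup>+t\<in>{0<..<T}. ennreal (\<bar>K t (Sp t \<omega>) (Ap t \<omega>) (Mp t \<omega>) (Sgp t \<omega>)\<bar> ^ p) \<partial>lborel) \<partial>P) \<le> ennreal B"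
    using assms(1) unfolding Lp_P_def by blast
  have "integral\<^sup>N P (Jint T K p) = (\<integral>\<^sup>+\<omega>. (\<integral>\<^sup>+t\<in>{0<..<T}. ennreal (\<bar>K t (Sp t \<omega>) (Ap t \<omega>) (Mp t \<omega>) (Sgp t \<omega>)\<bar> ^ p) \<partial>lborel) \<partial>P)"
    by (rule nn_integral_cong_AE) (use Jint_eq[OF assms(3,2), of K p] in \<open>auto elim: AE_mp\<close>)
  also have "\<dots> \<le> ennreal B" using B assms(2) by blast
  also have "\<dots> \<le> ennreal (max B 0)" by (rule ennreal_leI) simp
  finally show ?thesis using that[of "max B 0"] by simp
qed

lemma Lp2_comb:
  assumes good: "goodPs T x0 Ps" and f: "Lp_P T Ps 2 f" and g: "Lp_P T Ps 2 g"
  shows "Lp_P T Ps 2 (\<lambda>t S A M Sg. a * f t S A M Sg + b * g t S A M Sg)"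
proof -
  let ?h = "\<lambda>t S A M Sg. a * f t S A M Sg + b * g t S A M Sg"
  have fm: "unc5 f \<in> borel_measurable (restrict_space borel (D0set T))" and
       gm: "unc5 g \<in> borel_measurable (restrict_space borel (D0set T))"
    using f g by (auto simp: Lp_P_def)
  have hm: "unc5 ?h \<in> borel_measurable (restrict_space borel (D0set T))"
    unfolding unc5_comb using fm gm by measurable
  have T0: "0 \<le> T" using good by (simp add: goodPs_def)
  obtain Bf where Bf: "\<forall>P\<in>Ps. (\<integral>\<^sup>+\<omega>. (\<integral>\<^sup>+t\<in>{0<..<T}. ennreal (\<bar>f t (Sp t \<omega>) (Ap t \<omega>) (Mp t \<omega>) (Sgp t \<omega>)\<bar> ^ 2) \<partial>lborel) \<partial>P) \<le> ennreal Bf"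
    using f unfolding Lp_P_def by blast
  obtain Bg where Bg: "\<forall>P\<in>Ps. (\<integral>\<^sup>+\<omega>. (\<integral>\<^sup>+t\<in>{0<..<T}. ennreal (\<bar>g t (Sp t \<omega>) (Ap t \<omega>) (Mp t \<omega>) (Sgp t \<omega>)\<bar> ^ 2) \<partial>lborel) \<partial>P) \<le> ennreal Bg"
    using g unfolding Lp_P_def by blast
  have main: "(\<integral>\<^sup>+\<omega>. (\<integral>\<^sup>+t\<in>{0<..<T}. ennreal (\<bar>?h t (Sp t \<omega>) (Ap t \<omega>) (Mp t \<omega>) (Sgp t \<omega>)\<bar> ^ 2) \<partial>lborel) \<partial>P)
     \<le> ennreal (2 * a^2 * max Bf 0 + 2 * b^2 * max Bg 0)" if P: "P \<in> Ps" for P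
  proof -
    have mm: "model_measure T x0 P" using good P by (simp add: goodPs_def)
    have kh: "Kext T ?h x = a * Kext T f x + b * Kext T g x" for x
      by (simp add: Kext_def unc5_comb)
    have pw: "Jint T ?h 2 \<omega> \<le> ennreal (2 * a^2) * Jint T f 2 \<omega> + ennreal (2 * b^2) * Jint T g 2 \<omega>"
      if om: "\<omega> \<in> space P" for \<omega>
    proof -
      have sf: "(\<lambda>t. ennreal (\<bar>Kext T f (pointX (\<omega>, t))\<bar> ^ 2) * indicator {0<..<T} t) \<in> borel_measurable lborel"
        by (rule Jint_sec_meas[OF mm T0 fm om])
      have sg: "(\<lambda>t. ennreal (\<bar>Kext T g (pointX (\<omega>, t))\<bar> ^ 2) * indicator {0<..<T} t) \<in> borel_measurable lborel"
        by (rule Jint_sec_meas[OF mm T0 gm om])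
      have "Jint T ?h 2 \<omega> \<le> (\<integral>\<^sup>+t. ennreal (2 * a^2) * (ennreal (\<bar>Kext T f (pointX (\<omega>, t))\<bar> ^ 2) * indicator {0<..<T} t)
              + ennreal (2 * b^2) * (ennreal (\<bar>Kext T g (pointX (\<omega>, t))\<bar> ^ 2) * indicator {0<..<T} t) \<partial>lborel)"
        unfolding Jint_def
      proof (rule nn_integral_mono)
        fix t :: real
        define uu where "uu = Kext T f (pointX (\<omega>, t))"
        define vv where "vv = Kext T g (pointX (\<omega>, t))"
        have r: "(abs (a * uu + b * vv))^2 \<le> 2 * a^2 * (abs uu)^2 + 2 * b^2 * (abs vv)^2"
        proof -
          have "0 \<le> (a * uu - b * vv)^2" by simp
          then show ?thesis by (simp add: power2_eq_square algebra_simps)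
        qed
        have ennle: "ennreal ((abs (a * uu + b * vv))^2) \<le> ennreal (2 * a^2) * ennreal ((abs uu)^2) + ennreal (2 * b^2) * ennreal ((abs vv)^2)"
        proof -
          have "ennreal ((abs (a * uu + b * vv))^2) \<le> ennreal (2 * a^2 * (abs uu)^2 + 2 * b^2 * (abs vv)^2)"
            by (rule ennreal_leI[OF r])
          also have "\<dots> = ennreal (2 * a^2 * (abs uu)^2) + ennreal (2 * b^2 * (abs vv)^2)"
            by (rule ennreal_plus) auto
          also have "\<dots> = ennreal (2 * a^2) * ennreal ((abs uu)^2) + ennreal (2 * b^2) * ennreal ((abs vv)^2)"
            using ennreal_mult[of "2 * a^2" "(abs uu)^2"] ennreal_mult[of "2 * b^2" "(abs vv)^2"] by simp
          finally show ?thesis .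
        qed
        show "ennreal (\<bar>Kext T ?h (pointX (\<omega>, t))\<bar> ^ 2) * indicator {0<..<T} t
          \<le> ennreal (2 * a^2) * (ennreal (\<bar>Kext T f (pointX (\<omega>, t))\<bar> ^ 2) * indicator {0<..<T} t)
              + ennreal (2 * b^2) * (ennreal (\<bar>Kext T g (pointX (\<omega>, t))\<bar> ^ 2) * indicator {0<..<T} t)"
                  proof (cases "t \<in> {0<..<T}")
          case True
          then have ind: "indicator {0<..<T} t = (1::ennreal)" by simp
          show ?thesis unfolding ind mult_1_right using ennle by (simp only: power2_abs kh uu_def[symmetric] vv_def[symmetric])
        next
          case False
          then have ind: "indicator {0<..<T} t = (0::ennreal)" by simp
          show ?thesis unfolding ind mult_zero_right add_0_right by (rule order_refl)
        qed
      qed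
      also have "\<dots> = ennreal (2 * a^2) * Jint T f 2 \<omega> + ennreal (2 * b^2) * Jint T g 2 \<omega>"
        unfolding Jint_def
      proof -
        show "(\<integral>\<^sup>+t. ennreal (2 * a^2) * (ennreal (\<bar>Kext T f (pointX (\<omega>, t))\<bar> ^ 2) * indicator {0<..<T} t)
              + ennreal (2 * b^2) * (ennreal (\<bar>Kext T g (pointX (\<omega>, t))\<bar> ^ 2) * indicator {0<..<T} t) \<partial>lborel)
          = ennreal (2 * a^2) * (\<integral>\<^sup>+t. ennreal (\<bar>Kext T f (pointX (\<omega>, t))\<bar> ^ 2) * indicator {0<..<T} t \<partial>lborel)
            + ennreal (2 * b^2) * (\<integral>\<^sup>+t. ennreal (\<bar>Kext T g (pointX (\<omega>, t))\<bar> ^ 2) * indicator {0<..<T} t \<partial>lborel)"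
          by (simp only: nn_integral_add[OF borel_measurable_times_ennreal[OF borel_measurable_const sf]
                borel_measurable_times_ennreal[OF borel_measurable_const sg]] nn_integral_cmult[OF sf] nn_integral_cmult[OF sg])
      qed
      finally show ?thesis .
    qed
    have eqh: "(\<integral>\<^sup>+\<omega>. (\<integral>\<^sup>+t\<in>{0<..<T}. ennreal (\<bar>?h t (Sp t \<omega>) (Ap t \<omega>) (Mp t \<omega>) (Sgp t \<omega>)\<bar> ^ 2) \<partial>lborel) \<partial>P)
        = integral\<^sup>N P (Jint T ?h 2)"
      by (rule nn_integral_cong_AE[OF Jint_eq[OF good P]])
    have eqf: "(\<integral>\<^sup>+\<omega>. (\<integral>\<^sup>+t\<in>{0<..<T}. ennreal (\<bar>f t (Sp t \<omega>) (Ap t \<omega>) (Mp t \<omega>) (Sgp t \<omega>)\<bar> ^ 2) \<partial>lborel) \<partial>P)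
        = integral\<^sup>N P (Jint T f 2)"
      by (rule nn_integral_cong_AE[OF Jint_eq[OF good P]])
    have eqg: "(\<integral>\<^sup>+\<omega>. (\<integral>\<^sup>+t\<in>{0<..<T}. ennreal (\<bar>g t (Sp t \<omega>) (Ap t \<omega>) (Mp t \<omega>) (Sgp t \<omega>)\<bar> ^ 2) \<partial>lborel) \<partial>P)
        = integral\<^sup>N P (Jint T g 2)"
      by (rule nn_integral_cong_AE[OF Jint_eq[OF good P]])
    have If: "integral\<^sup>N P (Jint T f 2) \<le> ennreal (max Bf 0)"
    proof -
      have "integral\<^sup>N P (Jint T f 2) \<le> ennreal Bf" using Bf P unfolding eqf[symmetric] by blast
      then show ?thesis by (rule order_trans) (rule ennreal_leI, simp)
    qed
    have Ig: "integral\<^sup>N P (Jint T g 2) \<le> ennreal (max Bg 0)"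
    proof -
      have "integral\<^sup>N P (Jint T g 2) \<le> ennreal Bg" using Bg P unfolding eqg[symmetric] by blast
      then show ?thesis by (rule order_trans) (rule ennreal_leI, simp)
    qed
    have "integral\<^sup>N P (Jint T ?h 2) \<le> (\<integral>\<^sup>+\<omega>. ennreal (2 * a^2) * Jint T f 2 \<omega> + ennreal (2 * b^2) * Jint T g 2 \<omega> \<partial>P)"
      by (rule nn_integral_mono) (rule pw)
    also have "\<dots> = ennreal (2 * a^2) * integral\<^sup>N P (Jint T f 2) + ennreal (2 * b^2) * integral\<^sup>N P (Jint T g 2)"
    proof -
      note jf = Jint_meas[OF mm T0 fm, of 2] and jg = Jint_meas[OF mm T0 gm, of 2]
      show ?thesis
        by (simp only: nn_integral_add[OF borel_measurable_times_ennreal[OF borel_measurable_const jf]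
                borel_measurable_times_ennreal[OF borel_measurable_const jg]] nn_integral_cmult[OF jf] nn_integral_cmult[OF jg])
    qed
    also have "\<dots> \<le> ennreal (2 * a^2) * ennreal (max Bf 0) + ennreal (2 * b^2) * ennreal (max Bg 0)"
      by (intro add_mono mult_left_mono If Ig zero_le)
    also have "\<dots> = ennreal (2 * a^2 * max Bf 0 + 2 * b^2 * max Bg 0)"
      using ennreal_plus[of "2 * a^2 * max Bf 0" "2 * b^2 * max Bg 0"] ennreal_mult[of "2 * a^2" "max Bf 0"]
        ennreal_mult[of "2 * b^2" "max Bg 0"] by simp
    finally show ?thesis using eqh by simp
  qed
  show ?thesis unfolding Lp_P_def using hm main by blast
qed


lemma Lp4_sq:
  assumes f: "Lp_P T Ps 4 f"
  shows "Lp_P T Ps 2 (\<lambda>t S A M Sg. (f t S A M Sg)^2)"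
proof -
  have fm: "unc5 f \<in> borel_measurable (restrict_space borel (D0set T))" using f by (simp add: Lp_P_def)
  have e: "unc5 (\<lambda>t S A M Sg. (f t S A M Sg)^2) = (\<lambda>x. (unc5 f x)^2)"
    by (auto simp: unc5_def fun_eq_iff split: prod.split)
  have m: "unc5 (\<lambda>t S A M Sg. (f t S A M Sg)^2) \<in> borel_measurable (restrict_space borel (D0set T))"
    unfolding e using fm by measurable
  have p: "\<bar>x^2\<bar>^2 = \<bar>x\<bar>^4" for x :: real
    by (simp add: power_abs[symmetric] power_mult[symmetric])
  show ?thesis using f m unfolding Lp_P_def p by simp
qed

lemma Lp2_const:
  assumes good: "goodPs T x0 Ps"
  shows "Lp_P T Ps 2 (\<lambda>t S A M Sg. c)"
proof -
  have m: "unc5 (\<lambda>t S A M Sg. c) \<in> borel_measurable (restrict_space borel (D0set T))"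
    by (simp add: unc5_def case_prod_beta')
  have T0: "0 \<le> T" using good by (simp add: goodPs_def)
  have "(\<integral>\<^sup>+\<omega>. (\<integral>\<^sup>+t\<in>{0<..<T}. ennreal (\<bar>c\<bar> ^ 2) \<partial>lborel) \<partial>P) \<le> ennreal (c^2 * T)" if P: "P \<in> Ps" for P
  proof -
    have pp: "prob_space P" using good P by (simp add: goodPs_def model_measure_def)
    have "(\<integral>\<^sup>+t\<in>{0<..<T}. ennreal (\<bar>c\<bar> ^ 2) \<partial>lborel) = ennreal (c^2) * ennreal T"
      using T0 by (simp add: nn_integral_cmult_indicator)
    also have "\<dots> = ennreal (c^2 * T)" using T0 by (simp add: ennreal_mult)
    finally have i: "(\<integral>\<^sup>+t\<in>{0<..<T}. ennreal (\<bar>c\<bar> ^ 2) \<partial>lborel) = ennreal (c^2 * T)" .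
    have "(\<integral>\<^sup>+\<omega>. ennreal (c^2 * T) \<partial>P) = ennreal (c^2 * T)"
      using prob_space.emeasure_space_1[OF pp] by simp
    then show ?thesis unfolding i by simp
  qed
  then show ?thesis unfolding Lp_P_def using m by blast
qed


lemma quad_max:
  fixes m L xi b X w :: real
  assumes "w < 0" "0 \<le> xi"
  shows "m * L + xi * b * X + w/2 * (m^2 + xi * X^2) \<le> (L^2 + xi * b^2)/(-2 * w)"
proof -
  have c: "0 < -2 * w" using assms(1) by simp
  have 1: "m * L + w/2 * m^2 \<le> L^2/(-2 * w)"
  proof -
    have "0 \<le> (L + w * m)^2" by simp
    then have "(m * L + w/2 * m^2) * (-2 * w) \<le> L^2" by (simp add: power2_eq_square algebra_simps)
    then show ?thesis by (simp only: pos_le_divide_eq[OF c])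
  qed
  have 2: "b * X + w/2 * X^2 \<le> b^2/(-2 * w)"
  proof -
    have "0 \<le> (b + w * X)^2" by simp
    then have "(b * X + w/2 * X^2) * (-2 * w) \<le> b^2" by (simp add: power2_eq_square algebra_simps)
    then show ?thesis by (simp only: pos_le_divide_eq[OF c])
  qed
  have 3: "xi * (b * X + w/2 * X^2) \<le> xi * (b^2/(-2 * w))" using 2 assms(2) by (rule mult_left_mono)
  have "m * L + xi * b * X + w/2 * (m^2 + xi * X^2) = (m * L + w/2 * m^2) + xi * (b * X + w/2 * X^2)"
    by (simp add: algebra_simps)
  also have "\<dots> \<le> L^2/(-2 * w) + xi * (b^2/(-2 * w))" using 1 3 by (rule add_mono)
  also have "\<dots> = (L^2 + xi * b^2)/(-2 * w)" by (simp add: add_divide_distrib)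
  finally show ?thesis .
qed

lemma quad_part:
  fixes sig S eta xi Dth Dph a b wYY u2 p DW WSg :: real
  assumes "wYY \<le> u2" "u2 < 0" "0 \<le> xi"
    and a: "a = -(u2 * p) * DW" and b: "b = -(u2 * p) * WSg"
  shows "sig^2 * S^2 * Dth * a + sig * S * eta * Dph * a + sig * S * eta * Dth * b + Dph * (eta^2+xi) * b
        + sig^2 * S^2 * Dth^2 * wYY/2 + (eta^2+xi) * Dph^2 * wYY/2 + sig * S * eta * Dth * Dph * wYY
     \<le> (-u2) * p^2 * ((sig * (S * DW) + eta * WSg)^2 + xi * WSg^2) / 2"
proof -
  define m where "m = sig * S * Dth + eta * Dph"
  define L where "L = sig * S * a + eta * b"
  have e: "sig^2 * S^2 * Dth * a + sig * S * eta * Dph * a + sig * S * eta * Dth * b + Dph * (eta^2+xi) * b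
        + sig^2 * S^2 * Dth^2 * wYY/2 + (eta^2+xi) * Dph^2 * wYY/2 + sig * S * eta * Dth * Dph * wYY
      = m * L + xi * b * Dph + wYY/2 * (m^2 + xi * Dph^2)"
    unfolding m_def L_def power2_eq_square by (simp add: algebra_simps)
  have w: "wYY < 0" using assms by linarith
  have "m * L + xi * b * Dph + wYY/2 * (m^2 + xi * Dph^2) \<le> (L^2 + xi * b^2)/(-2 * wYY)"
    by (rule quad_max[OF w assms(3)])
  also have "\<dots> \<le> (L^2 + xi * b^2)/(-2 * u2)"
  proof (rule divide_left_mono)
    show "0 \<le> L^2 + xi * b^2" using assms(3) by simp
  qed (use assms w in \<open>auto intro: mult_neg_neg\<close>)
  also have "(L^2 + xi * b^2) = u2^2 * p^2 * ((sig * (S * DW) + eta * WSg)^2 + xi * WSg^2)"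
    unfolding L_def a b power2_eq_square by (simp add: algebra_simps)
  also have "u2^2 * p^2 * ((sig * (S * DW) + eta * WSg)^2 + xi * WSg^2) / (-2 * u2)
      = (-u2) * p^2 * ((sig * (S * DW) + eta * WSg)^2 + xi * WSg^2) / 2"
  proof -
    have "u2^2 = (-u2) * (-u2)" by (simp add: power2_eq_square)
    then show ?thesis using assms(2) by simp
  qed
  finally show ?thesis using e by simp
qed

lemma abs_prod_le: "\<bar>a\<bar> \<le> A \<Longrightarrow> \<bar>b\<bar> \<le> B \<Longrightarrow> \<bar>a * b\<bar> \<le> A * (B::real)"
  by (simp add: abs_mult mult_mono')

lemma compA_int:
  fixes p ps w v d e Cw B Kb :: real
  assumes p: "0 < p" "p < 1" and ps: "0 < ps" and e: "e = p * ps * w + d"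
    and w: "\<bar>w\<bar> \<le> Cw" and v: "\<bar>v\<bar> \<le> B" and d: "\<bar>d\<bar> \<le> Kb * p^2"
  shows "p * (v * ps * w)/2 + e^2/ps/2/p - v * e \<le> p * ps * (w-v) * w/2 + p^2 * ((Cw+B) * Kb + Kb^2/ps/2)"
proof -
  have id: "p * (v * ps * w)/2 + e^2/ps/2/p - v * e = p * ps * (w-v) * w/2 + ((w-v) * d + d^2/(2 * p * ps))"
    unfolding e using p ps by (simp add: field_simps power2_eq_square)
  have 1: "(w-v) * d \<le> (Cw+B) * (Kb * p^2)"
  proof -
    have "\<bar>w - v\<bar> \<le> Cw + B" using w v by linarith
    then have "\<bar>(w-v) * d\<bar> \<le> (Cw+B) * (Kb * p^2)" using d by (rule abs_prod_le)
    then show ?thesis by linarith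
  qed
  have 2: "d^2/(2 * p * ps) \<le> p^2 * (Kb^2/ps/2)"
  proof -
    have "d^2 \<le> (Kb * p^2)^2" using d by (metis abs_le_square_iff abs_ge_zero order.trans abs_abs abs_le_self_iff power2_abs power_mono)
    also have "\<dots> = p^2 * (Kb^2/ps/2) * (2 * p * ps) * p" using p ps by (simp add: field_simps power2_eq_square)
    also have "\<dots> \<le> p^2 * (Kb^2/ps/2) * (2 * p * ps)"
    proof -
      have "0 \<le> p^2 * (Kb^2/ps/2) * (2 * p * ps)" using p ps by simp
      then show ?thesis using p by (simp add: mult_left_le)
    qed
    finally show ?thesis using p ps by (simp add: divide_le_eq mult.commute)
  qed
  show ?thesis using id 1 2 by (simp add: algebra_simps)
qed

lemma compA_bd:
  fixes p ps w v d Cw B Kb :: real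
  assumes p: "0 < p" "p < 1" and ps: "0 < ps"
    and w: "\<bar>w\<bar> \<le> Cw" and v: "\<bar>v\<bar> \<le> B" and d: "\<bar>d\<bar> \<le> Kb * p^2"
  shows "p * (v * ps * w)/2 + d^2/ps/2/p - v * d \<le> p * (B * ps * Cw/2 + Kb^2/ps/2 + B * Kb)"
proof -
  have B0: "0 \<le> B" using v by linarith
  have K0: "0 \<le> Kb"
  proof -
    have "0 \<le> Kb * p^2" using d by linarith
    moreover have "0 < p^2" using p by simp
    ultimately show ?thesis by (simp add: zero_le_mult_iff)
  qed
  have 1: "p * (v * ps * w)/2 \<le> p * (B * ps * Cw/2)"
  proof -
    have "\<bar>v * w\<bar> \<le> B * Cw" using v w by (rule abs_prod_le)
    then have "v * w \<le> B * Cw" by linarith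
    then have "p * ps * (v * w) \<le> p * ps * (B * Cw)" using p ps by (intro mult_left_mono) auto
    then show ?thesis by (simp add: algebra_simps)
  qed
  have 2: "d^2/ps/2/p \<le> p * (Kb^2/ps/2)"
  proof -
    have "d^2 \<le> (Kb * p^2)^2" using d by (metis abs_le_square_iff abs_ge_zero order.trans abs_abs abs_le_self_iff power2_abs power_mono)
    also have "\<dots> = (Kb^2) * p^2 * p^2" by (simp add: power2_eq_square)
    also have "\<dots> \<le> (Kb^2) * p^2 * 1"
    proof -
      have "p^2 \<le> 1" using p by (simp add: power_le_one)
      then show ?thesis by (intro mult_left_mono) auto
    qed
    finally have "d^2 \<le> Kb^2 * p^2" by simp
    then have "d^2/(2 * ps * p) \<le> Kb^2 * p^2/(2 * ps * p)" using p ps by (intro divide_right_mono) auto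
    also have "\<dots> = p * (Kb^2/ps/2)" using p ps by (simp add: field_simps power2_eq_square)
    finally show ?thesis by (simp add: field_simps)
  qed
  have 3: "- (v * d) \<le> p * (B * Kb)"
  proof -
    have "\<bar>v * d\<bar> \<le> B * (Kb * p^2)" using v d by (rule abs_prod_le)
    also have "B * (Kb * p^2) = p * (B * Kb) * p" by (simp add: power2_eq_square)
    also have "\<dots> \<le> p * (B * Kb) * 1" using p B0 K0 by (intro mult_left_mono) auto
    finally show ?thesis by linarith
  qed
  show ?thesis using 1 2 3 by (simp add: algebra_simps)
qed

lemma PA:
  fixes p ps1 ps2 ps3 ps4 w1 w2 w3 w4 v1 v2 v3 v4 d1 d2 d3 d4 e1 e2 e3 e4 Cw B Kb :: real
  assumes p: "0 < p" "p < 1" and ps: "0 < ps1" "0 < ps2" "0 < ps3" "0 < ps4"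
    and kkt: "ps1 * (w1-v1) * w1 + ps2 * (w2-v2) * w2 + ps3 * (w3-v3) * w3 + ps4 * (w4-v4) * w4 = 0"
    and w: "\<bar>w1\<bar> \<le> Cw" "\<bar>w2\<bar> \<le> Cw" "\<bar>w3\<bar> \<le> Cw" "\<bar>w4\<bar> \<le> Cw"
    and v: "\<bar>v1\<bar> \<le> B" "\<bar>v2\<bar> \<le> B" "\<bar>v3\<bar> \<le> B" "\<bar>v4\<bar> \<le> B"
    and d: "\<bar>d1\<bar> \<le> Kb * p^2" "\<bar>d2\<bar> \<le> Kb * p^2" "\<bar>d3\<bar> \<le> Kb * p^2" "\<bar>d4\<bar> \<le> Kb * p^2"
    and e: "e1 = (if I then p * ps1 * w1 else 0) + d1" "e2 = (if I then p * ps2 * w2 else 0) + d2"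
           "e3 = (if I then p * ps3 * w3 else 0) + d3" "e4 = (if I then p * ps4 * w4 else 0) + d4"
  shows "p * (v1 * ps1 * w1 + v2 * ps2 * w2 + v3 * ps3 * w3 + v4 * ps4 * w4)/2
      + ((e1^2/ps1 + e2^2/ps2 + e3^2/ps3 + e4^2/ps4)/2)/p - (v1 * e1 + v2 * e2 + v3 * e3 + v4 * e4)
    \<le> p^(if I then 2 else 1) * (B * (ps1+ps2+ps3+ps4) * Cw/2 + 4 * (Cw+B) * Kb
        + Kb^2 * (1/ps1+1/ps2+1/ps3+1/ps4)/2 + 4 * B * Kb)"
proof -
  have B0: "0 \<le> B" using v by linarith
  have C0: "0 \<le> Cw" using w by linarith
  have K0: "0 \<le> Kb"
  proof -
    have "0 \<le> Kb * p^2" using d by linarith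
    moreover have "0 < p^2" using p by simp
    ultimately show ?thesis by (simp add: zero_le_mult_iff)
  qed
  have split: "p * (v1 * ps1 * w1 + v2 * ps2 * w2 + v3 * ps3 * w3 + v4 * ps4 * w4)/2
      + ((e1^2/ps1 + e2^2/ps2 + e3^2/ps3 + e4^2/ps4)/2)/p - (v1 * e1 + v2 * e2 + v3 * e3 + v4 * e4)
    = (p * (v1 * ps1 * w1)/2 + e1^2/ps1/2/p - v1 * e1) + (p * (v2 * ps2 * w2)/2 + e2^2/ps2/2/p - v2 * e2)
      + (p * (v3 * ps3 * w3)/2 + e3^2/ps3/2/p - v3 * e3) + (p * (v4 * ps4 * w4)/2 + e4^2/ps4/2/p - v4 * e4)"
    by (simp add: add_divide_distrib diff_divide_distrib algebra_simps)
  have nn: "0 \<le> B * (ps1+ps2+ps3+ps4) * Cw/2" "0 \<le> 4 * (Cw+B) * Kb" "0 \<le> Kb^2 * (1/ps1+1/ps2+1/ps3+1/ps4)/2"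
     "0 \<le> 4 * B * Kb"
    using B0 C0 K0 ps by auto
  show ?thesis
  proof (cases I)
    case True
    have c1: "p * (v1 * ps1 * w1)/2 + e1^2/ps1/2/p - v1 * e1 \<le> p * ps1 * (w1-v1) * w1/2 + p^2 * ((Cw+B) * Kb + Kb^2/ps1/2)"
      by (rule compA_int[OF p ps(1) _ w(1) v(1) d(1)]) (simp add: e True)
    have c2: "p * (v2 * ps2 * w2)/2 + e2^2/ps2/2/p - v2 * e2 \<le> p * ps2 * (w2-v2) * w2/2 + p^2 * ((Cw+B) * Kb + Kb^2/ps2/2)"
      by (rule compA_int[OF p ps(2) _ w(2) v(2) d(2)]) (simp add: e True)
    have c3: "p * (v3 * ps3 * w3)/2 + e3^2/ps3/2/p - v3 * e3 \<le> p * ps3 * (w3-v3) * w3/2 + p^2 * ((Cw+B) * Kb + Kb^2/ps3/2)"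
      by (rule compA_int[OF p ps(3) _ w(3) v(3) d(3)]) (simp add: e True)
    have c4: "p * (v4 * ps4 * w4)/2 + e4^2/ps4/2/p - v4 * e4 \<le> p * ps4 * (w4-v4) * w4/2 + p^2 * ((Cw+B) * Kb + Kb^2/ps4/2)"
      by (rule compA_int[OF p ps(4) _ w(4) v(4) d(4)]) (simp add: e True)
    have k: "p * ps1 * (w1-v1) * w1/2 + p * ps2 * (w2-v2) * w2/2 + p * ps3 * (w3-v3) * w3/2 + p * ps4 * (w4-v4) * w4/2 = 0"
    proof -
      have "p * ps1 * (w1-v1) * w1/2 + p * ps2 * (w2-v2) * w2/2 + p * ps3 * (w3-v3) * w3/2 + p * ps4 * (w4-v4) * w4/2
          = p/2 * (ps1 * (w1-v1) * w1 + ps2 * (w2-v2) * w2 + ps3 * (w3-v3) * w3 + ps4 * (w4-v4) * w4)"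
        by (simp add: field_simps)
      then show ?thesis using kkt by simp
    qed
    have sum: "p^2 * ((Cw+B) * Kb + Kb^2/ps1/2) + p^2 * ((Cw+B) * Kb + Kb^2/ps2/2) + p^2 * ((Cw+B) * Kb + Kb^2/ps3/2)
        + p^2 * ((Cw+B) * Kb + Kb^2/ps4/2) = p^2 * (4 * (Cw+B) * Kb + Kb^2 * (1/ps1+1/ps2+1/ps3+1/ps4)/2)"
      by (simp add: algebra_simps add_divide_distrib)
    have "p^2 * (4 * (Cw+B) * Kb + Kb^2 * (1/ps1+1/ps2+1/ps3+1/ps4)/2)
       \<le> p^2 * (B * (ps1+ps2+ps3+ps4) * Cw/2 + 4 * (Cw+B) * Kb + Kb^2 * (1/ps1+1/ps2+1/ps3+1/ps4)/2 + 4 * B * Kb)"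
      using nn by (intro mult_left_mono) auto
    then show ?thesis using split c1 c2 c3 c4 k sum True by simp
  next
    case False
    have c1: "p * (v1 * ps1 * w1)/2 + e1^2/ps1/2/p - v1 * e1 \<le> p * (B * ps1 * Cw/2 + Kb^2/ps1/2 + B * Kb)"
      using compA_bd[OF p ps(1) w(1) v(1) d(1)] by (simp add: e False)
    have c2: "p * (v2 * ps2 * w2)/2 + e2^2/ps2/2/p - v2 * e2 \<le> p * (B * ps2 * Cw/2 + Kb^2/ps2/2 + B * Kb)"
      using compA_bd[OF p ps(2) w(2) v(2) d(2)] by (simp add: e False)
    have c3: "p * (v3 * ps3 * w3)/2 + e3^2/ps3/2/p - v3 * e3 \<le> p * (B * ps3 * Cw/2 + Kb^2/ps3/2 + B * Kb)"
      using compA_bd[OF p ps(3) w(3) v(3) d(3)] by (simp add: e False)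
    have c4: "p * (v4 * ps4 * w4)/2 + e4^2/ps4/2/p - v4 * e4 \<le> p * (B * ps4 * Cw/2 + Kb^2/ps4/2 + B * Kb)"
      using compA_bd[OF p ps(4) w(4) v(4) d(4)] by (simp add: e False)
    have sum: "p * (B * ps1 * Cw/2 + Kb^2/ps1/2 + B * Kb) + p * (B * ps2 * Cw/2 + Kb^2/ps2/2 + B * Kb)
       + p * (B * ps3 * Cw/2 + Kb^2/ps3/2 + B * Kb) + p * (B * ps4 * Cw/2 + Kb^2/ps4/2 + B * Kb)
       = p * (B * (ps1+ps2+ps3+ps4) * Cw/2 + Kb^2 * (1/ps1+1/ps2+1/ps3+1/ps4)/2 + 4 * B * Kb)"
      by (simp add: algebra_simps add_divide_distrib)
    have "p * (B * (ps1+ps2+ps3+ps4) * Cw/2 + Kb^2 * (1/ps1+1/ps2+1/ps3+1/ps4)/2 + 4 * B * Kb)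
       \<le> p * (B * (ps1+ps2+ps3+ps4) * Cw/2 + 4 * (Cw+B) * Kb + Kb^2 * (1/ps1+1/ps2+1/ps3+1/ps4)/2 + 4 * B * Kb)"
      using nn p by (intro mult_left_mono) auto
    then show ?thesis using split c1 c2 c3 c4 sum False by simp
  qed
qed

lemma scale_le: "0 \<le> c \<Longrightarrow> 0 \<le> a \<Longrightarrow> a \<le> A \<Longrightarrow> 0 \<le> q \<Longrightarrow> q \<le> Q \<Longrightarrow> a * q * c \<le> A * Q * (c::real)"
  by (intro mult_right_mono mult_mono) auto

lemma p2_le_pk: "0 < p \<Longrightarrow> p < 1 \<Longrightarrow> p^2 \<le> p^(if I then 2 else 1::nat)" for p :: real
  by (cases I) (auto simp: power2_eq_square mult_left_le)

lemma negb: "0 \<le> k \<Longrightarrow> \<bar>y\<bar> \<le> M \<Longrightarrow> -(k * y) \<le> k * (M::real)"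
  by (metis abs_le_D2 mult_left_mono mult_minus_right)

lemma posb: "0 \<le> k \<Longrightarrow> \<bar>y\<bar> \<le> M \<Longrightarrow> k * y \<le> k * (M::real)"
  by (metis abs_le_D1 mult_left_mono)

lemma ebnd:
  fixes p ps Pm Cw w d Kb :: real
  assumes "0 < p" "p < 1" "0 < ps" "ps \<le> Pm" "\<bar>w\<bar> \<le> Cw" "\<bar>d\<bar> \<le> Kb * p^2" "0 \<le> Kb"
  shows "\<bar>(if I then p * ps * w else 0) + d\<bar> \<le> p * (Pm * Cw + Kb)"
proof -
  have C0: "0 \<le> Cw" using assms(5) by linarith
  have 1: "\<bar>d\<bar> \<le> p * Kb"
  proof -
    have "Kb * p^2 = p * Kb * p" by (simp add: power2_eq_square)
    also have "\<dots> \<le> p * Kb * 1" using assms by (intro mult_left_mono) auto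
    finally show ?thesis using assms(6) by simp
  qed
  have 2: "\<bar>(if I then p * ps * w else 0)\<bar> \<le> p * (Pm * Cw)"
  proof (cases I)
    case True
    have "\<bar>ps * w\<bar> \<le> Pm * Cw" using assms(3,4,5) by (intro abs_prod_le) auto
    then have "p * \<bar>ps * w\<bar> \<le> p * (Pm * Cw)" using assms(1) by (intro mult_left_mono) auto
    then show ?thesis using True assms(1) by (simp add: abs_mult)
  qed (use assms C0 in \<open>auto intro!: mult_nonneg_nonneg order_trans[OF _ assms(4)]\<close>)
  show ?thesis using 1 2 by (simp add: algebra_simps)
qed

lemma core:
  fixes u1 u2 p W Kw Wt WA WSg GW dDW WSgSg DW al be g S Sg Sgl Sgu
    VSg E2V dDV VSgSg KV ps1 ps2 ps3 ps4 w1 w2 w3 w4 Cw nu sig eta xi Kb d1 d2 d3 d4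
    sgl sgu etl etu xiu wSg wA wY wSS wSA wAA wSSg wASg wSgSg wSY wAY wSgY wYY Dth Dph fz bVz :: real
    and I :: bool
  assumes u: "0 < u1" "u2 < 0" "wYY \<le> u2"
    and p: "0 < p" "p < 1"
    and pt: "0 < S" "Sgl \<le> Sg" "Sg \<le> Sgu" "0 < Sgl"
    and zb: "sgl \<le> sig" "sig \<le> sgu" "etl \<le> eta" "eta \<le> etu" "0 \<le> xi" "xi \<le> xiu" "0 < sgl"
    and Wb: "0 \<le> W" "W \<le> Kw"
    and at: "wSg = -(u1 * p) * WSg" "wA = -(u1 * p) * WA" "wY = u1 - u2 * W * p"
       "wSS + 2 * g * wSA + g^2 * wAA = -(u1 * p) * GW" "wSSg + g * wASg = -(u1 * p) * dDW" "wSgSg = -(u1 * p) * WSgSg"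
       "wSY + g * wAY = -(u2 * p) * DW" "wSgY = -(u2 * p) * WSg"
    and pde: "Wt + (al + be * Sg^2/2) * WA + Sg^2 * S^2 * GW/2
        + (VSg * (ps1 * w1) + (Sg * E2V) * (ps2 * w2) + (Sg * S * dDV) * (ps3 * w3) + (VSgSg/2) * (ps4 * w4))/2 = 0"
    and Vb: "\<bar>VSg\<bar> \<le> KV" "\<bar>E2V\<bar> \<le> KV" "\<bar>S * dDV\<bar> \<le> KV" "\<bar>VSgSg\<bar> \<le> KV"
    and ps: "0 < ps1" "0 < ps2" "0 < ps3" "0 < ps4"
    and kkt: "ps1 * (w1 - VSg) * w1 + ps2 * (w2 - Sg * E2V) * w2 + ps3 * (w3 - Sg * S * dDV) * w3 + ps4 * (w4 - VSgSg/2) * w4 = 0"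
    and wb: "\<bar>w1\<bar> \<le> Cw" "\<bar>w2\<bar> \<le> Cw" "\<bar>w3\<bar> \<le> Cw" "\<bar>w4\<bar> \<le> Cw"
    and zs: "nu = (if I then p * ps1 * w1 else 0) + d1" "sig = Sg + ((if I then p * ps2 * w2 else 0) + d2)"
            "eta = (if I then p * ps3 * w3 else 0) + d3" "xi = (if I then p * ps4 * w4 else 0) + d4"
    and db: "\<bar>d1\<bar> \<le> Kb * p^2" "\<bar>d2\<bar> \<le> Kb * p^2" "\<bar>d3\<bar> \<le> Kb * p^2" "\<bar>d4\<bar> \<le> Kb * p^2"
    and fz: "fz = ((nu - 0)^2/ps1 + (sig - Sg)^2/ps2 + (eta - 0)^2/ps3 + (xi - 0)^2/ps4)/2"
    and bV: "bVz = nu * VSg + E2V * (sig^2 - Sg^2)/2 + sig * eta * S * dDV + (eta^2 + xi) * VSgSg/2"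
  defines "E \<equiv> (ps1+ps2+ps3+ps4) * Cw + Kb" and "B \<equiv> (1+Sgu) * KV" and "etab \<equiv> \<bar>etl\<bar> + \<bar>etu\<bar>"
  shows "-(u1 * p) * Wt + ((1/p) * u1 * fz + nu * wSg + (al + be * sig^2/2) * wA - bVz * wY
      + sig^2 * S^2 * (wSS + 2 * g * wSA + g^2 * wAA)/2 + sig * S * eta * (wSSg + g * wASg) + (eta^2+xi) * wSgSg/2
      + sig^2 * S^2 * Dth * (wSY + g * wAY) + sig * S * eta * Dph * (wSY + g * wAY) + sig * S * eta * Dth * wSgY
      + Dph * (eta^2+xi) * wSgY + sig^2 * S^2 * Dth^2 * wYY/2 + (eta^2+xi) * Dph^2 * wYY/2 + sig * S * eta * Dth * Dph * wYY)
    \<le> (u1 - u2) * p^(if I then 2 else 1) *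
       ((B * (ps1+ps2+ps3+ps4) * Cw/2 + 4 * (Cw+B) * Kb + Kb^2 * (1/ps1+1/ps2+1/ps3+1/ps4)/2 + 4 * B * Kb)
        + E * (sgu+Sgu) * \<bar>be * WA + S^2 * GW\<bar>/2 + 2 * KV * E^2 + Kw * (4 * B * E + 2 * KV * E^2)
        + E * \<bar>WSg\<bar> + sgu * E * \<bar>S * dDW\<bar> + (etab+1) * E * \<bar>WSgSg\<bar>/2
        + (sgu^2 * (S * DW)^2 + (etab^2 + xiu) * WSg^2))"
proof -
  define pk where "pk = p^(if I then 2 else 1::nat)"
  define U where "U = u1 - u2"
  have pk: "p^2 \<le> pk" "0 \<le> p^2" "0 \<le> pk" unfolding pk_def using p2_le_pk[OF p] p by auto
  have Ug: "u1 \<le> U" "-u2 \<le> U" "0 < u1" "0 \<le> -u2" unfolding U_def using u by auto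
  have KV0: "0 \<le> KV" using Vb(1) by linarith
  have B0: "0 \<le> B" unfolding B_def using KV0 pt by simp
  have Cw0: "0 \<le> Cw" using wb(1) by linarith
  have Kb0: "0 \<le> Kb"
  proof -
    have "0 \<le> Kb * p^2" using db(1) by linarith
    moreover have "0 < p^2" using p by simp
    ultimately show ?thesis by (simp add: zero_le_mult_iff)
  qed
  have E0: "0 \<le> E" unfolding E_def using Cw0 Kb0 ps by simp
  have etab0: "0 \<le> etab" unfolding etab_def using zb by simp
  define e2 where "e2 = sig - Sg"
  have Pm: "ps1 \<le> ps1+ps2+ps3+ps4" "ps2 \<le> ps1+ps2+ps3+ps4" "ps3 \<le> ps1+ps2+ps3+ps4" "ps4 \<le> ps1+ps2+ps3+ps4"
    using ps by auto
  have eb1: "\<bar>nu\<bar> \<le> p * E" unfolding E_def zs(1) by (rule ebnd[OF p ps(1) Pm(1) wb(1) db(1) Kb0])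
  have eb2: "\<bar>e2\<bar> \<le> p * E" unfolding E_def e2_def using ebnd[OF p ps(2) Pm(2) wb(2) db(2) Kb0] zs(2) by simp
  have eb3: "\<bar>eta\<bar> \<le> p * E" unfolding E_def zs(3) by (rule ebnd[OF p ps(3) Pm(3) wb(3) db(3) Kb0])
  have eb4: "\<bar>xi\<bar> \<le> p * E" unfolding E_def zs(4) by (rule ebnd[OF p ps(4) Pm(4) wb(4) db(4) Kb0])
  have etaa: "\<bar>eta\<bar> \<le> etab" unfolding etab_def using zb by auto
  have siga: "\<bar>sig\<bar> \<le> sgu" using zb by auto
  define gt where "gt = VSg * (ps1 * w1) + (Sg * E2V) * (ps2 * w2) + (Sg * S * dDV) * (ps3 * w3) + (VSgSg/2) * (ps4 * w4)"
  define ve where "ve = VSg * nu + (Sg * E2V) * e2 + (Sg * S * dDV) * eta + (VSgSg/2) * xi"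
  define qe where "qe = E2V * e2^2/2 + e2 * eta * (S * dDV) + eta^2 * VSgSg/2"
  define Ap where "Ap = p * gt/2 + fz/p - ve"
  define Qx where "Qx = sig^2 * S^2 * Dth * (wSY + g * wAY) + sig * S * eta * Dph * (wSY + g * wAY) + sig * S * eta * Dth * wSgY
      + Dph * (eta^2+xi) * wSgY + sig^2 * S^2 * Dth^2 * wYY/2 + (eta^2+xi) * Dph^2 * wYY/2 + sig * S * eta * Dth * Dph * wYY"
  define E2W where "E2W = be * WA + S^2 * GW"
  have bVe: "bVz = ve + qe" unfolding bV ve_def qe_def e2_def by (simp add: power2_eq_square field_simps)
  have Wt_eq: "Wt = -((al + be * Sg^2/2) * WA + Sg^2 * S^2 * GW/2 + gt/2)" using pde unfolding gt_def by linarith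
  have ident: "-(u1 * p) * Wt + ((1/p) * u1 * fz + nu * wSg + (al + be * sig^2/2) * wA - bVz * wY
      + sig^2 * S^2 * (wSS + 2 * g * wSA + g^2 * wAA)/2 + sig * S * eta * (wSSg + g * wASg) + (eta^2+xi) * wSgSg/2
      + sig^2 * S^2 * Dth * (wSY + g * wAY) + sig * S * eta * Dph * (wSY + g * wAY) + sig * S * eta * Dth * wSgY
      + Dph * (eta^2+xi) * wSgY + sig^2 * S^2 * Dth^2 * wYY/2 + (eta^2+xi) * Dph^2 * wYY/2 + sig * S * eta * Dth * Dph * wYY)
    = u1 * Ap - (u1 * p) * (sig^2 - Sg^2) * E2W/2 - u1 * qe + u2 * W * p * bVz - (u1 * p) * nu * WSg
      - (u1 * p) * sig * eta * (S * dDW) - (u1 * p) * (eta^2+xi) * WSgSg/2 + Qx"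
  proof -
    have "(1/p) * u1 * fz = u1 * (fz/p)" by simp
    then show ?thesis unfolding Qx_def Ap_def E2W_def bVe[symmetric] at(4) at(5)
      using p by (simp add: at(1) at(2) at(3) at(6) Wt_eq bVe field_simps)
  qed
  have fin: "x \<le> U * pk * c" if "x \<le> a * p^2 * c" "0 \<le> a" "a \<le> U" "0 \<le> c" for x a c
  proof -
    have "a * p^2 * c \<le> U * pk * c" by (rule scale_le) (use that pk in auto)
    then show ?thesis using that(1) by linarith
  qed
  have sgpos: "0 < sig" "0 < Sg" using zb pt by auto
  have vB: "\<bar>VSg\<bar> \<le> B" "\<bar>Sg * E2V\<bar> \<le> B" "\<bar>Sg * S * dDV\<bar> \<le> B" "\<bar>VSgSg/2\<bar> \<le> B"
  proof -
    have "KV \<le> B" unfolding B_def using KV0 pt by (simp add: algebra_simps)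
    moreover have "Sgu * KV \<le> B" unfolding B_def using KV0 by (simp add: algebra_simps)
    moreover have "\<bar>Sg * E2V\<bar> \<le> Sgu * KV" using pt Vb(2) by (intro abs_prod_le) auto
    moreover have "\<bar>Sg * (S * dDV)\<bar> \<le> Sgu * KV" using pt Vb(3) by (intro abs_prod_le) auto
    ultimately show "\<bar>VSg\<bar> \<le> B" "\<bar>Sg * E2V\<bar> \<le> B" "\<bar>Sg * S * dDV\<bar> \<le> B" "\<bar>VSgSg/2\<bar> \<le> B"
      using Vb by (auto simp: mult.assoc)
  qed
  have Apeq: "Ap = p * (VSg * ps1 * w1 + (Sg * E2V) * ps2 * w2 + (Sg * S * dDV) * ps3 * w3 + (VSgSg/2) * ps4 * w4)/2
      + ((nu^2/ps1 + e2^2/ps2 + eta^2/ps3 + xi^2/ps4)/2)/p - (VSg * nu + (Sg * E2V) * e2 + (Sg * S * dDV) * eta + (VSgSg/2) * xi)"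
    unfolding Ap_def gt_def ve_def fz e2_def by (simp add: algebra_simps)
  define GA where "GA = B * (ps1+ps2+ps3+ps4) * Cw/2 + 4 * (Cw+B) * Kb + Kb^2 * (1/ps1+1/ps2+1/ps3+1/ps4)/2 + 4 * B * Kb"
  have GA0: "0 \<le> GA" unfolding GA_def using B0 Cw0 Kb0 ps by simp
  have ApB: "Ap \<le> pk * GA" unfolding Apeq pk_def GA_def
    by (rule PA[OF p ps kkt wb vB db]) (use zs in \<open>simp_all add: e2_def\<close>)
  have bA: "u1 * Ap \<le> U * pk * GA"
  proof -
    have "u1 * Ap \<le> u1 * (pk * GA)" using ApB Ug by (intro mult_left_mono) auto
    also have "\<dots> \<le> U * (pk * GA)" using Ug GA0 pk by (intro mult_right_mono) auto
    finally show ?thesis by (simp add: mult.assoc)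
  qed
  have u1p: "0 \<le> u1 * p" using Ug p by simp
  have b1: "-(u1 * p) * (sig^2 - Sg^2) * E2W/2 \<le> U * pk * (E * (sgu+Sgu) * \<bar>E2W\<bar>/2)"
  proof -
    have "\<bar>sig + Sg\<bar> \<le> sgu + Sgu" using zb pt by auto
    then have "\<bar>e2 * (sig+Sg)\<bar> \<le> p * E * (sgu+Sgu)" using eb2 by (intro abs_prod_le) auto
    moreover have "sig^2 - Sg^2 = e2 * (sig+Sg)" unfolding e2_def by (simp add: power2_eq_square algebra_simps)
    ultimately have "\<bar>(sig^2 - Sg^2) * E2W\<bar> \<le> (p * E * (sgu+Sgu)) * \<bar>E2W\<bar>" by (intro abs_prod_le) auto
    from negb[OF _ this, of "u1 * p/2"] u1p
    have "-(u1 * p/2 * ((sig^2 - Sg^2) * E2W)) \<le> u1 * p/2 * ((p * E * (sgu+Sgu)) * \<bar>E2W\<bar>)" by simp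
    then have "-(u1 * p) * (sig^2 - Sg^2) * E2W/2 \<le> u1 * p^2 * (E * (sgu+Sgu) * \<bar>E2W\<bar>/2)"
      by (simp add: power2_eq_square algebra_simps)
    then show ?thesis by (rule fin) (use Ug E0 pt zb in auto)
  qed
  have qb: "\<bar>qe\<bar> \<le> p^2 * (2 * KV * E^2)"
  proof -
    have pe: "0 \<le> p * E" using p E0 by simp
    have e22: "e2^2 \<le> (p * E)^2" using eb2 by (metis abs_ge_zero abs_le_square_iff abs_of_nonneg pe power2_abs power_mono)
    have e33: "eta^2 \<le> (p * E)^2" using eb3 by (metis abs_ge_zero abs_le_square_iff abs_of_nonneg pe power2_abs power_mono)
    have e23: "\<bar>e2 * eta\<bar> \<le> (p * E) * (p * E)" using eb2 eb3 by (rule abs_prod_le)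
    have t1: "\<bar>E2V * e2^2/2\<bar> \<le> KV * (p * E)^2/2"
    proof -
      have "\<bar>E2V * e2^2\<bar> \<le> KV * (p * E)^2" using Vb(2) e22 by (intro abs_prod_le) auto
      then show ?thesis by simp
    qed
    have t2: "\<bar>e2 * eta * (S * dDV)\<bar> \<le> (p * E) * (p * E) * KV" using e23 Vb(3) by (rule abs_prod_le)
    have t3: "\<bar>eta^2 * VSgSg/2\<bar> \<le> (p * E)^2 * KV/2"
    proof -
      have "\<bar>eta^2 * VSgSg\<bar> \<le> (p * E)^2 * KV" using Vb(4) e33 by (intro abs_prod_le) auto
      then show ?thesis by simp
    qed
    have "\<bar>qe\<bar> \<le> KV * (p * E)^2/2 + (p * E) * (p * E) * KV + (p * E)^2 * KV/2"
      unfolding qe_def using t1 t2 t3 by linarith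
    also have "\<dots> = p^2 * (2 * KV * E^2)" by (simp add: power2_eq_square algebra_simps)
    finally show ?thesis .
  qed
  have bq: "-(u1 * qe) \<le> U * pk * (2 * KV * E^2)"
  proof -
    have "-(u1 * qe) \<le> u1 * (p^2 * (2 * KV * E^2))" by (rule negb[OF _ qb]) (use Ug in auto)
    then have "-(u1 * qe) \<le> u1 * p^2 * (2 * KV * E^2)" by (simp add: mult.assoc)
    then show ?thesis by (rule fin) (use Ug KV0 in auto)
  qed
  have veb: "\<bar>ve\<bar> \<le> p * (4 * B * E)"
  proof -
    have "\<bar>VSg * nu\<bar> \<le> B * (p * E)" using vB(1) eb1 by (rule abs_prod_le)
    moreover have "\<bar>(Sg * E2V) * e2\<bar> \<le> B * (p * E)" using vB(2) eb2 by (rule abs_prod_le)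
    moreover have "\<bar>(Sg * S * dDV) * eta\<bar> \<le> B * (p * E)" using vB(3) eb3 by (rule abs_prod_le)
    moreover have "\<bar>(VSgSg/2) * xi\<bar> \<le> B * (p * E)" using vB(4) eb4 by (rule abs_prod_le)
    ultimately show ?thesis unfolding ve_def by (simp add: algebra_simps)
  qed
  have bVb: "\<bar>bVz\<bar> \<le> p * (4 * B * E + 2 * KV * E^2)"
  proof -
    have "p^2 * (2 * KV * E^2) \<le> p * (2 * KV * E^2)"
    proof -
      have "p^2 \<le> p" using p by (simp add: power2_eq_square mult_left_le)
      then show ?thesis using KV0 by (intro mult_right_mono) auto
    qed
    then show ?thesis using veb qb bVe by (simp add: algebra_simps; linarith)
  qed
  have bb: "u2 * W * p * bVz \<le> U * pk * (Kw * (4 * B * E + 2 * KV * E^2))"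
  proof -
    have "\<bar>u2 * W * p\<bar> \<le> (-u2) * Kw * p" using u Wb p by (simp add: abs_mult mult_mono)
    then have "\<bar>(u2 * W * p) * bVz\<bar> \<le> ((-u2) * Kw * p) * (p * (4 * B * E + 2 * KV * E^2))" using bVb by (rule abs_prod_le)
    then have "u2 * W * p * bVz \<le> (-u2) * p^2 * (Kw * (4 * B * E + 2 * KV * E^2))"
      by (simp add: power2_eq_square algebra_simps)
    then show ?thesis by (rule fin) (use Ug KV0 B0 E0 Wb in auto)
  qed
  have bnu: "-(u1 * p) * nu * WSg \<le> U * pk * (E * \<bar>WSg\<bar>)"
  proof -
    have "\<bar>nu * WSg\<bar> \<le> (p * E) * \<bar>WSg\<bar>" using eb1 by (intro abs_prod_le) auto
    from negb[OF u1p this] have "-(u1 * p) * nu * WSg \<le> u1 * p^2 * (E * \<bar>WSg\<bar>)"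
      by (simp add: power2_eq_square algebra_simps)
    then show ?thesis by (rule fin) (use Ug E0 in auto)
  qed
  have beta: "-(u1 * p) * sig * eta * (S * dDW) \<le> U * pk * (sgu * E * \<bar>S * dDW\<bar>)"
  proof -
    have "\<bar>sig * eta\<bar> \<le> sgu * (p * E)" using siga eb3 by (rule abs_prod_le)
    then have "\<bar>(sig * eta) * (S * dDW)\<bar> \<le> (sgu * (p * E)) * \<bar>S * dDW\<bar>" by (rule abs_prod_le) auto
    from negb[OF u1p this] have "-(u1 * p) * sig * eta * (S * dDW) \<le> u1 * p^2 * (sgu * E * \<bar>S * dDW\<bar>)"
      by (simp add: power2_eq_square algebra_simps)
    then show ?thesis by (rule fin) (use Ug E0 zb in auto)
  qed
  have bxi: "-(u1 * p) * (eta^2+xi) * WSgSg/2 \<le> U * pk * ((etab+1) * E * \<bar>WSgSg\<bar>/2)"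
  proof -
    have "\<bar>eta * eta\<bar> \<le> etab * (p * E)" using etaa eb3 by (rule abs_prod_le)
    then have "\<bar>eta^2+xi\<bar> \<le> (etab+1) * (p * E)"
    proof -
      assume h: "\<bar>eta * eta\<bar> \<le> etab * (p * E)"
      have "\<bar>eta^2 + xi\<bar> \<le> \<bar>eta * eta\<bar> + \<bar>xi\<bar>" unfolding power2_eq_square by (rule abs_triangle_ineq)
      also have "\<dots> \<le> etab * (p * E) + p * E" using h eb4 by linarith
      also have "\<dots> = (etab+1) * (p * E)" by (simp add: algebra_simps)
      finally show ?thesis .
    qed
    then have "\<bar>(eta^2+xi) * WSgSg\<bar> \<le> ((etab+1) * (p * E)) * \<bar>WSgSg\<bar>" by (intro abs_prod_le) auto
    from negb[OF _ this, of "u1 * p/2"] u1p have "-(u1 * p/2 * ((eta^2+xi) * WSgSg)) \<le> u1 * p/2 * (((etab+1) * (p * E)) * \<bar>WSgSg\<bar>)"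
      by simp
    then have "-(u1 * p) * (eta^2+xi) * WSgSg/2 \<le> u1 * p^2 * ((etab+1) * E * \<bar>WSgSg\<bar>/2)"
      by (simp add: power2_eq_square algebra_simps)
    then show ?thesis by (rule fin) (use Ug E0 etab0 in auto)
  qed
  have bQ: "Qx \<le> U * pk * (sgu^2 * (S * DW)^2 + (etab^2 + xiu) * WSg^2)"
  proof -
    have q1: "Qx \<le> (-u2) * p^2 * ((sig * (S * DW) + eta * WSg)^2 + xi * WSg^2) / 2"
      unfolding Qx_def by (rule quad_part[OF u(3) u(2) zb(5) at(7) at(8)])
    have s1: "sig^2 \<le> sgu^2" using siga by (metis abs_ge_zero abs_le_square_iff order.trans abs_abs abs_le_self_iff power2_abs power_mono)
    have s2: "eta^2 \<le> etab^2" using etaa by (metis abs_ge_zero abs_le_square_iff order.trans abs_abs abs_le_self_iff power2_abs power_mono)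
    have "(sig * (S * DW) + eta * WSg)^2 \<le> 2 * (sig * (S * DW))^2 + 2 * (eta * WSg)^2"
    proof -
      have "0 \<le> (sig * (S * DW) - eta * WSg)^2" by simp
      then show ?thesis by (simp add: power2_eq_square algebra_simps)
    qed
    also have "\<dots> \<le> 2 * (sgu^2 * (S * DW)^2) + 2 * (etab^2 * WSg^2)"
    proof -
      have "sig^2 * (S * DW)^2 \<le> sgu^2 * (S * DW)^2" using s1 by (rule mult_right_mono) simp
      moreover have "eta^2 * WSg^2 \<le> etab^2 * WSg^2" using s2 by (rule mult_right_mono) simp
      ultimately show ?thesis by (simp add: power_mult_distrib)
    qed
    finally have a1: "(sig * (S * DW) + eta * WSg)^2 \<le> 2 * (sgu^2 * (S * DW)^2) + 2 * (etab^2 * WSg^2)" .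
    have a2: "xi * WSg^2 \<le> xiu * WSg^2" using zb by (intro mult_right_mono) auto
    have "((sig * (S * DW) + eta * WSg)^2 + xi * WSg^2)/2 \<le> sgu^2 * (S * DW)^2 + (etab^2 + xiu) * WSg^2"
    proof -
      have "0 \<le> xiu * WSg^2" using zb by simp
      then show ?thesis using a1 a2 by (simp add: algebra_simps)
    qed
    then have "(-u2) * p^2 * (((sig * (S * DW) + eta * WSg)^2 + xi * WSg^2)/2)
        \<le> (-u2) * p^2 * (sgu^2 * (S * DW)^2 + (etab^2 + xiu) * WSg^2)"
    proof (rule mult_left_mono)
      show "0 \<le> (-u2) * p^2" using Ug by (intro mult_nonneg_nonneg) auto
    qed
    then have "Qx \<le> (-u2) * p^2 * (sgu^2 * (S * DW)^2 + (etab^2 + xiu) * WSg^2)" using q1 by simp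
    then show ?thesis by (rule fin) (use Ug zb in auto)
  qed
  have sumeq: "u1 * Ap - (u1 * p) * (sig^2 - Sg^2) * E2W/2 - u1 * qe + u2 * W * p * bVz - (u1 * p) * nu * WSg
      - (u1 * p) * sig * eta * (S * dDW) - (u1 * p) * (eta^2+xi) * WSgSg/2 + Qx
    = u1 * Ap + (-(u1 * p) * (sig^2 - Sg^2) * E2W/2) + (-(u1 * qe)) + u2 * W * p * bVz + (-(u1 * p) * nu * WSg)
      + (-(u1 * p) * sig * eta * (S * dDW)) + (-(u1 * p) * (eta^2+xi) * WSgSg/2) + Qx"
    by (simp add: field_simps)
  have tot: "u1 * Ap + (-(u1 * p) * (sig^2 - Sg^2) * E2W/2) + (-(u1 * qe)) + u2 * W * p * bVz + (-(u1 * p) * nu * WSg)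
      + (-(u1 * p) * sig * eta * (S * dDW)) + (-(u1 * p) * (eta^2+xi) * WSgSg/2) + Qx
    \<le> U * pk * GA + U * pk * (E * (sgu+Sgu) * \<bar>E2W\<bar>/2) + U * pk * (2 * KV * E^2) + U * pk * (Kw * (4 * B * E + 2 * KV * E^2))
      + U * pk * (E * \<bar>WSg\<bar>) + U * pk * (sgu * E * \<bar>S * dDW\<bar>) + U * pk * ((etab+1) * E * \<bar>WSgSg\<bar>/2)
      + U * pk * (sgu^2 * (S * DW)^2 + (etab^2 + xiu) * WSg^2)"
    by (intro add_mono bA b1 bq bb bnu beta bxi bQ)
  also have "\<dots> = U * pk * (GA + E * (sgu+Sgu) * \<bar>E2W\<bar>/2 + 2 * KV * E^2 + Kw * (4 * B * E + 2 * KV * E^2)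
      + E * \<bar>WSg\<bar> + sgu * E * \<bar>S * dDW\<bar> + (etab+1) * E * \<bar>WSgSg\<bar>/2 + (sgu^2 * (S * DW)^2 + (etab^2 + xiu) * WSg^2))"
    by (simp only: distrib_left)
  finally have fin2: "u1 * Ap + (-(u1 * p) * (sig^2 - Sg^2) * E2W/2) + (-(u1 * qe)) + u2 * W * p * bVz + (-(u1 * p) * nu * WSg)
      + (-(u1 * p) * sig * eta * (S * dDW)) + (-(u1 * p) * (eta^2+xi) * WSgSg/2) + Qx
    \<le> U * pk * (GA + E * (sgu+Sgu) * \<bar>E2W\<bar>/2 + 2 * KV * E^2 + Kw * (4 * B * E + 2 * KV * E^2)
      + E * \<bar>WSg\<bar> + sgu * E * \<bar>S * dDW\<bar> + (etab+1) * E * \<bar>WSgSg\<bar>/2 + (sgu^2 * (S * DW)^2 + (etab^2 + xiu) * WSg^2))" .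
  have "-(u1 * p) * Wt + ((1/p) * u1 * fz + nu * wSg + (al + be * sig^2/2) * wA - bVz * wY
      + sig^2 * S^2 * (wSS + 2 * g * wSA + g^2 * wAA)/2 + sig * S * eta * (wSSg + g * wASg) + (eta^2+xi) * wSgSg/2
      + sig^2 * S^2 * Dth * (wSY + g * wAY) + sig * S * eta * Dph * (wSY + g * wAY) + sig * S * eta * Dth * wSgY
      + Dph * (eta^2+xi) * wSgY + sig^2 * S^2 * Dth^2 * wYY/2 + (eta^2+xi) * Dph^2 * wYY/2 + sig * S * eta * Dth * Dph * wYY)
    \<le> U * pk * (GA + E * (sgu+Sgu) * \<bar>E2W\<bar>/2 + 2 * KV * E^2 + Kw * (4 * B * E + 2 * KV * E^2)
      + E * \<bar>WSg\<bar> + sgu * E * \<bar>S * dDW\<bar> + (etab+1) * E * \<bar>WSgSg\<bar>/2 + (sgu^2 * (S * DW)^2 + (etab^2 + xiu) * WSg^2))"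
    by (subst ident, subst sumeq, rule fin2)
  then show ?thesis unfolding U_def pk_def GA_def E2W_def .
qed

lemma Gb:
  fixes B Pm Cw iP KV Kw sgu Sgu etab xiu Kb Xa Xb Xc Xd Xe :: real
  assumes nn: "0 \<le> B" "0 \<le> Pm" "0 \<le> Cw" "0 \<le> iP" "0 \<le> KV" "0 \<le> Kw" "0 \<le> sgu" "0 \<le> Sgu"
     "0 \<le> etab" "0 \<le> xiu" "0 \<le> Kb"
  defines "c \<equiv> Pm * Cw" and "E \<equiv> Pm * Cw + Kb"
    and "S1 \<equiv> 1 + Kb^2 + Xa^2 + Xb^2 + Xc^2 + Xd^2 + Xe^2"
  shows "(B * Pm * Cw/2 + 4 * (Cw+B) * Kb + Kb^2 * iP/2 + 4 * B * Kb)
        + E * (sgu+Sgu) * \<bar>Xa\<bar>/2 + 2 * KV * E^2 + Kw * (4 * B * E + 2 * KV * E^2)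
        + E * \<bar>Xb\<bar> + sgu * E * \<bar>Xc\<bar> + (etab+1) * E * \<bar>Xd\<bar>/2
        + (sgu^2 * Xe^2 + (etab^2 + xiu) * Xb^2)
     \<le> (B * Pm * Cw/2 + 4 * (Cw+B) + iP/2 + 4 * B + (sgu+Sgu) * (c^2+2)/2 + 2 * KV * (2 * c^2+2)
         + Kw * (4 * B * (c+1) + 2 * KV * (2 * c^2+2)) + (c^2+2) + sgu * (c^2+2) + (etab+1) * (c^2+2)/2
         + sgu^2 + (etab^2 + xiu)) * S1"
proof -
  have c0: "0 \<le> c" unfolding c_def using nn by simp
  have Ec: "E = c + Kb" unfolding E_def c_def ..
  have h1: "1 \<le> S1" unfolding S1_def by (simp add: add_increasing2)
  have hK2: "Kb^2 \<le> S1" unfolding S1_def by simp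
  have hX: "Xa^2 \<le> S1" "Xb^2 \<le> S1" "Xc^2 \<le> S1" "Xd^2 \<le> S1" "Xe^2 \<le> S1" unfolding S1_def by simp_all
  have hK: "Kb \<le> S1"
  proof -
    have "0 \<le> (Kb - 1)^2" by simp
    then have "2 * Kb \<le> 1 + Kb^2" by (simp add: power2_eq_square algebra_simps)
    then have "Kb \<le> 1 + Kb^2" using nn(11) by linarith
    moreover have "0 \<le> Xa^2 + Xb^2 + Xc^2 + Xd^2 + Xe^2" by simp
    ultimately show ?thesis unfolding S1_def by linarith
  qed
  have cS: "c \<le> c * S1" "c^2 \<le> c^2 * S1" using h1 c0 by (simp_all add: mult_le_cancel_left1)
  have hE2: "E^2 \<le> (2 * c^2+2) * S1"
  proof -
    have "0 \<le> (c - Kb)^2" by simp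
    then have "E^2 \<le> 2 * c^2 + 2 * Kb^2" unfolding Ec by (simp add: power2_eq_square algebra_simps)
    also have "\<dots> \<le> 2 * (c^2 * S1) + 2 * S1" using cS hK2 by simp
    finally show ?thesis by (simp add: algebra_simps)
  qed
  have hEX: "E * \<bar>X\<bar> \<le> (c^2+2) * S1" if "X^2 \<le> S1" for X
  proof -
    have "0 \<le> (E - \<bar>X\<bar>)^2" by simp
    then have "E * \<bar>X\<bar> \<le> (E^2 + X^2)/2" by (simp add: power2_eq_square algebra_simps)
    also have "\<dots> \<le> ((2 * c^2+2) * S1 + S1)/2" using hE2 that by simp
    also have "\<dots> \<le> (c^2+2) * S1" using h1 by (simp add: algebra_simps)
    finally show ?thesis .
  qed
  have hE: "E \<le> (c+1) * S1" unfolding Ec using cS hK by (simp add: algebra_simps)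
  have E0: "0 \<le> E" unfolding Ec using c0 nn by simp
  have t1: "B * Pm * Cw/2 \<le> (B * Pm * Cw/2) * S1" using mult_left_mono[OF h1, of "B * Pm * Cw/2"] nn by simp
  have t2: "4 * (Cw+B) * Kb \<le> 4 * (Cw+B) * S1" using hK nn by (intro mult_left_mono) auto
  have t3: "Kb^2 * iP/2 \<le> (iP/2) * S1"
  proof -
    have "(iP/2) * Kb^2 \<le> (iP/2) * S1" using hK2 nn by (intro mult_left_mono) auto
    then show ?thesis by (simp add: algebra_simps)
  qed
  have t4: "4 * B * Kb \<le> 4 * B * S1" using hK nn by (intro mult_left_mono) auto
  have t5: "E * (sgu+Sgu) * \<bar>Xa\<bar>/2 \<le> ((sgu+Sgu) * (c^2+2)/2) * S1"
  proof -
    have "(sgu+Sgu)/2 * (E * \<bar>Xa\<bar>) \<le> (sgu+Sgu)/2 * ((c^2+2) * S1)" using hEX[OF hX(1)] nn by (intro mult_left_mono) auto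
    then show ?thesis by (simp add: field_simps)
  qed
  have t6: "2 * KV * E^2 \<le> (2 * KV * (2 * c^2+2)) * S1"
  proof -
    have "(2 * KV) * E^2 \<le> (2 * KV) * ((2 * c^2+2) * S1)" using hE2 nn by (intro mult_left_mono) auto
    then show ?thesis by (simp add: algebra_simps)
  qed
  have t7: "Kw * (4 * B * E + 2 * KV * E^2) \<le> (Kw * (4 * B * (c+1) + 2 * KV * (2 * c^2+2))) * S1"
  proof -
    have "4 * B * E \<le> 4 * B * ((c+1) * S1)" using hE nn by (intro mult_left_mono) auto
    moreover have "2 * KV * E^2 \<le> 2 * KV * ((2 * c^2+2) * S1)" using hE2 nn by (intro mult_left_mono) auto
    ultimately have "4 * B * E + 2 * KV * E^2 \<le> (4 * B * (c+1) + 2 * KV * (2 * c^2+2)) * S1" by (simp add: algebra_simps)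
    then have "Kw * (4 * B * E + 2 * KV * E^2) \<le> Kw * ((4 * B * (c+1) + 2 * KV * (2 * c^2+2)) * S1)" using nn by (intro mult_left_mono) auto
    then show ?thesis by (simp add: algebra_simps)
  qed
  have t8: "E * \<bar>Xb\<bar> \<le> (c^2+2) * S1" by (rule hEX[OF hX(2)])
  have t9: "sgu * E * \<bar>Xc\<bar> \<le> (sgu * (c^2+2)) * S1"
  proof -
    have "sgu * (E * \<bar>Xc\<bar>) \<le> sgu * ((c^2+2) * S1)" using hEX[OF hX(3)] nn by (intro mult_left_mono) auto
    then show ?thesis by (simp add: algebra_simps)
  qed
  have t10: "(etab+1) * E * \<bar>Xd\<bar>/2 \<le> ((etab+1) * (c^2+2)/2) * S1"
  proof -
    have "(etab+1)/2 * (E * \<bar>Xd\<bar>) \<le> (etab+1)/2 * ((c^2+2) * S1)" using hEX[OF hX(4)] nn by (intro mult_left_mono) auto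
    then show ?thesis by (simp add: field_simps)
  qed
  have t11: "sgu^2 * Xe^2 \<le> sgu^2 * S1" using hX(5) by (intro mult_left_mono) auto
  have t12: "(etab^2 + xiu) * Xb^2 \<le> (etab^2 + xiu) * S1" using hX(2) nn by (intro mult_left_mono) auto
  have "(B * Pm * Cw/2 + 4 * (Cw+B) * Kb + Kb^2 * iP/2 + 4 * B * Kb)
        + E * (sgu+Sgu) * \<bar>Xa\<bar>/2 + 2 * KV * E^2 + Kw * (4 * B * E + 2 * KV * E^2)
        + E * \<bar>Xb\<bar> + sgu * E * \<bar>Xc\<bar> + (etab+1) * E * \<bar>Xd\<bar>/2
        + (sgu^2 * Xe^2 + (etab^2 + xiu) * Xb^2)
     \<le> (B * Pm * Cw/2) * S1 + 4 * (Cw+B) * S1 + (iP/2) * S1 + 4 * B * S1 + ((sgu+Sgu) * (c^2+2)/2) * S1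
        + (2 * KV * (2 * c^2+2)) * S1 + (Kw * (4 * B * (c+1) + 2 * KV * (2 * c^2+2))) * S1 + (c^2+2) * S1
        + (sgu * (c^2+2)) * S1 + ((etab+1) * (c^2+2)/2) * S1 + (sgu^2 * S1 + (etab^2 + xiu) * S1)"
    using t1 t2 t3 t4 t5 t6 t7 t8 t9 t10 t11 t12 by linarith
  also have "\<dots> = (B * Pm * Cw/2 + 4 * (Cw+B) + iP/2 + 4 * B + (sgu+Sgu) * (c^2+2)/2 + 2 * KV * (2 * c^2+2)
         + Kw * (4 * B * (c+1) + 2 * KV * (2 * c^2+2)) + (c^2+2) + sgu * (c^2+2) + (etab+1) * (c^2+2)/2
         + sgu^2 + (etab^2 + xiu)) * S1"
    by (simp add: algebra_simps)
  finally show ?thesis .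
qed


lemma Lp_cong: "Lp_P T Ps p f \<Longrightarrow> (\<And>t S A M Sg. f t S A M Sg = g t S A M Sg) \<Longrightarrow> Lp_P T Ps p g"
proof -
  assume "Lp_P T Ps p f" "\<And>t S A M Sg. f t S A M Sg = g t S A M Sg"
  moreover have "f = g" using calculation(2) by (intro ext) auto
  ultimately show ?thesis by simp
qed

lemma zn: "\<bar>z1 x\<bar> \<le> norm x" "\<bar>z2 x\<bar> \<le> norm x" "\<bar>z3 x\<bar> \<le> norm x" "\<bar>z4 x\<bar> \<le> norm x"
  for x :: zeta4
proof -
  obtain a b c d where x: "x = (a, b, c, d)" by (cases x) auto
  have 1: "norm a \<le> norm (a, b, c, d)" by (rule norm_fst_le)
  have 2: "norm (b, c, d) \<le> norm (a, b, c, d)" by (rule norm_snd_le)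
  have 3: "norm b \<le> norm (b, c, d)" by (rule norm_fst_le)
  have 4: "norm (c, d) \<le> norm (b, c, d)" by (rule norm_snd_le)
  have 5: "norm c \<le> norm (c, d)" by (rule norm_fst_le)
  have 6: "norm d \<le> norm (c, d)" by (rule norm_snd_le)
  show "\<bar>z1 x\<bar> \<le> norm x" "\<bar>z2 x\<bar> \<le> norm x" "\<bar>z3 x\<bar> \<le> norm x" "\<bar>z4 x\<bar> \<le> norm x"
    using 1 2 3 4 5 6 by (auto simp: x z1_def z2_def z3_def z4_def)
qed

theorem lemma5p14:
  fixes T S0 Sg0 A0 Sgl Sgu TC Y0 nul nuu sgl sgu etl etu xiu KV Kw psi0 :: real
    and alp bet gam del :: "real \<Rightarrow> real \<Rightarrow> real \<Rightarrow> real \<Rightarrow> real"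
    and Cpay :: "real \<Rightarrow> real" and C :: "real \<Rightarrow> real \<Rightarrow> real \<Rightarrow> real"
    and Vpay :: "real \<Rightarrow> real \<Rightarrow> real \<Rightarrow> real" and V wt KC Kbar :: fun5
    and psis :: zeta4 and U :: "real \<Rightarrow> real"
    and Ys :: "(real \<Rightarrow> path \<Rightarrow> real \<times> real) set" and Ps :: "path measure set"
    and zeta :: "path measure \<Rightarrow> real \<Rightarrow> path \<Rightarrow> zeta4"
    and Pf :: "real \<Rightarrow> path measure"
  assumes setting: "0 < T" "0 < S0" "0 < Sgl" "Sgl < Sg0" "Sg0 < Sgu"
    and coeffs_borel: "(\<lambda>(t,S,A,M). alp t S A M) \<in> borel_measurable borel"
        "(\<lambda>(t,S,A,M). bet t S A M) \<in> borel_measurable borel"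
        "(\<lambda>(t,S,A,M). gam t S A M) \<in> borel_measurable borel"
        "(\<lambda>(t,S,A,M). del t S A M) \<in> borel_measurable borel"
    and Psi_pos: "0 < z1 psis" "0 < z2 psis" "0 < z3 psis" "0 < z4 psis"
    and strategies: "\<forall>ups\<in>Ys. strategy T (S0, Sg0, A0) ups"
    and models: "\<forall>P\<in>Ps. in_P0 T (S0, Sg0, A0) C alp bet gam del P (zeta P)"
    and A_a: "assmA_a T (S0, Sg0, A0) C V Y0 Ys Ps zeta"
    and A_b: "assmA_b T C V bet gam psis Sgl Sgu Ps zeta nul nuu sgl sgu etl etu xiu"
    and A_c: "assmA_c T TC Cpay C Sgl Sgu Ps KC"
    and A_d: "assmA_d T Vpay V alp bet gam del Sgl Sgu KV"
    and A_e: "assmA_e T C V wt alp bet gam del psis Sgl Sgu Ps Kw"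
    and A_f: "assmA_f U"
    and hedge: "delta_vega C V gam \<in> Ys"
    and family: "candidate_family T Ps zeta C V bet gam psis Sgl Sgu Pf psi0"
    and Kbar_nonneg: "\<forall>(t,S,A,M,Sg)\<in>D0set T. 0 \<le> Kbar t S A M Sg"
    and Kbar_L4: "Lp_P T Ps 4 Kbar"
  shows "\<exists>Kup :: fun5. (\<forall>t S A M Sg. 0 \<le> Kup t S A M Sg) \<and> Lp_P T Ps 2 Kup \<and>
    (\<forall>t S A M Sg y z psi. (t,S,A,M,Sg) \<in> Dset T Sgl Sgu \<longrightarrow> z \<in> Zset nul nuu sgl sgu etl etu xiu
       \<longrightarrow> 0 < psi \<longrightarrow> psi < 1
       \<longrightarrow> norm (z - zeta_psi C V bet gam psis Sgl Sgu psi t S A M Sg) \<le> Kbar t S A M Sg * psi\<^sup>2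
       \<longrightarrow> ereal (pd 0 (wpsi U wt psi) t S A M Sg y)
             + (SUP ups\<in>(UNIV :: (real \<times> real) set).
                  ereal (Hpsi U wt psi C V alp bet gam psis t S A M Sg y (fst ups) (snd ups) z))
           \<le> ereal (Kup t S A M Sg * deriv U y * (1 + (- deriv (deriv U) y) / deriv U y)
                    * psi ^ (if Sgl < Sg \<and> Sg < Sgu then 2 else 1)))"
proof -
  have regw: "C12212 wt (D0set T)"
    and pdeW: "\<forall>(t,S,A,M,Sg)\<in>Dset T Sgl Sgu.
        D5 0 wt t S A M Sg + (alp t S A M + bet t S A M * Sg\<^sup>2 / 2) * D5 2 wt t S A M Sg
        + Sg\<^sup>2 * S\<^sup>2 * GammaV gam wt t S A M Sg / 2
        + gtilde C V bet gam psis t S A M Sg / 2 = 0"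
    and wtb: "\<forall>(t,S,A,M,Sg)\<in>Dset T Sgl Sgu. 0 \<le> wt t S A M Sg \<and> wt t S A M Sg \<le> Kw"
    and L1: "Lp_P T Ps 4 (D5 4 wt)"
    and L2: "Lp_P T Ps 4 (\<lambda>t S A M Sg. S * DeltaV gam wt t S A M Sg)"
    and L3: "Lp_P T Ps 4 (\<lambda>t S A M Sg. bet t S A M * D5 2 wt t S A M Sg + S\<^sup>2 * GammaV gam wt t S A M Sg)"
    and L4: "Lp_P T Ps 4 (\<lambda>t S A M Sg. S * dDeltaV gam wt t S A M Sg)"
    and L5: "Lp_P T Ps 4 (D5 4 (D5 4 wt))"
    using A_e unfolding assmA_e_def by blast+
  have Vbd: "\<forall>(t,S,A,M,Sg)\<in>Dset T Sgl Sgu.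
        \<bar>D5 4 V t S A M Sg\<bar> \<le> KV \<and>
        \<bar>bet t S A M * D5 2 V t S A M Sg + S\<^sup>2 * GammaV gam V t S A M Sg\<bar> \<le> KV \<and>
        \<bar>S * dDeltaV gam V t S A M Sg\<bar> \<le> KV \<and>
        \<bar>D5 4 (D5 4 V) t S A M Sg\<bar> \<le> KV"
    using A_d unfolding assmA_d_def by blast
  have Cne: "\<forall>(t,S,A,M,Sg)\<in>Dset T Sgl Sgu. DC 4 C t S Sg \<noteq> 0"
    using A_c unfolding assmA_c_def by blast
  have zpar: "0 < sgl" "sgl < Sgl" "Sgu < sgu" "etl < 0" "0 < etu" "0 < xiu"
    using A_b unfolding assmA_b_def by auto
  have good: "goodPs T (S0, Sg0, A0) Ps"
    unfolding goodPs_def using setting(1) models by (auto simp: in_P0_def in_P00_def)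
  define KVp where "KVp = max KV 0"
  define Kwp where "Kwp = max Kw 0"
  define ps1 where "ps1 = z1 psis"
  define ps2 where "ps2 = z2 psis"
  define ps3 where "ps3 = z3 psis"
  define ps4 where "ps4 = z4 psis"
  define Bv where "Bv = (1+Sgu) * KVp"
  define Pm where "Pm = ps1+ps2+ps3+ps4"
  define iP where "iP = 1/ps1+1/ps2+1/ps3+1/ps4"
  define Cw where "Cw = Bv + 1 + Pm * Bv^2 * iP"
  define etab where "etab = \<bar>etl\<bar> + \<bar>etu\<bar>"
  define c0 where "c0 = Pm * Cw"
  define C0 where "C0 = Bv * Pm * Cw/2 + 4 * (Cw+Bv) + iP/2 + 4 * Bv + (sgu+Sgu) * (c0^2+2)/2 + 2 * KVp * (2 * c0^2+2)
         + Kwp * (4 * Bv * (c0+1) + 2 * KVp * (2 * c0^2+2)) + (c0^2+2) + sgu * (c0^2+2) + (etab+1) * (c0^2+2)/2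
         + sgu^2 + (etab^2 + xiu)"
  have psp: "0 < ps1" "0 < ps2" "0 < ps3" "0 < ps4" using Psi_pos by (auto simp: ps1_def ps2_def ps3_def ps4_def)
  have KVp0: "0 \<le> KVp" and Kwp0: "0 \<le> Kwp" by (auto simp: KVp_def Kwp_def)
  have Bv0: "0 \<le> Bv" unfolding Bv_def using KVp0 setting by simp
  have Pm0: "0 \<le> Pm" and iP0: "0 \<le> iP" using psp by (auto simp: Pm_def iP_def)
  have Cw0: "0 \<le> Cw" unfolding Cw_def using Bv0 Pm0 iP0 by simp
  have c00: "0 \<le> c0" unfolding c0_def using Pm0 Cw0 by simp
  have etab0: "0 \<le> etab" unfolding etab_def by simp
  have C00: "0 \<le> C0" unfolding C0_def using Bv0 Pm0 Cw0 iP0 KVp0 Kwp0 c00 etab0 zpar setting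
    by (intro add_nonneg_nonneg mult_nonneg_nonneg) auto
  define Kup where "Kup = (\<lambda>t S A M Sg. C0 * (1 + (Kbar t S A M Sg)^2
      + (bet t S A M * D5 2 wt t S A M Sg + S^2 * GammaV gam wt t S A M Sg)^2
      + (D5 4 wt t S A M Sg)^2 + (S * dDeltaV gam wt t S A M Sg)^2
      + (D5 4 (D5 4 wt) t S A M Sg)^2 + (S * DeltaV gam wt t S A M Sg)^2))"
  have Kup0: "\<forall>t S A M Sg. 0 \<le> Kup t S A M Sg" unfolding Kup_def using C00 by auto
  have KupL: "Lp_P T Ps 2 Kup"
  proof -
    note c = Lp2_const[OF good, of 1]
    note q0 = Lp4_sq[OF Kbar_L4] and q1 = Lp4_sq[OF L3] and q2 = Lp4_sq[OF L1]
      and q3 = Lp4_sq[OF L4] and q4 = Lp4_sq[OF L5] and q5 = Lp4_sq[OF L2]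
    note r1 = Lp2_comb[OF good c q0, of 1 1]
    note r2 = Lp2_comb[OF good r1 q1, of 1 1]
    note r3 = Lp2_comb[OF good r2 q2, of 1 1]
    note r4 = Lp2_comb[OF good r3 q3, of 1 1]
    note r5 = Lp2_comb[OF good r4 q4, of 1 1]
    note r6 = Lp2_comb[OF good r5 q5, of 1 1]
    note r7 = Lp2_comb[OF good r6 r6, of C0 0]
    show ?thesis by (rule Lp_cong[OF r7]) (simp add: Kup_def)
  qed
  show ?thesis
  proof (rule exI[of _ Kup], intro conjI Kup0 KupL allI impI)
    fix t S A M Sg y z psi
    assume pt: "(t, S, A, M, Sg) \<in> Dset T Sgl Sgu" and zZ: "z \<in> Zset nul nuu sgl sgu etl etu xiu"
      and p0: "0 < psi" and p1: "psi < 1"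
      and nz: "norm (z - zeta_psi C V bet gam psis Sgl Sgu psi t S A M Sg) \<le> Kbar t S A M Sg * psi\<^sup>2"
    show "ereal (pd 0 (wpsi U wt psi) t S A M Sg y)
             + (SUP ups\<in>(UNIV :: (real \<times> real) set).
                  ereal (Hpsi U wt psi C V alp bet gam psis t S A M Sg y (fst ups) (snd ups) z))
           \<le> ereal (Kup t S A M Sg * deriv U y * (1 + (- deriv (deriv U) y) / deriv U y)
                    * psi ^ (if Sgl < Sg \<and> Sg < Sgu then 2 else 1))"
    proof -
      have ptd: "0 < t" "t < T" "0 < S" "0 < M" "Sgl \<le> Sg" "Sg \<le> Sgu" using pt by (auto simp: Dset_def)
      have pt0: "(t,S,A,M,Sg) \<in> D0set T" using ptd zpar setting by (auto simp: D0set_def)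
      have zc: "nul \<le> z1 z" "z1 z \<le> nuu" "sgl \<le> z2 z" "z2 z \<le> sgu" "etl \<le> z3 z" "z3 z \<le> etu"
          "0 \<le> z4 z" "z4 z \<le> xiu" using zZ by (auto simp: Zset_def)
      have Uf: "C3 U" "0 < deriv U y" "deriv (deriv U) y < 0" "0 \<le> deriv (deriv (deriv U)) y"
        using A_f U3_nonneg[OF A_f] by (auto simp: assmA_f_def)
      have Wb: "0 \<le> wt t S A M Sg" "wt t S A M Sg \<le> Kwp" using wtb pt by (auto simp: Kwp_def)
      have Kb0: "0 \<le> Kbar t S A M Sg" using Kbar_nonneg pt0 by auto
      define I where "I = (Sgl < Sg \<and> Sg < Sgu)"
      note fo = w_fo[OF regw pt0, of U psi y]
      note so1 = w_so[OF regw pt0, of 1 U psi y] and so2 = w_so[OF regw pt0, of 2 U psi y]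
        and so4 = w_so[OF regw pt0, of 4 U psi y]
      note sy1 = w_sy[OF Uf(1) regw pt0, of 1 psi y] and sy2 = w_sy[OF Uf(1) regw pt0, of 2 psi y]
        and sy4 = w_sy[OF Uf(1) regw pt0, of 4 psi y]
      note wy = w_y[OF Uf(1), of wt psi t S A M Sg y] and wyy = w_yy[OF Uf(1), of wt psi t S A M Sg y]
      have wYYle: "pd 5 (pd 5 (wpsi U wt psi)) t S A M Sg y \<le> deriv (deriv U) y"
        unfolding wyy using Uf(4) Wb(1) p0 by simp
      have at4: "pd 1 (pd 1 (wpsi U wt psi)) t S A M Sg y + 2 * gam t S A M * pd 2 (pd 1 (wpsi U wt psi)) t S A M Sg y
          + (gam t S A M)^2 * pd 2 (pd 2 (wpsi U wt psi)) t S A M Sg y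
          = -(deriv U y * psi) * GammaV gam wt t S A M Sg"
        using so1 so2 by (simp add: GammaV_def algebra_simps)
      have at5: "pd 4 (pd 1 (wpsi U wt psi)) t S A M Sg y + gam t S A M * pd 4 (pd 2 (wpsi U wt psi)) t S A M Sg y
          = -(deriv U y * psi) * dDeltaV gam wt t S A M Sg"
        using so1 so2 by (simp add: dDeltaV_def algebra_simps)
      have at7: "pd 5 (pd 1 (wpsi U wt psi)) t S A M Sg y + gam t S A M * pd 5 (pd 2 (wpsi U wt psi)) t S A M Sg y
          = -(deriv (deriv U) y * psi) * DeltaV gam wt t S A M Sg"
        using sy1 sy2 by (simp add: DeltaV_def algebra_simps)
      define VSg where "VSg = D5 4 V t S A M Sg"
      define E2V where "E2V = bet t S A M * D5 2 V t S A M Sg + S\<^sup>2 * GammaV gam V t S A M Sg"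
      define dDV where "dDV = dDeltaV gam V t S A M Sg"
      define VSgSg where "VSgSg = D5 4 (D5 4 V) t S A M Sg"
      have Vb: "\<bar>VSg\<bar> \<le> KVp" "\<bar>E2V\<bar> \<le> KVp" "\<bar>S * dDV\<bar> \<le> KVp" "\<bar>VSgSg\<bar> \<le> KVp"
        using Vbd pt unfolding VSg_def E2V_def dDV_def VSgSg_def KVp_def by fastforce+
      define vv where "vv = vvec bet gam V t S A M Sg"
      define cc where "cc = cvec C t S Sg"
      define lam where "lam = lam_at C V bet gam psis t S A M Sg"
      define mu where "mu = mu_at C V bet gam psis t S A M Sg"
      have vvt: "vv = (VSg, Sg * E2V, Sg * S * dDV, VSgSg/2)"
        by (simp add: vv_def vvec_def VSg_def E2V_def dDV_def VSgSg_def mult.assoc)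
      have vc: "z1 vv = VSg" "z2 vv = Sg * E2V" "z3 vv = Sg * S * dDV" "z4 vv = VSgSg/2"
        by (simp_all add: vvt z1_def z2_def z3_def z4_def)
      have cc4: "z4 cc = DC 4 (DC 4 C) t S Sg / 2" "z1 cc = DC 4 C t S Sg"
        by (simp_all add: cc_def cvec_def z1_def z4_def)
      define w1 where "w1 = z1 vv - lam * z1 cc"
      define w2 where "w2 = z2 vv - lam * z2 cc"
      define w3 where "w3 = z3 vv - lam * z3 cc"
      define w4 where "w4 = z4 vv - lam * z4 cc + mu"
      have zt: "ztilde C V bet gam psis t S A M Sg = (ps1 * w1, ps2 * w2, ps3 * w3, ps4 * w4)"
        unfolding ztilde_def vv_def[symmetric] cc_def[symmetric] lam_def[symmetric] mu_def[symmetric]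
        by (simp add: Psi_mul_def w1_def w2_def w3_def w4_def z1_def z2_def z3_def z4_def e4_def
            ps1_def ps2_def ps3_def ps4_def)
      have gt: "gtilde C V bet gam psis t S A M Sg
          = VSg * (ps1 * w1) + (Sg * E2V) * (ps2 * w2) + (Sg * S * dDV) * (ps3 * w3) + (VSgSg/2) * (ps4 * w4)"
        unfolding gtilde_def vv_def[symmetric] zt vvt by simp
      have vB: "\<bar>z1 vv\<bar> \<le> Bv" "\<bar>z2 vv\<bar> \<le> Bv" "\<bar>z3 vv\<bar> \<le> Bv" "\<bar>z4 vv\<bar> \<le> Bv"
      proof -
        have "KVp \<le> Bv" unfolding Bv_def using KVp0 setting zpar by (simp add: algebra_simps)
        moreover have "Sgu * KVp \<le> Bv" unfolding Bv_def using KVp0 by (simp add: algebra_simps)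
        moreover have "\<bar>Sg * E2V\<bar> \<le> Sgu * KVp" using ptd setting Vb(2) by (intro abs_prod_le) auto
        moreover have "\<bar>Sg * (S * dDV)\<bar> \<le> Sgu * KVp" using ptd setting Vb(3) by (intro abs_prod_le) auto
        ultimately show "\<bar>z1 vv\<bar> \<le> Bv" "\<bar>z2 vv\<bar> \<le> Bv" "\<bar>z3 vv\<bar> \<le> Bv" "\<bar>z4 vv\<bar> \<le> Bv"
          using Vb by (auto simp: vc mult.assoc)
      qed
      have c1ne: "z1 cc \<noteq> 0" using Cne pt cc4(2) by auto
      have ccs: "ipsi psis cc cc = ps1 * z1 cc * z1 cc + ps2 * z2 cc * z2 cc + ps3 * z3 cc * z3 cc + ps4 * z4 cc * z4 cc"
        by (simp add: ipsi_def ps1_def ps2_def ps3_def ps4_def)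
      have cvs: "ipsi psis cc vv = ps1 * z1 cc * z1 vv + ps2 * z2 cc * z2 vv + ps3 * z3 cc * z3 vv + ps4 * z4 cc * z4 vv"
        by (simp add: ipsi_def ps1_def ps2_def ps3_def ps4_def)
      have lamh: "lam = (if D5 4 (D5 4 V) t S A M Sg - (ipsi psis cc vv / ipsi psis cc cc) * DC 4 (DC 4 C) t S Sg \<ge> 0
          then ipsi psis cc vv / ipsi psis cc cc
          else (ipsi psis cc vv - DC 4 (DC 4 C) t S Sg * D5 4 (D5 4 V) t S A M Sg * ps4/4)
               / (ipsi psis cc cc - (DC 4 (DC 4 C) t S Sg)^2 * ps4/4))"
        unfolding lam_def lam_at_def lamf_def cc_def vv_def ps4_def ..
      have muh: "mu = max (- (D5 4 (D5 4 V) t S A M Sg - lam * DC 4 (DC 4 C) t S Sg)) 0 / 2"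
        unfolding mu_def mu_at_def negpart_def lam_def ..
      have Cggh: "DC 4 (DC 4 C) t S Sg = 2 * z4 cc" using cc4 by simp
      have Vggh: "D5 4 (D5 4 V) t S A M Sg = 2 * z4 vv" using vc by (simp add: VSgSg_def)
      note KK = kkt_final[OF psp c1ne ccs cvs lamh muh Cggh Vggh vB]
      have Cweq: "Bv + 1 + (ps1+ps2+ps3+ps4) * Bv^2 * (1/ps1+1/ps2+1/ps3+1/ps4) = Cw"
        unfolding Cw_def Pm_def iP_def ..
      have wb: "\<bar>w1\<bar> \<le> Cw" "\<bar>w2\<bar> \<le> Cw" "\<bar>w3\<bar> \<le> Cw" "\<bar>w4\<bar> \<le> Cw"
        using KK(2-5) unfolding Cweq w1_def w2_def w3_def w4_def by auto
      have kkt: "ps1 * (w1 - VSg) * w1 + ps2 * (w2 - Sg * E2V) * w2 + ps3 * (w3 - Sg * S * dDV) * w3 + ps4 * (w4 - VSgSg/2) * w4 = 0"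
        using KK(1) unfolding w1_def w2_def w3_def w4_def vc by simp
      define zp where "zp = zeta_psi C V bet gam psis Sgl Sgu psi t S A M Sg"
      have zpc: "z1 zp = (if I then psi * ps1 * w1 else 0)" "z2 zp = Sg + (if I then psi * ps2 * w2 else 0)"
        "z3 zp = (if I then psi * ps3 * w3 else 0)" "z4 zp = (if I then psi * ps4 * w4 else 0)"
        unfolding zp_def zeta_psi_def I_def[symmetric] zt
        by (cases I; simp add: zeta0_def z1_def z2_def z3_def z4_def mult.assoc)+
      define d1 where "d1 = z1 z - z1 zp"
      define d2 where "d2 = z2 z - z2 zp"
      define d3 where "d3 = z3 z - z3 zp"
      define d4 where "d4 = z4 z - z4 zp"
      have db: "\<bar>d1\<bar> \<le> Kbar t S A M Sg * psi^2" "\<bar>d2\<bar> \<le> Kbar t S A M Sg * psi^2"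
        "\<bar>d3\<bar> \<le> Kbar t S A M Sg * psi^2" "\<bar>d4\<bar> \<le> Kbar t S A M Sg * psi^2"
      proof -
        have "z1 (z - zp) = d1" "z2 (z - zp) = d2" "z3 (z - zp) = d3" "z4 (z - zp) = d4"
          by (simp_all add: d1_def d2_def d3_def d4_def z1_def z2_def z3_def z4_def)
        then show "\<bar>d1\<bar> \<le> Kbar t S A M Sg * psi^2" "\<bar>d2\<bar> \<le> Kbar t S A M Sg * psi^2"
          "\<bar>d3\<bar> \<le> Kbar t S A M Sg * psi^2" "\<bar>d4\<bar> \<le> Kbar t S A M Sg * psi^2"
          using zn[of "z - zp"] nz unfolding zp_def[symmetric] by auto
      qed
      have zs: "z1 z = (if I then psi * ps1 * w1 else 0) + d1" "z2 z = Sg + ((if I then psi * ps2 * w2 else 0) + d2)"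
        "z3 z = (if I then psi * ps3 * w3 else 0) + d3" "z4 z = (if I then psi * ps4 * w4 else 0) + d4"
        using zpc by (simp_all add: d1_def d2_def d3_def d4_def)
      have fz: "fpen psis Sg z = ((z1 z - 0)^2/ps1 + (z2 z - Sg)^2/ps2 + (z3 z - 0)^2/ps3 + (z4 z - 0)^2/ps4)/2"
        by (simp add: fpen_def zeta0_def z1_def z2_def z3_def z4_def ps1_def ps2_def ps3_def ps4_def)
      have bVh: "bV bet gam V t S A M Sg z = z1 z * VSg + E2V * ((z2 z)^2 - Sg^2)/2 + z2 z * z3 z * S * dDV
          + ((z3 z)^2 + z4 z) * VSgSg/2"
        by (simp add: bV_def VSg_def E2V_def dDV_def VSgSg_def)
      have pde: "D5 0 wt t S A M Sg + (alp t S A M + bet t S A M * Sg^2/2) * D5 2 wt t S A M Sg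
          + Sg^2 * S^2 * GammaV gam wt t S A M Sg/2
          + (VSg * (ps1 * w1) + (Sg * E2V) * (ps2 * w2) + (Sg * S * dDV) * (ps3 * w3) + (VSgSg/2) * (ps4 * w4))/2 = 0"
        using pdeW pt unfolding gt[symmetric] by auto
      have k4: "(4::nat) \<in> {1,2,4}" by simp
      note so4' = w_so[OF regw pt0 k4, where U=U and p=psi and y=y]
      note sy4' = w_sy[OF Uf(1) regw pt0 k4, where p=psi and y=y]
      define R where "R = Kup t S A M Sg * deriv U y * (1 + (- deriv (deriv U) y) / deriv U y)
                    * psi ^ (if Sgl < Sg \<and> Sg < Sgu then 2 else 1)"
      define S1 where "S1 = 1 + (Kbar t S A M Sg)^2
          + (bet t S A M * D5 2 wt t S A M Sg + S^2 * GammaV gam wt t S A M Sg)^2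
          + (D5 4 wt t S A M Sg)^2 + (S * dDeltaV gam wt t S A M Sg)^2
          + (D5 4 (D5 4 wt) t S A M Sg)^2 + (S * DeltaV gam wt t S A M Sg)^2"
      have Req: "R = (deriv U y - deriv (deriv U) y) * psi ^ (if I then 2 else 1) * (C0 * S1)"
        unfolding R_def Kup_def S1_def I_def using Uf(2) by (simp add: field_simps)
      note G = Gb[where B="(1+Sgu) * KVp" and Pm="ps1+ps2+ps3+ps4" and Cw=Cw and iP="1/ps1+1/ps2+1/ps3+1/ps4"
          and KV=KVp and Kw=Kwp and sgu=sgu and Sgu=Sgu and etab="\<bar>etl\<bar> + \<bar>etu\<bar>" and xiu=xiu
          and Kb="Kbar t S A M Sg" and Xa="bet t S A M * D5 2 wt t S A M Sg + S^2 * GammaV gam wt t S A M Sg"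
          and Xb="D5 4 wt t S A M Sg" and Xc="S * dDeltaV gam wt t S A M Sg"
          and Xd="D5 4 (D5 4 wt) t S A M Sg" and Xe="S * DeltaV gam wt t S A M Sg"]
      have C0eq: "C0 = ((1+Sgu) * KVp * (ps1+ps2+ps3+ps4) * Cw/2 + 4 * (Cw+(1+Sgu) * KVp) + (1/ps1+1/ps2+1/ps3+1/ps4)/2
          + 4 * ((1+Sgu) * KVp) + (sgu+Sgu) * (((ps1+ps2+ps3+ps4) * Cw)^2+2)/2 + 2 * KVp * (2 * ((ps1+ps2+ps3+ps4) * Cw)^2+2)
          + Kwp * (4 * ((1+Sgu) * KVp) * ((ps1+ps2+ps3+ps4) * Cw+1) + 2 * KVp * (2 * ((ps1+ps2+ps3+ps4) * Cw)^2+2))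
          + (((ps1+ps2+ps3+ps4) * Cw)^2+2) + sgu * (((ps1+ps2+ps3+ps4) * Cw)^2+2)
          + ((\<bar>etl\<bar> + \<bar>etu\<bar>)+1) * (((ps1+ps2+ps3+ps4) * Cw)^2+2)/2
          + sgu^2 + ((\<bar>etl\<bar> + \<bar>etu\<bar>)^2 + xiu))"
        unfolding C0_def c0_def Bv_def Pm_def iP_def etab_def ..
      have Gi: "((1+Sgu) * KVp * (ps1+ps2+ps3+ps4) * Cw/2 + 4 * (Cw+(1+Sgu) * KVp) * Kbar t S A M Sg
            + (Kbar t S A M Sg)^2 * (1/ps1+1/ps2+1/ps3+1/ps4)/2 + 4 * ((1+Sgu) * KVp) * Kbar t S A M Sg)
          + ((ps1+ps2+ps3+ps4) * Cw + Kbar t S A M Sg) * (sgu+Sgu) * \<bar>bet t S A M * D5 2 wt t S A M Sg + S^2 * GammaV gam wt t S A M Sg\<bar>/2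
          + 2 * KVp * ((ps1+ps2+ps3+ps4) * Cw + Kbar t S A M Sg)^2
          + Kwp * (4 * ((1+Sgu) * KVp) * ((ps1+ps2+ps3+ps4) * Cw + Kbar t S A M Sg) + 2 * KVp * ((ps1+ps2+ps3+ps4) * Cw + Kbar t S A M Sg)^2)
          + ((ps1+ps2+ps3+ps4) * Cw + Kbar t S A M Sg) * \<bar>D5 4 wt t S A M Sg\<bar>
          + sgu * ((ps1+ps2+ps3+ps4) * Cw + Kbar t S A M Sg) * \<bar>S * dDeltaV gam wt t S A M Sg\<bar>
          + ((\<bar>etl\<bar> + \<bar>etu\<bar>)+1) * ((ps1+ps2+ps3+ps4) * Cw + Kbar t S A M Sg) * \<bar>D5 4 (D5 4 wt) t S A M Sg\<bar>/2
          + (sgu^2 * (S * DeltaV gam wt t S A M Sg)^2 + ((\<bar>etl\<bar> + \<bar>etu\<bar>)^2 + xiu) * (D5 4 wt t S A M Sg)^2)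
        \<le> C0 * S1"
        unfolding C0eq S1_def
        by (rule G) (use KVp0 Kwp0 psp Cw0 zpar setting Kb0 ptd in \<open>auto intro!: mult_nonneg_nonneg\<close>)
      have allH: "pd 0 (wpsi U wt psi) t S A M Sg y + Hpsi U wt psi C V alp bet gam psis t S A M Sg y th ph z \<le> R"
        for th ph
      proof -
        have "pd 0 (wpsi U wt psi) t S A M Sg y + Hpsi U wt psi C V alp bet gam psis t S A M Sg y th ph z
          \<le> (deriv U y - deriv (deriv U) y) * psi ^ (if I then 2 else 1) * (
           ((1+Sgu) * KVp * (ps1+ps2+ps3+ps4) * Cw/2 + 4 * (Cw+(1+Sgu) * KVp) * Kbar t S A M Sg
            + (Kbar t S A M Sg)^2 * (1/ps1+1/ps2+1/ps3+1/ps4)/2 + 4 * ((1+Sgu) * KVp) * Kbar t S A M Sg)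
          + ((ps1+ps2+ps3+ps4) * Cw + Kbar t S A M Sg) * (sgu+Sgu) * \<bar>bet t S A M * D5 2 wt t S A M Sg + S^2 * GammaV gam wt t S A M Sg\<bar>/2
          + 2 * KVp * ((ps1+ps2+ps3+ps4) * Cw + Kbar t S A M Sg)^2
          + Kwp * (4 * ((1+Sgu) * KVp) * ((ps1+ps2+ps3+ps4) * Cw + Kbar t S A M Sg) + 2 * KVp * ((ps1+ps2+ps3+ps4) * Cw + Kbar t S A M Sg)^2)
          + ((ps1+ps2+ps3+ps4) * Cw + Kbar t S A M Sg) * \<bar>D5 4 wt t S A M Sg\<bar>
          + sgu * ((ps1+ps2+ps3+ps4) * Cw + Kbar t S A M Sg) * \<bar>S * dDeltaV gam wt t S A M Sg\<bar>
          + ((\<bar>etl\<bar> + \<bar>etu\<bar>)+1) * ((ps1+ps2+ps3+ps4) * Cw + Kbar t S A M Sg) * \<bar>D5 4 (D5 4 wt) t S A M Sg\<bar>/2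
          + (sgu^2 * (S * DeltaV gam wt t S A M Sg)^2 + ((\<bar>etl\<bar> + \<bar>etu\<bar>)^2 + xiu) * (D5 4 wt t S A M Sg)^2))"
          unfolding Hpsi_def Let_def fo(1)
          by (rule core[OF Uf(2) Uf(3) wYYle p0 p1 ptd(3) ptd(5) ptd(6) setting(3)
                zc(3) zc(4) zc(5) zc(6) zc(7) zc(8) zpar(1) Wb(1) Wb(2)
                fo(4) fo(3) wy at4 at5 so4'(3) at7 sy4' pde Vb psp kkt wb zs db fz bVh])
        also have "\<dots> \<le> (deriv U y - deriv (deriv U) y) * psi ^ (if I then 2 else 1) * (C0 * S1)"
          by (rule mult_left_mono[OF Gi]) (use Uf p0 in simp)
        finally show ?thesis unfolding Req .
      qed
      have sup: "(SUP ups\<in>(UNIV :: (real \<times> real) set).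
                  ereal (Hpsi U wt psi C V alp bet gam psis t S A M Sg y (fst ups) (snd ups) z))
          \<le> ereal (R - pd 0 (wpsi U wt psi) t S A M Sg y)"
      proof (rule SUP_least)
        fix ups :: "real \<times> real"
        show "ereal (Hpsi U wt psi C V alp bet gam psis t S A M Sg y (fst ups) (snd ups) z)
            \<le> ereal (R - pd 0 (wpsi U wt psi) t S A M Sg y)"
          using allH[of "fst ups" "snd ups"] by simp
      qed
      have "ereal (pd 0 (wpsi U wt psi) t S A M Sg y)
             + (SUP ups\<in>(UNIV :: (real \<times> real) set).
                  ereal (Hpsi U wt psi C V alp bet gam psis t S A M Sg y (fst ups) (snd ups) z))
          \<le> ereal (pd 0 (wpsi U wt psi) t S A M Sg y) + ereal (R - pd 0 (wpsi U wt psi) t S A M Sg y)"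
        by (rule add_left_mono[OF sup])
      also have "\<dots> = ereal R" by simp
      finally show ?thesis unfolding R_def .
    qed
  qed
qed


end
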